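(* Let $f(C_1,C_2)\in F$ be written as \[f(C_1,C_2)=\sum_{n,m\ge0}\alpha_{nm}C_1^nC_2^m+\sum_{j}C_1^{n_j}C_2^{m_j}\sum_i\beta_{ij}u_{ij}+g(C_1,C_2),\] where $\alpha_{nm},\beta_{ij}\in K$, the pairs $(n_j,m_j)$ are distinct, each $u_{ij}$ is the evaluation at $(C_1,C_2)$ of a left normed commutator of the form $[t_1,t_2,t_{s_3},\ldots,t_{s_l}]$ ($s_q\in\{1,2\}$), and $g(C_1,C_2)=\sum_u\gamma_uC_1^{a}C_2^{b}u_1\cdots u_k$ ($\gamma_u\in K$) is a linear combination of products of powers of $C_1,C_2$ with at least two ($k\ge 2$) such commutators $u_1,\dots,u_k$ of degree at least two. For each $i,j$ let $r_{ij}=\deg_{t_1}u_{ij}$, $s_{ij}=\deg_{t_2}u_{ij}$, and let $I_{ij}$ be the set of all indices $p$ with $\deg_{t_1}u_{pj}=r_{ij}$ and $\deg_{t_2}u_{pj}=s_{ij}$. Then $f(C_1,C_2)$ is central in $F$ if and only if $\alpha_{nm}=0$ for all $n,m$ with $n+m\ge1$ and, for every $i$ and $j$, $\sum_{p\in I_{ij}}\beta_{pj}=0$. Furthermore, $f(C_1,C_2)$ is strongly central if and only if it is central and $\alpha_{00}=0$.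
   Context: $K$ is an infinite field of characteristic different from 2. Let $X=\{x_1,x_2,x_1',x_2'\}$ and $Y=\{y_1,y_2,y_1',y_2'\}$, and let $K[X;Y]\cong K[X]\otimes_K E(Y)$ be the free supercommutative algebra: the $x$'s are even commuting variables, the $y$'s are odd pairwise anticommuting variables, and $E(Y)$ is the Grassmann algebra on the vector space with basis $Y$. Put $C_1=\begin{pmatrix} x_1&y_1\\ y_1'&x_1'\end{pmatrix}$, $C_2=\begin{pmatrix} x_2&y_2\\ y_2'&x_2'\end{pmatrix}$, and let $F=K[C_1,C_2]$ be the unital $K$-subalgebra of $M_2(K[X;Y])$ generated by $C_1,C_2$ (isomorphic to the relatively free algebra of rank 2 of $M_{11}(E)$); $C_i^0$ is the identity matrix. Commutators are $[a,b]=ab-ba$, left normed: $[a_1,\ldots,a_k]=[[a_1,\ldots,a_{k-1}],a_k]$; $t_1,t_2$ are free noncommuting variables. An element $a\in F$ is strongly central if $a$ is central in $F$ and $ab$ is central in $F$ for every $b\in F$. *)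

theory Defs
  imports Main "HOL-Library.Poly_Mapping"
begin

text \<open>Commutative polynomials over K in the even variables (indexed by nat;
  x1 = 0, x1' = 1, x2 = 2, x2' = 3).\<close>
type_synonym 'k xpoly = "(nat \<Rightarrow>\<^sub>0 nat) \<Rightarrow>\<^sub>0 'k"

definition xconst :: "'k::comm_ring_1 \<Rightarrow> 'k xpoly" where
  "xconst c = Poly_Mapping.single 0 c"

definition xvar :: "nat \<Rightarrow> 'k::comm_ring_1 xpoly" where
  "xvar i = Poly_Mapping.single (Poly_Mapping.single i 1) 1"

text \<open>An element of K[X] \<otimes> E(Y) is given by its coefficient function:
  S (a finite set of odd-variable indices, y1 = 0, y1' = 1, y2 = 2, y2' = 3)
  is mapped to the K[X]-coefficient of the Grassmann monomial y_S, the product of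
  the y_i, i in S, in increasing order of indices.\<close>
datatype 'a scc = SC (coeffs: "nat set \<Rightarrow> 'a")

type_synonym 'k sc = "'k xpoly scc"

instantiation scc :: (comm_ring_1) ab_group_add
begin
definition "zero_scc = SC (\<lambda>S. 0)"
definition "plus_scc a b = SC (\<lambda>S. coeffs a S + coeffs b S)"
definition "minus_scc a b = SC (\<lambda>S. coeffs a S - coeffs b S)"
definition "uminus_scc a = SC (\<lambda>S. - coeffs a S)"
instance
  by standard (auto simp: zero_scc_def plus_scc_def minus_scc_def uminus_scc_def
      algebra_simps intro!: scc.expand)
end

text \<open>Sign of the reordering y_T y_U = sign * y_{T \<union> U} (T, U disjoint).\<close>
definition ysign :: "nat set \<Rightarrow> nat set \<Rightarrow> 'k::comm_ring_1 xpoly" where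
  "ysign T U = (-1) ^ card {(i, j). i \<in> T \<and> j \<in> U \<and> j < i}"

text \<open>Supercommutative product (the y's anticommute, the x's are central).\<close>
definition sc_mult :: "'k::comm_ring_1 sc \<Rightarrow> 'k sc \<Rightarrow> 'k sc" where
  "sc_mult a b = SC (\<lambda>S. \<Sum>T\<in>Pow S. ysign T (S - T) * coeffs a T * coeffs b (S - T))"

definition sc_const :: "'k::comm_ring_1 \<Rightarrow> 'k sc" where
  "sc_const c = SC (\<lambda>S. if S = {} then xconst c else 0)"

definition sc_x :: "nat \<Rightarrow> 'k::comm_ring_1 sc" where
  "sc_x i = SC (\<lambda>S. if S = {} then xvar i else 0)"

definition sc_y :: "nat \<Rightarrow> 'k::comm_ring_1 sc" where
  "sc_y i = SC (\<lambda>S. if S = {i} then 1 else 0)"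

datatype 'a m2 = M2 'a 'a 'a 'a  \<comment> \<open>M2 a11 a12 a21 a22\<close>

instantiation m2 :: (ab_group_add) ab_group_add
begin
fun plus_m2 where "plus_m2 (M2 a b c d) (M2 a' b' c' d') = M2 (a+a') (b+b') (c+c') (d+d')"
fun minus_m2 where "minus_m2 (M2 a b c d) (M2 a' b' c' d') = M2 (a-a') (b-b') (c-c') (d-d')"
fun uminus_m2 where "uminus_m2 (M2 a b c d) = M2 (-a) (-b) (-c) (-d)"
definition "zero_m2 = M2 0 0 0 0"
instance
proof
  fix x y z :: "'a m2"
  show "x + y + z = x + (y + z)" by (cases x; cases y; cases z) (simp add: add.assoc)
  show "x + y = y + x" by (cases x; cases y) (simp add: add.commute)
  show "0 + x = x" by (cases x) (simp add: zero_m2_def)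
  show "- x + x = 0" by (cases x) (simp add: zero_m2_def)
  show "x - y = x + - y" by (cases x; cases y) simp
qed
end

fun mmult :: "'k::comm_ring_1 sc m2 \<Rightarrow> 'k sc m2 \<Rightarrow> 'k sc m2" where
  "mmult (M2 a b c d) (M2 a' b' c' d') =
     M2 (sc_mult a a' + sc_mult b c') (sc_mult a b' + sc_mult b d')
        (sc_mult c a' + sc_mult d c') (sc_mult c b' + sc_mult d d')"

definition mone :: "'k::comm_ring_1 sc m2" where
  "mone = M2 (sc_const 1) 0 0 (sc_const 1)"

fun msmult :: "'k::comm_ring_1 \<Rightarrow> 'k sc m2 \<Rightarrow> 'k sc m2" where
  "msmult k (M2 a b c d) =
     M2 (sc_mult (sc_const k) a) (sc_mult (sc_const k) b) (sc_mult (sc_const k) c) (sc_mult (sc_const k) d)"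

primrec mpow :: "'k::comm_ring_1 sc m2 \<Rightarrow> nat \<Rightarrow> 'k sc m2" where
  "mpow A 0 = mone"
| "mpow A (Suc n) = mmult A (mpow A n)"

definition mprod_list :: "'k::comm_ring_1 sc m2 list \<Rightarrow> 'k sc m2" where
  "mprod_list xs = foldr mmult xs mone"

definition C1 :: "'k::comm_ring_1 sc m2" where
  "C1 = M2 (sc_x 0) (sc_y 0) (sc_y 1) (sc_x 1)"

definition C2 :: "'k::comm_ring_1 sc m2" where
  "C2 = M2 (sc_x 2) (sc_y 2) (sc_y 3) (sc_x 3)"

inductive_set algF :: "'k::comm_ring_1 sc m2 set" where
  one: "mone \<in> algF"
| gen1: "C1 \<in> algF"
| gen2: "C2 \<in> algF"
| smult: "a \<in> algF \<Longrightarrow> msmult k a \<in> algF"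
| add: "a \<in> algF \<Longrightarrow> b \<in> algF \<Longrightarrow> a + b \<in> algF"
| mult: "a \<in> algF \<Longrightarrow> b \<in> algF \<Longrightarrow> mmult a b \<in> algF"

definition central_F :: "'k::comm_ring_1 sc m2 \<Rightarrow> bool" where
  "central_F a \<longleftrightarrow> a \<in> algF \<and> (\<forall>b\<in>algF. mmult a b = mmult b a)"

definition strongly_central_F :: "'k::comm_ring_1 sc m2 \<Rightarrow> bool" where
  "strongly_central_F a \<longleftrightarrow> central_F a \<and> (\<forall>b\<in>algF. central_F (mmult a b))"

text \<open>A word is a list of letters in {1,2}; letter i stands for t_i.\<close>
definition genC :: "nat \<Rightarrow> 'k::comm_ring_1 sc m2" where
  "genC i = (if i = 1 then C1 else C2)"

definition mcomm :: "'k::comm_ring_1 sc m2 \<Rightarrow> 'k sc m2 \<Rightarrow> 'k sc m2" where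
  "mcomm a b = mmult a b - mmult b a"

fun comm_eval :: "nat list \<Rightarrow> 'k::comm_ring_1 sc m2" where
  "comm_eval [] = mone"
| "comm_eval (a # ws) = foldl (\<lambda>acc b. mcomm acc (genC b)) (genC a) ws"

text \<open>The commutator [t_1, t_2, t_{s_3}, ..., t_{s_l}] is encoded by its tail
  [s_3, ..., s_l]; its full word is 1 # 2 # tail.\<close>
definition ucomm :: "nat list \<Rightarrow> 'k::comm_ring_1 sc m2" where
  "ucomm ws = comm_eval (1 # 2 # ws)"

definition deg1 :: "nat list \<Rightarrow> nat" where
  "deg1 ws = count_list (1 # 2 # ws) 1"

definition deg2 :: "nat list \<Rightarrow> nat" where
  "deg2 ws = count_list (1 # 2 # ws) 2"

end

theory Submission
  imports Defs "HOL-Computational_Algebra.Polynomial"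
begin

hide_const (open) Polynomial.coeffs

section \<open>Basic supercommutative algebra\<close>

lemma scc_eqI: "(\<And>S. coeffs a S = coeffs b S) \<Longrightarrow> a = b"
  by (rule scc.expand) auto

lemma coeffs_zero[simp]: "coeffs (0::'k::comm_ring_1 sc) S = 0"
  by (simp add: zero_scc_def)
lemma coeffs_add[simp]: "coeffs (a + b :: 'k::comm_ring_1 sc) S = coeffs a S + coeffs b S"
  by (simp add: plus_scc_def)
lemma coeffs_diff[simp]: "coeffs (a - b :: 'k::comm_ring_1 sc) S = coeffs a S - coeffs b S"
  by (simp add: minus_scc_def)
lemma coeffs_uminus[simp]: "coeffs (- a :: 'k::comm_ring_1 sc) S = - coeffs a S"
  by (simp add: uminus_scc_def)
lemma coeffs_sum: "coeffs (sum f A :: 'k::comm_ring_1 sc) S = (\<Sum>x\<in>A. coeffs (f x) S)"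
  by (induction A rule: infinite_finite_induct) auto

lemma coeffs_mult:
  "coeffs (sc_mult a b) S = (\<Sum>T\<in>Pow S. ysign T (S - T) * coeffs a T * coeffs b (S - T))"
  by (simp add: sc_mult_def)

lemma sc_mult_add_left: "sc_mult (a + b) c = sc_mult a c + sc_mult b c"
  by (rule scc_eqI) (simp add: coeffs_mult algebra_simps sum.distrib)
lemma sc_mult_add_right: "sc_mult a (b + c) = sc_mult a b + sc_mult a c"
  by (rule scc_eqI) (simp add: coeffs_mult algebra_simps sum.distrib)
lemma sc_mult_zero_left[simp]: "sc_mult 0 a = 0"
  by (rule scc_eqI) (simp add: coeffs_mult)
lemma sc_mult_zero_right[simp]: "sc_mult a 0 = 0"
  by (rule scc_eqI) (simp add: coeffs_mult)
lemma sc_mult_uminus_left: "sc_mult (- a) b = - sc_mult a b"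
  by (rule scc_eqI) (simp add: coeffs_mult sum_negf)
lemma sc_mult_uminus_right: "sc_mult a (- b) = - sc_mult a b"
  by (rule scc_eqI) (simp add: coeffs_mult sum_negf)
lemma sc_mult_diff_left: "sc_mult (a - b) c = sc_mult a c - sc_mult b c"
  by (rule scc_eqI) (simp add: coeffs_mult algebra_simps sum_subtractf)
lemma sc_mult_diff_right: "sc_mult a (b - c) = sc_mult a b - sc_mult a c"
  by (rule scc_eqI) (simp add: coeffs_mult algebra_simps sum_subtractf)
lemma sc_mult_sum_left: "sc_mult (sum f A) c = (\<Sum>x\<in>A. sc_mult (f x) c)"
  by (induction A rule: infinite_finite_induct) (auto simp: sc_mult_add_left)
lemma sc_mult_sum_right: "sc_mult c (sum f A) = (\<Sum>x\<in>A. sc_mult c (f x))"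
  by (induction A rule: infinite_finite_induct) (auto simp: sc_mult_add_right)

definition yinv :: "nat set \<Rightarrow> nat set \<Rightarrow> nat" where
  "yinv T U = card {(i, j). i \<in> T \<and> j \<in> U \<and> j < i}"

lemma ysign_inv: "ysign T U = (-1) ^ yinv T U"
  by (simp add: ysign_def yinv_def)

lemma yinv_Un_left:
  assumes "finite T" "finite U" "finite V" "T \<inter> U = {}"
  shows "yinv (T \<union> U) V = yinv T V + yinv U V"
proof -
  have e: "{(i, j). i \<in> T \<union> U \<and> j \<in> V \<and> j < i} =
      {(i, j). i \<in> T \<and> j \<in> V \<and> j < i} \<union> {(i, j). i \<in> U \<and> j \<in> V \<and> j < i}" by auto
  have f1: "finite {(i, j). i \<in> T \<and> j \<in> V \<and> j < i}"
    by (rule finite_subset[of _ "T \<times> V"]) (use assms in auto)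
  have f2: "finite {(i, j). i \<in> U \<and> j \<in> V \<and> j < i}"
    by (rule finite_subset[of _ "U \<times> V"]) (use assms in auto)
  show ?thesis unfolding yinv_def e
    by (rule card_Un_disjoint[OF f1 f2]) (use assms in auto)
qed

lemma yinv_Un_right:
  assumes "finite T" "finite U" "finite V" "U \<inter> V = {}"
  shows "yinv T (U \<union> V) = yinv T U + yinv T V"
proof -
  have e: "{(i, j). i \<in> T \<and> j \<in> U \<union> V \<and> j < i} =
      {(i, j). i \<in> T \<and> j \<in> U \<and> j < i} \<union> {(i, j). i \<in> T \<and> j \<in> V \<and> j < i}" by auto
  have f1: "finite {(i, j). i \<in> T \<and> j \<in> U \<and> j < i}"
    by (rule finite_subset[of _ "T \<times> U"]) (use assms in auto)
  have f2: "finite {(i, j). i \<in> T \<and> j \<in> V \<and> j < i}"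
    by (rule finite_subset[of _ "T \<times> V"]) (use assms in auto)
  show ?thesis unfolding yinv_def e
    by (rule card_Un_disjoint[OF f1 f2]) (use assms in auto)
qed

lemma sc_mult_assoc: "sc_mult (sc_mult a b) c = sc_mult a (sc_mult b c)"
proof (rule scc_eqI)
  fix S
  show "coeffs (sc_mult (sc_mult a b) c) S = coeffs (sc_mult a (sc_mult b c)) S"
  proof (cases "finite S")
    case False
    then show ?thesis by (simp add: coeffs_mult)
  next
    case fin: True
    define F where "F = (\<lambda>(R, T). ysign R (S - R) * ysign T (R - T) * coeffs a T * coeffs b (R - T) * coeffs c (S - R))"
    define G where "G = (\<lambda>(T, U). ysign T (S - T) * ysign U (S - T - U) * coeffs a T * coeffs b U * coeffs c (S - T - U))"
    have fP: "\<And>R. R \<in> Pow S \<Longrightarrow> finite (Pow R)" "finite (Pow S)"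
      using fin finite_subset by auto
    have fP2: "\<And>T. T \<in> Pow S \<Longrightarrow> finite (Pow (S - T))" using fin by auto
    have L: "coeffs (sc_mult (sc_mult a b) c) S = sum F (Sigma (Pow S) Pow)"
    proof -
      have "sum F (Sigma (Pow S) Pow) = (\<Sum>R\<in>Pow S. \<Sum>T\<in>Pow R. F (R, T))"
        using sum.Sigma[of "Pow S" Pow "\<lambda>R T. F (R, T)"] fP by simp
      also have "\<dots> = coeffs (sc_mult (sc_mult a b) c) S"
        unfolding coeffs_mult F_def
        by (simp add: sum_distrib_left sum_distrib_right mult.assoc)
      finally show ?thesis by simp
    qed
    have R: "coeffs (sc_mult a (sc_mult b c)) S = sum G (Sigma (Pow S) (\<lambda>T. Pow (S - T)))"
    proof -
      have "sum G (Sigma (Pow S) (\<lambda>T. Pow (S - T))) = (\<Sum>T\<in>Pow S. \<Sum>U\<in>Pow (S - T). G (T, U))"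
        using sum.Sigma[of "Pow S" "\<lambda>T. Pow (S - T)" "\<lambda>R T. G (R, T)"] fP fP2 by simp
      also have "\<dots> = coeffs (sc_mult a (sc_mult b c)) S"
        unfolding coeffs_mult G_def
        by (simp add: sum_distrib_left sum_distrib_right mult.assoc mult.left_commute)
      finally show ?thesis by simp
    qed
    have "sum F (Sigma (Pow S) Pow) = sum G (Sigma (Pow S) (\<lambda>T. Pow (S - T)))"
    proof (rule sum.reindex_bij_witness[where j = "\<lambda>(R, T). (T, R - T)" and i = "\<lambda>(T, U). (T \<union> U, T)"])
      fix x assume "x \<in> Sigma (Pow S) Pow"
      then obtain R T where x: "x = (R, T)" "R \<subseteq> S" "T \<subseteq> R" by auto
      show "(case case x of (R, T) \<Rightarrow> (T, R - T) of (T, U) \<Rightarrow> (T \<union> U, T)) = x"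
        using x by auto
      show "(case x of (R, T) \<Rightarrow> (T, R - T)) \<in> Sigma (Pow S) (\<lambda>T. Pow (S - T))"
        using x by auto
      have fR1: "finite R" using finite_subset[OF x(2) fin] .
      have fR: "finite R" "finite T" using fR1 finite_subset[OF x(3) fR1] by auto
      have i1: "yinv R (S - R) = yinv T (S - R) + yinv (R - T) (S - R)"
      proof -
        have "yinv (T \<union> (R - T)) (S - R) = yinv T (S - R) + yinv (R - T) (S - R)"
          by (rule yinv_Un_left) (use fR fin in auto)
        moreover have "T \<union> (R - T) = R" using x by auto
        ultimately show ?thesis by simp
      qed
      have i2: "yinv T (S - T) = yinv T (R - T) + yinv T (S - R)"
      proof -
        have "yinv T ((R - T) \<union> (S - R)) = yinv T (R - T) + yinv T (S - R)"
          by (rule yinv_Un_right) (use fR fin in auto)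
        moreover have "(R - T) \<union> (S - R) = S - T" using x by auto
        ultimately show ?thesis by simp
      qed
      have e3: "S - T - (R - T) = S - R" using x by auto
      have "ysign R (S - R) * ysign T (R - T) = (ysign T (S - T) * ysign (R - T) (S - R) :: 'a xpoly)"
        unfolding ysign_inv i1 i2 power_add[symmetric] by (simp add: ac_simps)
      then show "G (case x of (R, T) \<Rightarrow> (T, R - T)) = F x"
        using x e3 unfolding F_def G_def by (simp add: mult_ac)
    next
      fix y assume "y \<in> Sigma (Pow S) (\<lambda>T. Pow (S - T))"
      then obtain T U where y: "y = (T, U)" "T \<subseteq> S" "U \<subseteq> S - T" by auto
      show "(case case y of (T, U) \<Rightarrow> (T \<union> U, T) of (R, T) \<Rightarrow> (T, R - T)) = y"
        using y by auto
      show "(case y of (T, U) \<Rightarrow> (T \<union> U, T)) \<in> Sigma (Pow S) Pow"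
        using y by auto
    qed
    then show ?thesis using L R by simp
  qed
qed


definition xs :: "'k::comm_ring_1 xpoly \<Rightarrow> 'k sc" where
  "xs e = SC (\<lambda>S. if S = {} then e else 0)"

definition good :: "'k::comm_ring_1 sc \<Rightarrow> bool" where
  "good a \<longleftrightarrow> (\<forall>S. infinite S \<longrightarrow> coeffs a S = 0)"

lemma coeffs_xs: "coeffs (xs e) S = (if S = {} then e else 0)"
  by (simp add: xs_def)

lemma ysign_empty1[simp]: "ysign {} U = 1" by (simp add: ysign_def)
lemma ysign_empty2[simp]: "ysign T {} = 1" by (simp add: ysign_def)

lemma good_mult[simp]: "good (sc_mult a b)"
  by (simp add: good_def coeffs_mult)
lemma good_add[simp]: "good a \<Longrightarrow> good b \<Longrightarrow> good (a + b)"
  by (simp add: good_def)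
lemma good_diff[simp]: "good a \<Longrightarrow> good b \<Longrightarrow> good (a - b)"
  by (simp add: good_def)
lemma good_uminus[simp]: "good a \<Longrightarrow> good (- a)"
  by (simp add: good_def)
lemma good_zero[simp]: "good 0"
  by (simp add: good_def)
lemma good_xs[simp]: "good (xs e)"
  by (auto simp: good_def coeffs_xs)
lemma good_sum: "(\<And>x. x \<in> A \<Longrightarrow> good (f x)) \<Longrightarrow> good (sum f A)"
  by (induction A rule: infinite_finite_induct) auto

lemma coeffs_xs_mult: "coeffs (sc_mult (xs e) a) S = (if finite S then e * coeffs a S else 0)"
proof (cases "finite S")
  case True
  have "coeffs (sc_mult (xs e) a) S = (\<Sum>T\<in>Pow S. if T = {} then e * coeffs a S else 0)"
    unfolding coeffs_mult by (rule sum.cong) (auto simp: coeffs_xs)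
  also have "\<dots> = e * coeffs a S" using True by (simp add: sum.delta')
  finally show ?thesis using True by simp
qed (simp add: coeffs_mult)

lemma coeffs_mult_xs: "coeffs (sc_mult a (xs e)) S = (if finite S then e * coeffs a S else 0)"
proof (cases "finite S")
  case True
  have "coeffs (sc_mult a (xs e)) S = (\<Sum>T\<in>Pow S. if T = S then e * coeffs a S else 0)"
    unfolding coeffs_mult by (rule sum.cong) (auto simp: coeffs_xs)
  also have "\<dots> = e * coeffs a S" using True by (simp add: sum.delta')
  finally show ?thesis using True by simp
qed (simp add: coeffs_mult)

lemma xs_comm: "sc_mult (xs e) a = sc_mult a (xs e)"
  by (rule scc_eqI) (simp add: coeffs_xs_mult coeffs_mult_xs)

lemma xs_mult_good: "good a \<Longrightarrow> coeffs (sc_mult (xs e) a) S = e * coeffs a S"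
  by (simp add: coeffs_xs_mult good_def)

lemma xs_one: "good a \<Longrightarrow> sc_mult (xs 1) a = a"
  by (rule scc_eqI) (simp add: xs_mult_good)
lemma xs_one_right: "good a \<Longrightarrow> sc_mult a (xs 1) = a"
  using xs_one xs_comm by metis

lemma xs_xs: "sc_mult (xs e) (xs f) = xs (e * f)"
  by (rule scc_eqI) (simp add: xs_mult_good coeffs_xs)
lemma xs_add: "xs (e + f) = xs e + xs f"
  by (rule scc_eqI) (simp add: coeffs_xs)
lemma xs_diff: "xs (e - f) = xs e - xs f"
  by (rule scc_eqI) (simp add: coeffs_xs)
lemma xs_uminus: "xs (- e) = - xs e"
  by (rule scc_eqI) (simp add: coeffs_xs)
lemma xs_zero[simp]: "xs 0 = 0"
  by (rule scc_eqI) (simp add: coeffs_xs)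

lemma xconst_one[simp]: "xconst 1 = 1"
  unfolding xconst_def by (rule poly_mapping_eqI) (simp add: lookup_one lookup_single when_def)
lemma xconst_mult: "xconst (a * b) = xconst a * xconst b"
  unfolding xconst_def by (simp add: mult_single)
lemma xconst_add: "xconst (a + b) = xconst a + xconst b"
  unfolding xconst_def by (simp add: single_add)
lemma xconst_zero[simp]: "xconst 0 = 0"
  unfolding xconst_def by simp

lemma sc_const_xs: "sc_const c = xs (xconst c)"
  by (simp add: sc_const_def xs_def)
lemma sc_x_xs: "sc_x i = xs (xvar i)"
  by (simp add: sc_x_def xs_def)

lemma good_sc_y[simp]: "good (sc_y i)"
  by (auto simp: good_def sc_y_def)

lemma coeffs_mult_empty: "coeffs (sc_mult a b) {} = coeffs a {} * coeffs b {}"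
  by (simp add: coeffs_mult)

lemma coeffs_mult_single:
  "coeffs (sc_mult a b) {i} = coeffs a {} * coeffs b {i} + coeffs a {i} * coeffs b {}"
proof -
  have "Pow {i} = {{}, {i}}" by auto
  then show ?thesis by (simp add: coeffs_mult)
qed


section \<open>Matrices\<close>

lemmas sc_distribs = sc_mult_add_left sc_mult_add_right sc_mult_diff_left sc_mult_diff_right
  sc_mult_uminus_left sc_mult_uminus_right

lemma m2_zero: "(0 :: 'a::ab_group_add m2) = M2 0 0 0 0" by (simp add: zero_m2_def)

lemma mmult_add_left: "mmult (A + B) C = mmult A C + mmult B C"
  by (cases A; cases B; cases C) (simp add: sc_distribs add_ac)
lemma mmult_add_right: "mmult A (B + C) = mmult A B + mmult A C"
  by (cases A; cases B; cases C) (simp add: sc_distribs add_ac)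
lemma mmult_diff_left: "mmult (A - B) C = mmult A C - mmult B C"
  by (cases A; cases B; cases C) (simp add: sc_distribs algebra_simps)
lemma mmult_diff_right: "mmult A (B - C) = mmult A B - mmult A C"
  by (cases A; cases B; cases C) (simp add: sc_distribs algebra_simps)
lemma mmult_uminus_left: "mmult (- A) C = - mmult A C"
  by (cases A; cases C) (simp add: sc_distribs algebra_simps)
lemma mmult_uminus_right: "mmult A (- C) = - mmult A C"
  by (cases A; cases C) (simp add: sc_distribs algebra_simps)
lemma mmult_zero_left[simp]: "mmult 0 A = 0"
  by (cases A) (simp add: m2_zero)
lemma mmult_zero_right[simp]: "mmult A 0 = 0"
  by (cases A) (simp add: m2_zero)
lemma mmult_sum_left: "mmult (sum f S) C = (\<Sum>x\<in>S. mmult (f x) C)"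
  by (induction S rule: infinite_finite_induct) (auto simp: mmult_add_left)
lemma mmult_sum_right: "mmult C (sum f S) = (\<Sum>x\<in>S. mmult C (f x))"
  by (induction S rule: infinite_finite_induct) (auto simp: mmult_add_right)

lemma mmult_assoc: "mmult (mmult A B) C = mmult A (mmult B C)"
  by (cases A; cases B; cases C) (simp add: sc_distribs sc_mult_assoc add_ac)

fun goodM :: "'k::comm_ring_1 sc m2 \<Rightarrow> bool" where
  "goodM (M2 a b c d) \<longleftrightarrow> good a \<and> good b \<and> good c \<and> good d"

lemma goodM_mult[simp]: "goodM (mmult A B)"
  by (cases A; cases B) simp
lemma goodM_add[simp]: "goodM A \<Longrightarrow> goodM B \<Longrightarrow> goodM (A + B)"
  by (cases A; cases B) simp
lemma goodM_diff[simp]: "goodM A \<Longrightarrow> goodM B \<Longrightarrow> goodM (A - B)"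
  by (cases A; cases B) simp
lemma goodM_uminus[simp]: "goodM A \<Longrightarrow> goodM (- A)"
  by (cases A) simp
lemma goodM_zero[simp]: "goodM 0"
  by (simp add: m2_zero)
lemma goodM_sum: "(\<And>x. x \<in> S \<Longrightarrow> goodM (f x)) \<Longrightarrow> goodM (sum f S)"
  by (induction S rule: infinite_finite_induct) auto

lemma goodM_mone[simp]: "goodM mone"
  by (simp add: mone_def sc_const_xs)

lemma mone_left: "goodM A \<Longrightarrow> mmult mone A = A"
  by (cases A) (simp add: mone_def sc_const_xs xs_one)
lemma mone_right: "goodM A \<Longrightarrow> mmult A mone = A"
  by (cases A) (simp add: mone_def sc_const_xs xs_one_right)

definition scal :: "'k::comm_ring_1 xpoly \<Rightarrow> 'k sc m2" where
  "scal e = M2 (xs e) 0 0 (xs e)"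

lemma goodM_scal[simp]: "goodM (scal e)" by (simp add: scal_def)

lemma scal_comm: "mmult (scal e) A = mmult A (scal e)"
  by (cases A) (simp add: scal_def xs_comm)

lemma scal_scal: "mmult (scal e) (scal f) = scal (e * f)"
  by (simp add: scal_def xs_xs)

lemma scal_mult_assoc: "mmult (scal e) (mmult (scal f) A) = mmult (scal (e * f)) A"
  by (simp add: mmult_assoc[symmetric] scal_scal)

lemma scal_one: "goodM A \<Longrightarrow> mmult (scal 1) A = A"
  by (cases A) (simp add: scal_def xs_one)

lemma scal_add: "mmult (scal (e + f)) A = mmult (scal e) A + mmult (scal f) A"
  by (cases A) (simp add: scal_def xs_add sc_distribs add_ac)
lemma scal_diff: "mmult (scal (e - f)) A = mmult (scal e) A - mmult (scal f) A"
  by (cases A) (simp add: scal_def xs_diff sc_distribs algebra_simps)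
lemma scal_zero[simp]: "mmult (scal 0) A = 0"
  by (cases A) (simp add: scal_def m2_zero)

lemma msmult_scal: "msmult k A = mmult (scal (xconst k)) A"
  by (cases A) (simp add: scal_def sc_const_xs)

lemma goodM_msmult[simp]: "goodM (msmult k A)"
  by (simp add: msmult_scal)

lemma mcomm_scal_left: "mcomm (mmult (scal e) X) Y = mmult (scal e) (mcomm X Y)"
proof -
  have 1: "mmult (mmult (scal e) X) Y = mmult (scal e) (mmult X Y)" by (simp add: mmult_assoc)
  have 2: "mmult Y (mmult (scal e) X) = mmult (scal e) (mmult Y X)" by (metis mmult_assoc scal_comm)
  show ?thesis by (simp add: mcomm_def 1 2 mmult_diff_right)
qed

lemma goodM_mpow[simp]: "goodM (mpow A n)"
  by (cases n) (simp_all)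

lemma goodM_C1[simp]: "goodM C1" by (simp add: C1_def sc_x_xs)
lemma goodM_C2[simp]: "goodM C2" by (simp add: C2_def sc_x_xs)

lemma goodM_algF: "a \<in> algF \<Longrightarrow> goodM a"
  by (induction rule: algF.induct) auto


section \<open>Concrete computations in the Grassmann part\<close>

definition ym :: "nat set \<Rightarrow> 'k::comm_ring_1 xpoly \<Rightarrow> 'k sc" where
  "ym S c = SC (\<lambda>T. if T = S then c else 0)"

lemma coeffs_ym: "coeffs (ym S c) T = (if T = S then c else 0)"
  by (simp add: ym_def)

lemma ym_zero[simp]: "ym S 0 = 0"
  by (rule scc_eqI) (simp add: coeffs_ym)
lemma ym_add: "ym S (a + b) = ym S a + ym S b"
  by (rule scc_eqI) (simp add: coeffs_ym)
lemma ym_diff: "ym S (a - b) = ym S a - ym S b"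
  by (rule scc_eqI) (simp add: coeffs_ym)
lemma ym_uminus: "ym S (- a) = - ym S a"
  by (rule scc_eqI) (simp add: coeffs_ym)

lemma ym_mult:
  assumes "finite S" "finite T"
  shows "sc_mult (ym S a) (ym T b) = (if S \<inter> T = {} then ym (S \<union> T) (ysign S T * a * b) else 0)"
proof (rule scc_eqI)
  fix R
  show "coeffs (sc_mult (ym S a) (ym T b)) R = coeffs (if S \<inter> T = {} then ym (S \<union> T) (ysign S T * a * b) else 0) R"
  proof (cases "finite R")
    case False
    then have "R \<noteq> S \<union> T" using assms by auto
    then show ?thesis using False by (simp add: coeffs_mult coeffs_ym)
  next
    case True
    have "coeffs (sc_mult (ym S a) (ym T b)) R =
        (\<Sum>U\<in>Pow R. if U = S then ysign S (R - S) * a * (if R - S = T then b else 0) else 0)"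
      unfolding coeffs_mult by (rule sum.cong) (auto simp: coeffs_ym)
    also have "\<dots> = (if S \<subseteq> R then ysign S (R - S) * a * (if R - S = T then b else 0) else 0)"
      using True by (simp add: sum.delta')
    also have "\<dots> = coeffs (if S \<inter> T = {} then ym (S \<union> T) (ysign S T * a * b) else 0) R"
    proof (cases "S \<subseteq> R \<and> R - S = T")
      case True
      then have "S \<inter> T = {}" "R = S \<union> T" by auto
      then show ?thesis using True by (simp add: coeffs_ym)
    next
      case False
      have "\<not> (S \<inter> T = {} \<and> R = S \<union> T)" using False by auto
      then show ?thesis using False by (auto simp: coeffs_ym)
    qed
    finally show ?thesis .
  qed
qed

lemma card_inv_list:
  assumes "distinct ls" "distinct ms"
  shows "card {(i, j). i \<in> set ls \<and> j \<in> set ms \<and> j < i} = length (filter (\<lambda>(i, j). j < i) (List.product ls ms))"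
proof -
  have e: "{(i, j). i \<in> set ls \<and> j \<in> set ms \<and> j < i} = set (filter (\<lambda>(i, j). j < i) (List.product ls ms))"
    by auto
  have d: "distinct (filter (\<lambda>(i, j). j < i) (List.product ls ms))"
    using assms by (simp add: distinct_product)
  show ?thesis unfolding e using distinct_card[OF d] .
qed

lemma ysign_list:
  assumes "distinct ls" "distinct ms"
  shows "ysign (set ls) (set ms) = (if even (length (filter (\<lambda>(i, j). j < i) (List.product ls ms))) then 1 else (-1 :: 'k::comm_ring_1 xpoly))"
  unfolding ysign_def card_inv_list[OF assms] by simp


lemma ymm_0_0: "sc_mult (ym {} x) (ym {} y) = (ym {} (x * y) :: 'k::comm_ring_1 sc)"
proof -
  have u: "{} \<union> {} = ({}::nat set)" "{} \<inter> {} = ({}::nat set)" by auto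
  have s: "ysign {} {} = (1 :: 'k xpoly)" using ysign_list[of "[]" "[]", where 'k='k] by simp
  show ?thesis by (subst ym_mult) (simp_all only: u s refl if_True finite.emptyI finite_insert mult_1_left mult_minus1 mult_minus_left)
qed

lemma ymm_0_1: "sc_mult (ym {} x) (ym {0} y) = (ym {0} (x * y) :: 'k::comm_ring_1 sc)"
proof -
  have u: "{} \<union> {0} = ({0}::nat set)" "{} \<inter> {0} = ({}::nat set)" by auto
  have s: "ysign {} {0} = (1 :: 'k xpoly)" using ysign_list[of "[]" "[0]", where 'k='k] by simp
  show ?thesis by (subst ym_mult) (simp_all only: u s refl if_True finite.emptyI finite_insert mult_1_left mult_minus1 mult_minus_left)
qed

lemma ymm_0_2: "sc_mult (ym {} x) (ym {1} y) = (ym {1} (x * y) :: 'k::comm_ring_1 sc)"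
proof -
  have u: "{} \<union> {1} = ({1}::nat set)" "{} \<inter> {1} = ({}::nat set)" by auto
  have s: "ysign {} {1} = (1 :: 'k xpoly)" using ysign_list[of "[]" "[1]", where 'k='k] by simp
  show ?thesis by (subst ym_mult) (simp_all only: u s refl if_True finite.emptyI finite_insert mult_1_left mult_minus1 mult_minus_left)
qed

lemma ymm_0_3: "sc_mult (ym {} x) (ym {0, 1} y) = (ym {0, 1} (x * y) :: 'k::comm_ring_1 sc)"
proof -
  have u: "{} \<union> {0, 1} = ({0, 1}::nat set)" "{} \<inter> {0, 1} = ({}::nat set)" by auto
  have s: "ysign {} {0, 1} = (1 :: 'k xpoly)" using ysign_list[of "[]" "[0,1]", where 'k='k] by simp
  show ?thesis by (subst ym_mult) (simp_all only: u s refl if_True finite.emptyI finite_insert mult_1_left mult_minus1 mult_minus_left)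
qed

lemma ymm_0_4: "sc_mult (ym {} x) (ym {2} y) = (ym {2} (x * y) :: 'k::comm_ring_1 sc)"
proof -
  have u: "{} \<union> {2} = ({2}::nat set)" "{} \<inter> {2} = ({}::nat set)" by auto
  have s: "ysign {} {2} = (1 :: 'k xpoly)" using ysign_list[of "[]" "[2]", where 'k='k] by simp
  show ?thesis by (subst ym_mult) (simp_all only: u s refl if_True finite.emptyI finite_insert mult_1_left mult_minus1 mult_minus_left)
qed

lemma ymm_0_5: "sc_mult (ym {} x) (ym {0, 2} y) = (ym {0, 2} (x * y) :: 'k::comm_ring_1 sc)"
proof -
  have u: "{} \<union> {0, 2} = ({0, 2}::nat set)" "{} \<inter> {0, 2} = ({}::nat set)" by auto
  have s: "ysign {} {0, 2} = (1 :: 'k xpoly)" using ysign_list[of "[]" "[0,2]", where 'k='k] by simp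
  show ?thesis by (subst ym_mult) (simp_all only: u s refl if_True finite.emptyI finite_insert mult_1_left mult_minus1 mult_minus_left)
qed

lemma ymm_0_6: "sc_mult (ym {} x) (ym {1, 2} y) = (ym {1, 2} (x * y) :: 'k::comm_ring_1 sc)"
proof -
  have u: "{} \<union> {1, 2} = ({1, 2}::nat set)" "{} \<inter> {1, 2} = ({}::nat set)" by auto
  have s: "ysign {} {1, 2} = (1 :: 'k xpoly)" using ysign_list[of "[]" "[1,2]", where 'k='k] by simp
  show ?thesis by (subst ym_mult) (simp_all only: u s refl if_True finite.emptyI finite_insert mult_1_left mult_minus1 mult_minus_left)
qed

lemma ymm_0_7: "sc_mult (ym {} x) (ym {0, 1, 2} y) = (ym {0, 1, 2} (x * y) :: 'k::comm_ring_1 sc)"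
proof -
  have u: "{} \<union> {0, 1, 2} = ({0, 1, 2}::nat set)" "{} \<inter> {0, 1, 2} = ({}::nat set)" by auto
  have s: "ysign {} {0, 1, 2} = (1 :: 'k xpoly)" using ysign_list[of "[]" "[0,1,2]", where 'k='k] by simp
  show ?thesis by (subst ym_mult) (simp_all only: u s refl if_True finite.emptyI finite_insert mult_1_left mult_minus1 mult_minus_left)
qed

lemma ymm_0_8: "sc_mult (ym {} x) (ym {3} y) = (ym {3} (x * y) :: 'k::comm_ring_1 sc)"
proof -
  have u: "{} \<union> {3} = ({3}::nat set)" "{} \<inter> {3} = ({}::nat set)" by auto
  have s: "ysign {} {3} = (1 :: 'k xpoly)" using ysign_list[of "[]" "[3]", where 'k='k] by simp
  show ?thesis by (subst ym_mult) (simp_all only: u s refl if_True finite.emptyI finite_insert mult_1_left mult_minus1 mult_minus_left)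
qed

lemma ymm_0_9: "sc_mult (ym {} x) (ym {0, 3} y) = (ym {0, 3} (x * y) :: 'k::comm_ring_1 sc)"
proof -
  have u: "{} \<union> {0, 3} = ({0, 3}::nat set)" "{} \<inter> {0, 3} = ({}::nat set)" by auto
  have s: "ysign {} {0, 3} = (1 :: 'k xpoly)" using ysign_list[of "[]" "[0,3]", where 'k='k] by simp
  show ?thesis by (subst ym_mult) (simp_all only: u s refl if_True finite.emptyI finite_insert mult_1_left mult_minus1 mult_minus_left)
qed

lemma ymm_0_10: "sc_mult (ym {} x) (ym {1, 3} y) = (ym {1, 3} (x * y) :: 'k::comm_ring_1 sc)"
proof -
  have u: "{} \<union> {1, 3} = ({1, 3}::nat set)" "{} \<inter> {1, 3} = ({}::nat set)" by auto
  have s: "ysign {} {1, 3} = (1 :: 'k xpoly)" using ysign_list[of "[]" "[1,3]", where 'k='k] by simp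
  show ?thesis by (subst ym_mult) (simp_all only: u s refl if_True finite.emptyI finite_insert mult_1_left mult_minus1 mult_minus_left)
qed

lemma ymm_0_11: "sc_mult (ym {} x) (ym {0, 1, 3} y) = (ym {0, 1, 3} (x * y) :: 'k::comm_ring_1 sc)"
proof -
  have u: "{} \<union> {0, 1, 3} = ({0, 1, 3}::nat set)" "{} \<inter> {0, 1, 3} = ({}::nat set)" by auto
  have s: "ysign {} {0, 1, 3} = (1 :: 'k xpoly)" using ysign_list[of "[]" "[0,1,3]", where 'k='k] by simp
  show ?thesis by (subst ym_mult) (simp_all only: u s refl if_True finite.emptyI finite_insert mult_1_left mult_minus1 mult_minus_left)
qed

lemma ymm_0_12: "sc_mult (ym {} x) (ym {2, 3} y) = (ym {2, 3} (x * y) :: 'k::comm_ring_1 sc)"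
proof -
  have u: "{} \<union> {2, 3} = ({2, 3}::nat set)" "{} \<inter> {2, 3} = ({}::nat set)" by auto
  have s: "ysign {} {2, 3} = (1 :: 'k xpoly)" using ysign_list[of "[]" "[2,3]", where 'k='k] by simp
  show ?thesis by (subst ym_mult) (simp_all only: u s refl if_True finite.emptyI finite_insert mult_1_left mult_minus1 mult_minus_left)
qed

lemma ymm_0_13: "sc_mult (ym {} x) (ym {0, 2, 3} y) = (ym {0, 2, 3} (x * y) :: 'k::comm_ring_1 sc)"
proof -
  have u: "{} \<union> {0, 2, 3} = ({0, 2, 3}::nat set)" "{} \<inter> {0, 2, 3} = ({}::nat set)" by auto
  have s: "ysign {} {0, 2, 3} = (1 :: 'k xpoly)" using ysign_list[of "[]" "[0,2,3]", where 'k='k] by simp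
  show ?thesis by (subst ym_mult) (simp_all only: u s refl if_True finite.emptyI finite_insert mult_1_left mult_minus1 mult_minus_left)
qed

lemma ymm_0_14: "sc_mult (ym {} x) (ym {1, 2, 3} y) = (ym {1, 2, 3} (x * y) :: 'k::comm_ring_1 sc)"
proof -
  have u: "{} \<union> {1, 2, 3} = ({1, 2, 3}::nat set)" "{} \<inter> {1, 2, 3} = ({}::nat set)" by auto
  have s: "ysign {} {1, 2, 3} = (1 :: 'k xpoly)" using ysign_list[of "[]" "[1,2,3]", where 'k='k] by simp
  show ?thesis by (subst ym_mult) (simp_all only: u s refl if_True finite.emptyI finite_insert mult_1_left mult_minus1 mult_minus_left)
qed

lemma ymm_0_15: "sc_mult (ym {} x) (ym {0, 1, 2, 3} y) = (ym {0, 1, 2, 3} (x * y) :: 'k::comm_ring_1 sc)"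
proof -
  have u: "{} \<union> {0, 1, 2, 3} = ({0, 1, 2, 3}::nat set)" "{} \<inter> {0, 1, 2, 3} = ({}::nat set)" by auto
  have s: "ysign {} {0, 1, 2, 3} = (1 :: 'k xpoly)" using ysign_list[of "[]" "[0,1,2,3]", where 'k='k] by simp
  show ?thesis by (subst ym_mult) (simp_all only: u s refl if_True finite.emptyI finite_insert mult_1_left mult_minus1 mult_minus_left)
qed

lemma ymm_1_0: "sc_mult (ym {0} x) (ym {} y) = (ym {0} (x * y) :: 'k::comm_ring_1 sc)"
proof -
  have u: "{0} \<union> {} = ({0}::nat set)" "{0} \<inter> {} = ({}::nat set)" by auto
  have s: "ysign {0} {} = (1 :: 'k xpoly)" using ysign_list[of "[0]" "[]", where 'k='k] by simp
  show ?thesis by (subst ym_mult) (simp_all only: u s refl if_True finite.emptyI finite_insert mult_1_left mult_minus1 mult_minus_left)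
qed

lemma ymm_1_1: "sc_mult (ym {0} x) (ym {0} y) = (0::'k::comm_ring_1 sc)"
  by (subst ym_mult) auto

lemma ymm_1_2: "sc_mult (ym {0} x) (ym {1} y) = (ym {0, 1} (x * y) :: 'k::comm_ring_1 sc)"
proof -
  have u: "{0} \<union> {1} = ({0, 1}::nat set)" "{0} \<inter> {1} = ({}::nat set)" by auto
  have s: "ysign {0} {1} = (1 :: 'k xpoly)" using ysign_list[of "[0]" "[1]", where 'k='k] by simp
  show ?thesis by (subst ym_mult) (simp_all only: u s refl if_True finite.emptyI finite_insert mult_1_left mult_minus1 mult_minus_left)
qed

lemma ymm_1_3: "sc_mult (ym {0} x) (ym {0, 1} y) = (0::'k::comm_ring_1 sc)"
  by (subst ym_mult) auto

lemma ymm_1_4: "sc_mult (ym {0} x) (ym {2} y) = (ym {0, 2} (x * y) :: 'k::comm_ring_1 sc)"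
proof -
  have u: "{0} \<union> {2} = ({0, 2}::nat set)" "{0} \<inter> {2} = ({}::nat set)" by auto
  have s: "ysign {0} {2} = (1 :: 'k xpoly)" using ysign_list[of "[0]" "[2]", where 'k='k] by simp
  show ?thesis by (subst ym_mult) (simp_all only: u s refl if_True finite.emptyI finite_insert mult_1_left mult_minus1 mult_minus_left)
qed

lemma ymm_1_5: "sc_mult (ym {0} x) (ym {0, 2} y) = (0::'k::comm_ring_1 sc)"
  by (subst ym_mult) auto

lemma ymm_1_6: "sc_mult (ym {0} x) (ym {1, 2} y) = (ym {0, 1, 2} (x * y) :: 'k::comm_ring_1 sc)"
proof -
  have u: "{0} \<union> {1, 2} = ({0, 1, 2}::nat set)" "{0} \<inter> {1, 2} = ({}::nat set)" by auto
  have s: "ysign {0} {1, 2} = (1 :: 'k xpoly)" using ysign_list[of "[0]" "[1,2]", where 'k='k] by simp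
  show ?thesis by (subst ym_mult) (simp_all only: u s refl if_True finite.emptyI finite_insert mult_1_left mult_minus1 mult_minus_left)
qed

lemma ymm_1_7: "sc_mult (ym {0} x) (ym {0, 1, 2} y) = (0::'k::comm_ring_1 sc)"
  by (subst ym_mult) auto

lemma ymm_1_8: "sc_mult (ym {0} x) (ym {3} y) = (ym {0, 3} (x * y) :: 'k::comm_ring_1 sc)"
proof -
  have u: "{0} \<union> {3} = ({0, 3}::nat set)" "{0} \<inter> {3} = ({}::nat set)" by auto
  have s: "ysign {0} {3} = (1 :: 'k xpoly)" using ysign_list[of "[0]" "[3]", where 'k='k] by simp
  show ?thesis by (subst ym_mult) (simp_all only: u s refl if_True finite.emptyI finite_insert mult_1_left mult_minus1 mult_minus_left)
qed

lemma ymm_1_9: "sc_mult (ym {0} x) (ym {0, 3} y) = (0::'k::comm_ring_1 sc)"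
  by (subst ym_mult) auto

lemma ymm_1_10: "sc_mult (ym {0} x) (ym {1, 3} y) = (ym {0, 1, 3} (x * y) :: 'k::comm_ring_1 sc)"
proof -
  have u: "{0} \<union> {1, 3} = ({0, 1, 3}::nat set)" "{0} \<inter> {1, 3} = ({}::nat set)" by auto
  have s: "ysign {0} {1, 3} = (1 :: 'k xpoly)" using ysign_list[of "[0]" "[1,3]", where 'k='k] by simp
  show ?thesis by (subst ym_mult) (simp_all only: u s refl if_True finite.emptyI finite_insert mult_1_left mult_minus1 mult_minus_left)
qed

lemma ymm_1_11: "sc_mult (ym {0} x) (ym {0, 1, 3} y) = (0::'k::comm_ring_1 sc)"
  by (subst ym_mult) auto

lemma ymm_1_12: "sc_mult (ym {0} x) (ym {2, 3} y) = (ym {0, 2, 3} (x * y) :: 'k::comm_ring_1 sc)"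
proof -
  have u: "{0} \<union> {2, 3} = ({0, 2, 3}::nat set)" "{0} \<inter> {2, 3} = ({}::nat set)" by auto
  have s: "ysign {0} {2, 3} = (1 :: 'k xpoly)" using ysign_list[of "[0]" "[2,3]", where 'k='k] by simp
  show ?thesis by (subst ym_mult) (simp_all only: u s refl if_True finite.emptyI finite_insert mult_1_left mult_minus1 mult_minus_left)
qed

lemma ymm_1_13: "sc_mult (ym {0} x) (ym {0, 2, 3} y) = (0::'k::comm_ring_1 sc)"
  by (subst ym_mult) auto

lemma ymm_1_14: "sc_mult (ym {0} x) (ym {1, 2, 3} y) = (ym {0, 1, 2, 3} (x * y) :: 'k::comm_ring_1 sc)"
proof -
  have u: "{0} \<union> {1, 2, 3} = ({0, 1, 2, 3}::nat set)" "{0} \<inter> {1, 2, 3} = ({}::nat set)" by auto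
  have s: "ysign {0} {1, 2, 3} = (1 :: 'k xpoly)" using ysign_list[of "[0]" "[1,2,3]", where 'k='k] by simp
  show ?thesis by (subst ym_mult) (simp_all only: u s refl if_True finite.emptyI finite_insert mult_1_left mult_minus1 mult_minus_left)
qed

lemma ymm_1_15: "sc_mult (ym {0} x) (ym {0, 1, 2, 3} y) = (0::'k::comm_ring_1 sc)"
  by (subst ym_mult) auto

lemma ymm_2_0: "sc_mult (ym {1} x) (ym {} y) = (ym {1} (x * y) :: 'k::comm_ring_1 sc)"
proof -
  have u: "{1} \<union> {} = ({1}::nat set)" "{1} \<inter> {} = ({}::nat set)" by auto
  have s: "ysign {1} {} = (1 :: 'k xpoly)" using ysign_list[of "[1]" "[]", where 'k='k] by simp
  show ?thesis by (subst ym_mult) (simp_all only: u s refl if_True finite.emptyI finite_insert mult_1_left mult_minus1 mult_minus_left)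
qed

lemma ymm_2_1: "sc_mult (ym {1} x) (ym {0} y) = (ym {0, 1} (- (x * y)) :: 'k::comm_ring_1 sc)"
proof -
  have u: "{1} \<union> {0} = ({0, 1}::nat set)" "{1} \<inter> {0} = ({}::nat set)" by auto
  have s: "ysign {1} {0} = (-1 :: 'k xpoly)" using ysign_list[of "[1]" "[0]", where 'k='k] by simp
  show ?thesis by (subst ym_mult) (simp_all only: u s refl if_True finite.emptyI finite_insert mult_1_left mult_minus1 mult_minus_left)
qed

lemma ymm_2_2: "sc_mult (ym {1} x) (ym {1} y) = (0::'k::comm_ring_1 sc)"
  by (subst ym_mult) auto

lemma ymm_2_3: "sc_mult (ym {1} x) (ym {0, 1} y) = (0::'k::comm_ring_1 sc)"
  by (subst ym_mult) auto

lemma ymm_2_4: "sc_mult (ym {1} x) (ym {2} y) = (ym {1, 2} (x * y) :: 'k::comm_ring_1 sc)"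
proof -
  have u: "{1} \<union> {2} = ({1, 2}::nat set)" "{1} \<inter> {2} = ({}::nat set)" by auto
  have s: "ysign {1} {2} = (1 :: 'k xpoly)" using ysign_list[of "[1]" "[2]", where 'k='k] by simp
  show ?thesis by (subst ym_mult) (simp_all only: u s refl if_True finite.emptyI finite_insert mult_1_left mult_minus1 mult_minus_left)
qed

lemma ymm_2_5: "sc_mult (ym {1} x) (ym {0, 2} y) = (ym {0, 1, 2} (- (x * y)) :: 'k::comm_ring_1 sc)"
proof -
  have u: "{1} \<union> {0, 2} = ({0, 1, 2}::nat set)" "{1} \<inter> {0, 2} = ({}::nat set)" by auto
  have s: "ysign {1} {0, 2} = (-1 :: 'k xpoly)" using ysign_list[of "[1]" "[0,2]", where 'k='k] by simp
  show ?thesis by (subst ym_mult) (simp_all only: u s refl if_True finite.emptyI finite_insert mult_1_left mult_minus1 mult_minus_left)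
qed

lemma ymm_2_6: "sc_mult (ym {1} x) (ym {1, 2} y) = (0::'k::comm_ring_1 sc)"
  by (subst ym_mult) auto

lemma ymm_2_7: "sc_mult (ym {1} x) (ym {0, 1, 2} y) = (0::'k::comm_ring_1 sc)"
  by (subst ym_mult) auto

lemma ymm_2_8: "sc_mult (ym {1} x) (ym {3} y) = (ym {1, 3} (x * y) :: 'k::comm_ring_1 sc)"
proof -
  have u: "{1} \<union> {3} = ({1, 3}::nat set)" "{1} \<inter> {3} = ({}::nat set)" by auto
  have s: "ysign {1} {3} = (1 :: 'k xpoly)" using ysign_list[of "[1]" "[3]", where 'k='k] by simp
  show ?thesis by (subst ym_mult) (simp_all only: u s refl if_True finite.emptyI finite_insert mult_1_left mult_minus1 mult_minus_left)
qed

lemma ymm_2_9: "sc_mult (ym {1} x) (ym {0, 3} y) = (ym {0, 1, 3} (- (x * y)) :: 'k::comm_ring_1 sc)"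
proof -
  have u: "{1} \<union> {0, 3} = ({0, 1, 3}::nat set)" "{1} \<inter> {0, 3} = ({}::nat set)" by auto
  have s: "ysign {1} {0, 3} = (-1 :: 'k xpoly)" using ysign_list[of "[1]" "[0,3]", where 'k='k] by simp
  show ?thesis by (subst ym_mult) (simp_all only: u s refl if_True finite.emptyI finite_insert mult_1_left mult_minus1 mult_minus_left)
qed

lemma ymm_2_10: "sc_mult (ym {1} x) (ym {1, 3} y) = (0::'k::comm_ring_1 sc)"
  by (subst ym_mult) auto

lemma ymm_2_11: "sc_mult (ym {1} x) (ym {0, 1, 3} y) = (0::'k::comm_ring_1 sc)"
  by (subst ym_mult) auto

lemma ymm_2_12: "sc_mult (ym {1} x) (ym {2, 3} y) = (ym {1, 2, 3} (x * y) :: 'k::comm_ring_1 sc)"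
proof -
  have u: "{1} \<union> {2, 3} = ({1, 2, 3}::nat set)" "{1} \<inter> {2, 3} = ({}::nat set)" by auto
  have s: "ysign {1} {2, 3} = (1 :: 'k xpoly)" using ysign_list[of "[1]" "[2,3]", where 'k='k] by simp
  show ?thesis by (subst ym_mult) (simp_all only: u s refl if_True finite.emptyI finite_insert mult_1_left mult_minus1 mult_minus_left)
qed

lemma ymm_2_13: "sc_mult (ym {1} x) (ym {0, 2, 3} y) = (ym {0, 1, 2, 3} (- (x * y)) :: 'k::comm_ring_1 sc)"
proof -
  have u: "{1} \<union> {0, 2, 3} = ({0, 1, 2, 3}::nat set)" "{1} \<inter> {0, 2, 3} = ({}::nat set)" by auto
  have s: "ysign {1} {0, 2, 3} = (-1 :: 'k xpoly)" using ysign_list[of "[1]" "[0,2,3]", where 'k='k] by simp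
  show ?thesis by (subst ym_mult) (simp_all only: u s refl if_True finite.emptyI finite_insert mult_1_left mult_minus1 mult_minus_left)
qed

lemma ymm_2_14: "sc_mult (ym {1} x) (ym {1, 2, 3} y) = (0::'k::comm_ring_1 sc)"
  by (subst ym_mult) auto

lemma ymm_2_15: "sc_mult (ym {1} x) (ym {0, 1, 2, 3} y) = (0::'k::comm_ring_1 sc)"
  by (subst ym_mult) auto

lemma ymm_3_0: "sc_mult (ym {0, 1} x) (ym {} y) = (ym {0, 1} (x * y) :: 'k::comm_ring_1 sc)"
proof -
  have u: "{0, 1} \<union> {} = ({0, 1}::nat set)" "{0, 1} \<inter> {} = ({}::nat set)" by auto
  have s: "ysign {0, 1} {} = (1 :: 'k xpoly)" using ysign_list[of "[0,1]" "[]", where 'k='k] by simp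
  show ?thesis by (subst ym_mult) (simp_all only: u s refl if_True finite.emptyI finite_insert mult_1_left mult_minus1 mult_minus_left)
qed

lemma ymm_3_1: "sc_mult (ym {0, 1} x) (ym {0} y) = (0::'k::comm_ring_1 sc)"
  by (subst ym_mult) auto

lemma ymm_3_2: "sc_mult (ym {0, 1} x) (ym {1} y) = (0::'k::comm_ring_1 sc)"
  by (subst ym_mult) auto

lemma ymm_3_3: "sc_mult (ym {0, 1} x) (ym {0, 1} y) = (0::'k::comm_ring_1 sc)"
  by (subst ym_mult) auto

lemma ymm_3_4: "sc_mult (ym {0, 1} x) (ym {2} y) = (ym {0, 1, 2} (x * y) :: 'k::comm_ring_1 sc)"
proof -
  have u: "{0, 1} \<union> {2} = ({0, 1, 2}::nat set)" "{0, 1} \<inter> {2} = ({}::nat set)" by auto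
  have s: "ysign {0, 1} {2} = (1 :: 'k xpoly)" using ysign_list[of "[0,1]" "[2]", where 'k='k] by simp
  show ?thesis by (subst ym_mult) (simp_all only: u s refl if_True finite.emptyI finite_insert mult_1_left mult_minus1 mult_minus_left)
qed

lemma ymm_3_5: "sc_mult (ym {0, 1} x) (ym {0, 2} y) = (0::'k::comm_ring_1 sc)"
  by (subst ym_mult) auto

lemma ymm_3_6: "sc_mult (ym {0, 1} x) (ym {1, 2} y) = (0::'k::comm_ring_1 sc)"
  by (subst ym_mult) auto

lemma ymm_3_7: "sc_mult (ym {0, 1} x) (ym {0, 1, 2} y) = (0::'k::comm_ring_1 sc)"
  by (subst ym_mult) auto

lemma ymm_3_8: "sc_mult (ym {0, 1} x) (ym {3} y) = (ym {0, 1, 3} (x * y) :: 'k::comm_ring_1 sc)"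
proof -
  have u: "{0, 1} \<union> {3} = ({0, 1, 3}::nat set)" "{0, 1} \<inter> {3} = ({}::nat set)" by auto
  have s: "ysign {0, 1} {3} = (1 :: 'k xpoly)" using ysign_list[of "[0,1]" "[3]", where 'k='k] by simp
  show ?thesis by (subst ym_mult) (simp_all only: u s refl if_True finite.emptyI finite_insert mult_1_left mult_minus1 mult_minus_left)
qed

lemma ymm_3_9: "sc_mult (ym {0, 1} x) (ym {0, 3} y) = (0::'k::comm_ring_1 sc)"
  by (subst ym_mult) auto

lemma ymm_3_10: "sc_mult (ym {0, 1} x) (ym {1, 3} y) = (0::'k::comm_ring_1 sc)"
  by (subst ym_mult) auto

lemma ymm_3_11: "sc_mult (ym {0, 1} x) (ym {0, 1, 3} y) = (0::'k::comm_ring_1 sc)"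
  by (subst ym_mult) auto

lemma ymm_3_12: "sc_mult (ym {0, 1} x) (ym {2, 3} y) = (ym {0, 1, 2, 3} (x * y) :: 'k::comm_ring_1 sc)"
proof -
  have u: "{0, 1} \<union> {2, 3} = ({0, 1, 2, 3}::nat set)" "{0, 1} \<inter> {2, 3} = ({}::nat set)" by auto
  have s: "ysign {0, 1} {2, 3} = (1 :: 'k xpoly)" using ysign_list[of "[0,1]" "[2,3]", where 'k='k] by simp
  show ?thesis by (subst ym_mult) (simp_all only: u s refl if_True finite.emptyI finite_insert mult_1_left mult_minus1 mult_minus_left)
qed

lemma ymm_3_13: "sc_mult (ym {0, 1} x) (ym {0, 2, 3} y) = (0::'k::comm_ring_1 sc)"
  by (subst ym_mult) auto

lemma ymm_3_14: "sc_mult (ym {0, 1} x) (ym {1, 2, 3} y) = (0::'k::comm_ring_1 sc)"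
  by (subst ym_mult) auto

lemma ymm_3_15: "sc_mult (ym {0, 1} x) (ym {0, 1, 2, 3} y) = (0::'k::comm_ring_1 sc)"
  by (subst ym_mult) auto

lemma ymm_4_0: "sc_mult (ym {2} x) (ym {} y) = (ym {2} (x * y) :: 'k::comm_ring_1 sc)"
proof -
  have u: "{2} \<union> {} = ({2}::nat set)" "{2} \<inter> {} = ({}::nat set)" by auto
  have s: "ysign {2} {} = (1 :: 'k xpoly)" using ysign_list[of "[2]" "[]", where 'k='k] by simp
  show ?thesis by (subst ym_mult) (simp_all only: u s refl if_True finite.emptyI finite_insert mult_1_left mult_minus1 mult_minus_left)
qed

lemma ymm_4_1: "sc_mult (ym {2} x) (ym {0} y) = (ym {0, 2} (- (x * y)) :: 'k::comm_ring_1 sc)"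
proof -
  have u: "{2} \<union> {0} = ({0, 2}::nat set)" "{2} \<inter> {0} = ({}::nat set)" by auto
  have s: "ysign {2} {0} = (-1 :: 'k xpoly)" using ysign_list[of "[2]" "[0]", where 'k='k] by simp
  show ?thesis by (subst ym_mult) (simp_all only: u s refl if_True finite.emptyI finite_insert mult_1_left mult_minus1 mult_minus_left)
qed

lemma ymm_4_2: "sc_mult (ym {2} x) (ym {1} y) = (ym {1, 2} (- (x * y)) :: 'k::comm_ring_1 sc)"
proof -
  have u: "{2} \<union> {1} = ({1, 2}::nat set)" "{2} \<inter> {1} = ({}::nat set)" by auto
  have s: "ysign {2} {1} = (-1 :: 'k xpoly)" using ysign_list[of "[2]" "[1]", where 'k='k] by simp
  show ?thesis by (subst ym_mult) (simp_all only: u s refl if_True finite.emptyI finite_insert mult_1_left mult_minus1 mult_minus_left)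
qed

lemma ymm_4_3: "sc_mult (ym {2} x) (ym {0, 1} y) = (ym {0, 1, 2} (x * y) :: 'k::comm_ring_1 sc)"
proof -
  have u: "{2} \<union> {0, 1} = ({0, 1, 2}::nat set)" "{2} \<inter> {0, 1} = ({}::nat set)" by auto
  have s: "ysign {2} {0, 1} = (1 :: 'k xpoly)" using ysign_list[of "[2]" "[0,1]", where 'k='k] by simp
  show ?thesis by (subst ym_mult) (simp_all only: u s refl if_True finite.emptyI finite_insert mult_1_left mult_minus1 mult_minus_left)
qed

lemma ymm_4_4: "sc_mult (ym {2} x) (ym {2} y) = (0::'k::comm_ring_1 sc)"
  by (subst ym_mult) auto

lemma ymm_4_5: "sc_mult (ym {2} x) (ym {0, 2} y) = (0::'k::comm_ring_1 sc)"
  by (subst ym_mult) auto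

lemma ymm_4_6: "sc_mult (ym {2} x) (ym {1, 2} y) = (0::'k::comm_ring_1 sc)"
  by (subst ym_mult) auto

lemma ymm_4_7: "sc_mult (ym {2} x) (ym {0, 1, 2} y) = (0::'k::comm_ring_1 sc)"
  by (subst ym_mult) auto

lemma ymm_4_8: "sc_mult (ym {2} x) (ym {3} y) = (ym {2, 3} (x * y) :: 'k::comm_ring_1 sc)"
proof -
  have u: "{2} \<union> {3} = ({2, 3}::nat set)" "{2} \<inter> {3} = ({}::nat set)" by auto
  have s: "ysign {2} {3} = (1 :: 'k xpoly)" using ysign_list[of "[2]" "[3]", where 'k='k] by simp
  show ?thesis by (subst ym_mult) (simp_all only: u s refl if_True finite.emptyI finite_insert mult_1_left mult_minus1 mult_minus_left)
qed

lemma ymm_4_9: "sc_mult (ym {2} x) (ym {0, 3} y) = (ym {0, 2, 3} (- (x * y)) :: 'k::comm_ring_1 sc)"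
proof -
  have u: "{2} \<union> {0, 3} = ({0, 2, 3}::nat set)" "{2} \<inter> {0, 3} = ({}::nat set)" by auto
  have s: "ysign {2} {0, 3} = (-1 :: 'k xpoly)" using ysign_list[of "[2]" "[0,3]", where 'k='k] by simp
  show ?thesis by (subst ym_mult) (simp_all only: u s refl if_True finite.emptyI finite_insert mult_1_left mult_minus1 mult_minus_left)
qed

lemma ymm_4_10: "sc_mult (ym {2} x) (ym {1, 3} y) = (ym {1, 2, 3} (- (x * y)) :: 'k::comm_ring_1 sc)"
proof -
  have u: "{2} \<union> {1, 3} = ({1, 2, 3}::nat set)" "{2} \<inter> {1, 3} = ({}::nat set)" by auto
  have s: "ysign {2} {1, 3} = (-1 :: 'k xpoly)" using ysign_list[of "[2]" "[1,3]", where 'k='k] by simp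
  show ?thesis by (subst ym_mult) (simp_all only: u s refl if_True finite.emptyI finite_insert mult_1_left mult_minus1 mult_minus_left)
qed

lemma ymm_4_11: "sc_mult (ym {2} x) (ym {0, 1, 3} y) = (ym {0, 1, 2, 3} (x * y) :: 'k::comm_ring_1 sc)"
proof -
  have u: "{2} \<union> {0, 1, 3} = ({0, 1, 2, 3}::nat set)" "{2} \<inter> {0, 1, 3} = ({}::nat set)" by auto
  have s: "ysign {2} {0, 1, 3} = (1 :: 'k xpoly)" using ysign_list[of "[2]" "[0,1,3]", where 'k='k] by simp
  show ?thesis by (subst ym_mult) (simp_all only: u s refl if_True finite.emptyI finite_insert mult_1_left mult_minus1 mult_minus_left)
qed

lemma ymm_4_12: "sc_mult (ym {2} x) (ym {2, 3} y) = (0::'k::comm_ring_1 sc)"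
  by (subst ym_mult) auto

lemma ymm_4_13: "sc_mult (ym {2} x) (ym {0, 2, 3} y) = (0::'k::comm_ring_1 sc)"
  by (subst ym_mult) auto

lemma ymm_4_14: "sc_mult (ym {2} x) (ym {1, 2, 3} y) = (0::'k::comm_ring_1 sc)"
  by (subst ym_mult) auto

lemma ymm_4_15: "sc_mult (ym {2} x) (ym {0, 1, 2, 3} y) = (0::'k::comm_ring_1 sc)"
  by (subst ym_mult) auto

lemma ymm_5_0: "sc_mult (ym {0, 2} x) (ym {} y) = (ym {0, 2} (x * y) :: 'k::comm_ring_1 sc)"
proof -
  have u: "{0, 2} \<union> {} = ({0, 2}::nat set)" "{0, 2} \<inter> {} = ({}::nat set)" by auto
  have s: "ysign {0, 2} {} = (1 :: 'k xpoly)" using ysign_list[of "[0,2]" "[]", where 'k='k] by simp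
  show ?thesis by (subst ym_mult) (simp_all only: u s refl if_True finite.emptyI finite_insert mult_1_left mult_minus1 mult_minus_left)
qed

lemma ymm_5_1: "sc_mult (ym {0, 2} x) (ym {0} y) = (0::'k::comm_ring_1 sc)"
  by (subst ym_mult) auto

lemma ymm_5_2: "sc_mult (ym {0, 2} x) (ym {1} y) = (ym {0, 1, 2} (- (x * y)) :: 'k::comm_ring_1 sc)"
proof -
  have u: "{0, 2} \<union> {1} = ({0, 1, 2}::nat set)" "{0, 2} \<inter> {1} = ({}::nat set)" by auto
  have s: "ysign {0, 2} {1} = (-1 :: 'k xpoly)" using ysign_list[of "[0,2]" "[1]", where 'k='k] by simp
  show ?thesis by (subst ym_mult) (simp_all only: u s refl if_True finite.emptyI finite_insert mult_1_left mult_minus1 mult_minus_left)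
qed

lemma ymm_5_3: "sc_mult (ym {0, 2} x) (ym {0, 1} y) = (0::'k::comm_ring_1 sc)"
  by (subst ym_mult) auto

lemma ymm_5_4: "sc_mult (ym {0, 2} x) (ym {2} y) = (0::'k::comm_ring_1 sc)"
  by (subst ym_mult) auto

lemma ymm_5_5: "sc_mult (ym {0, 2} x) (ym {0, 2} y) = (0::'k::comm_ring_1 sc)"
  by (subst ym_mult) auto

lemma ymm_5_6: "sc_mult (ym {0, 2} x) (ym {1, 2} y) = (0::'k::comm_ring_1 sc)"
  by (subst ym_mult) auto

lemma ymm_5_7: "sc_mult (ym {0, 2} x) (ym {0, 1, 2} y) = (0::'k::comm_ring_1 sc)"
  by (subst ym_mult) auto

lemma ymm_5_8: "sc_mult (ym {0, 2} x) (ym {3} y) = (ym {0, 2, 3} (x * y) :: 'k::comm_ring_1 sc)"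
proof -
  have u: "{0, 2} \<union> {3} = ({0, 2, 3}::nat set)" "{0, 2} \<inter> {3} = ({}::nat set)" by auto
  have s: "ysign {0, 2} {3} = (1 :: 'k xpoly)" using ysign_list[of "[0,2]" "[3]", where 'k='k] by simp
  show ?thesis by (subst ym_mult) (simp_all only: u s refl if_True finite.emptyI finite_insert mult_1_left mult_minus1 mult_minus_left)
qed

lemma ymm_5_9: "sc_mult (ym {0, 2} x) (ym {0, 3} y) = (0::'k::comm_ring_1 sc)"
  by (subst ym_mult) auto

lemma ymm_5_10: "sc_mult (ym {0, 2} x) (ym {1, 3} y) = (ym {0, 1, 2, 3} (- (x * y)) :: 'k::comm_ring_1 sc)"
proof -
  have u: "{0, 2} \<union> {1, 3} = ({0, 1, 2, 3}::nat set)" "{0, 2} \<inter> {1, 3} = ({}::nat set)" by auto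
  have s: "ysign {0, 2} {1, 3} = (-1 :: 'k xpoly)" using ysign_list[of "[0,2]" "[1,3]", where 'k='k] by simp
  show ?thesis by (subst ym_mult) (simp_all only: u s refl if_True finite.emptyI finite_insert mult_1_left mult_minus1 mult_minus_left)
qed

lemma ymm_5_11: "sc_mult (ym {0, 2} x) (ym {0, 1, 3} y) = (0::'k::comm_ring_1 sc)"
  by (subst ym_mult) auto

lemma ymm_5_12: "sc_mult (ym {0, 2} x) (ym {2, 3} y) = (0::'k::comm_ring_1 sc)"
  by (subst ym_mult) auto

lemma ymm_5_13: "sc_mult (ym {0, 2} x) (ym {0, 2, 3} y) = (0::'k::comm_ring_1 sc)"
  by (subst ym_mult) auto

lemma ymm_5_14: "sc_mult (ym {0, 2} x) (ym {1, 2, 3} y) = (0::'k::comm_ring_1 sc)"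
  by (subst ym_mult) auto

lemma ymm_5_15: "sc_mult (ym {0, 2} x) (ym {0, 1, 2, 3} y) = (0::'k::comm_ring_1 sc)"
  by (subst ym_mult) auto

lemma ymm_6_0: "sc_mult (ym {1, 2} x) (ym {} y) = (ym {1, 2} (x * y) :: 'k::comm_ring_1 sc)"
proof -
  have u: "{1, 2} \<union> {} = ({1, 2}::nat set)" "{1, 2} \<inter> {} = ({}::nat set)" by auto
  have s: "ysign {1, 2} {} = (1 :: 'k xpoly)" using ysign_list[of "[1,2]" "[]", where 'k='k] by simp
  show ?thesis by (subst ym_mult) (simp_all only: u s refl if_True finite.emptyI finite_insert mult_1_left mult_minus1 mult_minus_left)
qed

lemma ymm_6_1: "sc_mult (ym {1, 2} x) (ym {0} y) = (ym {0, 1, 2} (x * y) :: 'k::comm_ring_1 sc)"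
proof -
  have u: "{1, 2} \<union> {0} = ({0, 1, 2}::nat set)" "{1, 2} \<inter> {0} = ({}::nat set)" by auto
  have s: "ysign {1, 2} {0} = (1 :: 'k xpoly)" using ysign_list[of "[1,2]" "[0]", where 'k='k] by simp
  show ?thesis by (subst ym_mult) (simp_all only: u s refl if_True finite.emptyI finite_insert mult_1_left mult_minus1 mult_minus_left)
qed

lemma ymm_6_2: "sc_mult (ym {1, 2} x) (ym {1} y) = (0::'k::comm_ring_1 sc)"
  by (subst ym_mult) auto

lemma ymm_6_3: "sc_mult (ym {1, 2} x) (ym {0, 1} y) = (0::'k::comm_ring_1 sc)"
  by (subst ym_mult) auto

lemma ymm_6_4: "sc_mult (ym {1, 2} x) (ym {2} y) = (0::'k::comm_ring_1 sc)"
  by (subst ym_mult) auto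

lemma ymm_6_5: "sc_mult (ym {1, 2} x) (ym {0, 2} y) = (0::'k::comm_ring_1 sc)"
  by (subst ym_mult) auto

lemma ymm_6_6: "sc_mult (ym {1, 2} x) (ym {1, 2} y) = (0::'k::comm_ring_1 sc)"
  by (subst ym_mult) auto

lemma ymm_6_7: "sc_mult (ym {1, 2} x) (ym {0, 1, 2} y) = (0::'k::comm_ring_1 sc)"
  by (subst ym_mult) auto

lemma ymm_6_8: "sc_mult (ym {1, 2} x) (ym {3} y) = (ym {1, 2, 3} (x * y) :: 'k::comm_ring_1 sc)"
proof -
  have u: "{1, 2} \<union> {3} = ({1, 2, 3}::nat set)" "{1, 2} \<inter> {3} = ({}::nat set)" by auto
  have s: "ysign {1, 2} {3} = (1 :: 'k xpoly)" using ysign_list[of "[1,2]" "[3]", where 'k='k] by simp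
  show ?thesis by (subst ym_mult) (simp_all only: u s refl if_True finite.emptyI finite_insert mult_1_left mult_minus1 mult_minus_left)
qed

lemma ymm_6_9: "sc_mult (ym {1, 2} x) (ym {0, 3} y) = (ym {0, 1, 2, 3} (x * y) :: 'k::comm_ring_1 sc)"
proof -
  have u: "{1, 2} \<union> {0, 3} = ({0, 1, 2, 3}::nat set)" "{1, 2} \<inter> {0, 3} = ({}::nat set)" by auto
  have s: "ysign {1, 2} {0, 3} = (1 :: 'k xpoly)" using ysign_list[of "[1,2]" "[0,3]", where 'k='k] by simp
  show ?thesis by (subst ym_mult) (simp_all only: u s refl if_True finite.emptyI finite_insert mult_1_left mult_minus1 mult_minus_left)
qed

lemma ymm_6_10: "sc_mult (ym {1, 2} x) (ym {1, 3} y) = (0::'k::comm_ring_1 sc)"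
  by (subst ym_mult) auto

lemma ymm_6_11: "sc_mult (ym {1, 2} x) (ym {0, 1, 3} y) = (0::'k::comm_ring_1 sc)"
  by (subst ym_mult) auto

lemma ymm_6_12: "sc_mult (ym {1, 2} x) (ym {2, 3} y) = (0::'k::comm_ring_1 sc)"
  by (subst ym_mult) auto

lemma ymm_6_13: "sc_mult (ym {1, 2} x) (ym {0, 2, 3} y) = (0::'k::comm_ring_1 sc)"
  by (subst ym_mult) auto

lemma ymm_6_14: "sc_mult (ym {1, 2} x) (ym {1, 2, 3} y) = (0::'k::comm_ring_1 sc)"
  by (subst ym_mult) auto

lemma ymm_6_15: "sc_mult (ym {1, 2} x) (ym {0, 1, 2, 3} y) = (0::'k::comm_ring_1 sc)"
  by (subst ym_mult) auto

lemma ymm_7_0: "sc_mult (ym {0, 1, 2} x) (ym {} y) = (ym {0, 1, 2} (x * y) :: 'k::comm_ring_1 sc)"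
proof -
  have u: "{0, 1, 2} \<union> {} = ({0, 1, 2}::nat set)" "{0, 1, 2} \<inter> {} = ({}::nat set)" by auto
  have s: "ysign {0, 1, 2} {} = (1 :: 'k xpoly)" using ysign_list[of "[0,1,2]" "[]", where 'k='k] by simp
  show ?thesis by (subst ym_mult) (simp_all only: u s refl if_True finite.emptyI finite_insert mult_1_left mult_minus1 mult_minus_left)
qed

lemma ymm_7_1: "sc_mult (ym {0, 1, 2} x) (ym {0} y) = (0::'k::comm_ring_1 sc)"
  by (subst ym_mult) auto

lemma ymm_7_2: "sc_mult (ym {0, 1, 2} x) (ym {1} y) = (0::'k::comm_ring_1 sc)"
  by (subst ym_mult) auto

lemma ymm_7_3: "sc_mult (ym {0, 1, 2} x) (ym {0, 1} y) = (0::'k::comm_ring_1 sc)"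
  by (subst ym_mult) auto

lemma ymm_7_4: "sc_mult (ym {0, 1, 2} x) (ym {2} y) = (0::'k::comm_ring_1 sc)"
  by (subst ym_mult) auto

lemma ymm_7_5: "sc_mult (ym {0, 1, 2} x) (ym {0, 2} y) = (0::'k::comm_ring_1 sc)"
  by (subst ym_mult) auto

lemma ymm_7_6: "sc_mult (ym {0, 1, 2} x) (ym {1, 2} y) = (0::'k::comm_ring_1 sc)"
  by (subst ym_mult) auto

lemma ymm_7_7: "sc_mult (ym {0, 1, 2} x) (ym {0, 1, 2} y) = (0::'k::comm_ring_1 sc)"
  by (subst ym_mult) auto

lemma ymm_7_8: "sc_mult (ym {0, 1, 2} x) (ym {3} y) = (ym {0, 1, 2, 3} (x * y) :: 'k::comm_ring_1 sc)"
proof -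
  have u: "{0, 1, 2} \<union> {3} = ({0, 1, 2, 3}::nat set)" "{0, 1, 2} \<inter> {3} = ({}::nat set)" by auto
  have s: "ysign {0, 1, 2} {3} = (1 :: 'k xpoly)" using ysign_list[of "[0,1,2]" "[3]", where 'k='k] by simp
  show ?thesis by (subst ym_mult) (simp_all only: u s refl if_True finite.emptyI finite_insert mult_1_left mult_minus1 mult_minus_left)
qed

lemma ymm_7_9: "sc_mult (ym {0, 1, 2} x) (ym {0, 3} y) = (0::'k::comm_ring_1 sc)"
  by (subst ym_mult) auto

lemma ymm_7_10: "sc_mult (ym {0, 1, 2} x) (ym {1, 3} y) = (0::'k::comm_ring_1 sc)"
  by (subst ym_mult) auto

lemma ymm_7_11: "sc_mult (ym {0, 1, 2} x) (ym {0, 1, 3} y) = (0::'k::comm_ring_1 sc)"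
  by (subst ym_mult) auto

lemma ymm_7_12: "sc_mult (ym {0, 1, 2} x) (ym {2, 3} y) = (0::'k::comm_ring_1 sc)"
  by (subst ym_mult) auto

lemma ymm_7_13: "sc_mult (ym {0, 1, 2} x) (ym {0, 2, 3} y) = (0::'k::comm_ring_1 sc)"
  by (subst ym_mult) auto

lemma ymm_7_14: "sc_mult (ym {0, 1, 2} x) (ym {1, 2, 3} y) = (0::'k::comm_ring_1 sc)"
  by (subst ym_mult) auto

lemma ymm_7_15: "sc_mult (ym {0, 1, 2} x) (ym {0, 1, 2, 3} y) = (0::'k::comm_ring_1 sc)"
  by (subst ym_mult) auto

lemma ymm_8_0: "sc_mult (ym {3} x) (ym {} y) = (ym {3} (x * y) :: 'k::comm_ring_1 sc)"
proof -
  have u: "{3} \<union> {} = ({3}::nat set)" "{3} \<inter> {} = ({}::nat set)" by auto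
  have s: "ysign {3} {} = (1 :: 'k xpoly)" using ysign_list[of "[3]" "[]", where 'k='k] by simp
  show ?thesis by (subst ym_mult) (simp_all only: u s refl if_True finite.emptyI finite_insert mult_1_left mult_minus1 mult_minus_left)
qed

lemma ymm_8_1: "sc_mult (ym {3} x) (ym {0} y) = (ym {0, 3} (- (x * y)) :: 'k::comm_ring_1 sc)"
proof -
  have u: "{3} \<union> {0} = ({0, 3}::nat set)" "{3} \<inter> {0} = ({}::nat set)" by auto
  have s: "ysign {3} {0} = (-1 :: 'k xpoly)" using ysign_list[of "[3]" "[0]", where 'k='k] by simp
  show ?thesis by (subst ym_mult) (simp_all only: u s refl if_True finite.emptyI finite_insert mult_1_left mult_minus1 mult_minus_left)
qed

lemma ymm_8_2: "sc_mult (ym {3} x) (ym {1} y) = (ym {1, 3} (- (x * y)) :: 'k::comm_ring_1 sc)"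
proof -
  have u: "{3} \<union> {1} = ({1, 3}::nat set)" "{3} \<inter> {1} = ({}::nat set)" by auto
  have s: "ysign {3} {1} = (-1 :: 'k xpoly)" using ysign_list[of "[3]" "[1]", where 'k='k] by simp
  show ?thesis by (subst ym_mult) (simp_all only: u s refl if_True finite.emptyI finite_insert mult_1_left mult_minus1 mult_minus_left)
qed

lemma ymm_8_3: "sc_mult (ym {3} x) (ym {0, 1} y) = (ym {0, 1, 3} (x * y) :: 'k::comm_ring_1 sc)"
proof -
  have u: "{3} \<union> {0, 1} = ({0, 1, 3}::nat set)" "{3} \<inter> {0, 1} = ({}::nat set)" by auto
  have s: "ysign {3} {0, 1} = (1 :: 'k xpoly)" using ysign_list[of "[3]" "[0,1]", where 'k='k] by simp
  show ?thesis by (subst ym_mult) (simp_all only: u s refl if_True finite.emptyI finite_insert mult_1_left mult_minus1 mult_minus_left)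
qed

lemma ymm_8_4: "sc_mult (ym {3} x) (ym {2} y) = (ym {2, 3} (- (x * y)) :: 'k::comm_ring_1 sc)"
proof -
  have u: "{3} \<union> {2} = ({2, 3}::nat set)" "{3} \<inter> {2} = ({}::nat set)" by auto
  have s: "ysign {3} {2} = (-1 :: 'k xpoly)" using ysign_list[of "[3]" "[2]", where 'k='k] by simp
  show ?thesis by (subst ym_mult) (simp_all only: u s refl if_True finite.emptyI finite_insert mult_1_left mult_minus1 mult_minus_left)
qed

lemma ymm_8_5: "sc_mult (ym {3} x) (ym {0, 2} y) = (ym {0, 2, 3} (x * y) :: 'k::comm_ring_1 sc)"
proof -
  have u: "{3} \<union> {0, 2} = ({0, 2, 3}::nat set)" "{3} \<inter> {0, 2} = ({}::nat set)" by auto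
  have s: "ysign {3} {0, 2} = (1 :: 'k xpoly)" using ysign_list[of "[3]" "[0,2]", where 'k='k] by simp
  show ?thesis by (subst ym_mult) (simp_all only: u s refl if_True finite.emptyI finite_insert mult_1_left mult_minus1 mult_minus_left)
qed

lemma ymm_8_6: "sc_mult (ym {3} x) (ym {1, 2} y) = (ym {1, 2, 3} (x * y) :: 'k::comm_ring_1 sc)"
proof -
  have u: "{3} \<union> {1, 2} = ({1, 2, 3}::nat set)" "{3} \<inter> {1, 2} = ({}::nat set)" by auto
  have s: "ysign {3} {1, 2} = (1 :: 'k xpoly)" using ysign_list[of "[3]" "[1,2]", where 'k='k] by simp
  show ?thesis by (subst ym_mult) (simp_all only: u s refl if_True finite.emptyI finite_insert mult_1_left mult_minus1 mult_minus_left)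
qed

lemma ymm_8_7: "sc_mult (ym {3} x) (ym {0, 1, 2} y) = (ym {0, 1, 2, 3} (- (x * y)) :: 'k::comm_ring_1 sc)"
proof -
  have u: "{3} \<union> {0, 1, 2} = ({0, 1, 2, 3}::nat set)" "{3} \<inter> {0, 1, 2} = ({}::nat set)" by auto
  have s: "ysign {3} {0, 1, 2} = (-1 :: 'k xpoly)" using ysign_list[of "[3]" "[0,1,2]", where 'k='k] by simp
  show ?thesis by (subst ym_mult) (simp_all only: u s refl if_True finite.emptyI finite_insert mult_1_left mult_minus1 mult_minus_left)
qed

lemma ymm_8_8: "sc_mult (ym {3} x) (ym {3} y) = (0::'k::comm_ring_1 sc)"
  by (subst ym_mult) auto

lemma ymm_8_9: "sc_mult (ym {3} x) (ym {0, 3} y) = (0::'k::comm_ring_1 sc)"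
  by (subst ym_mult) auto

lemma ymm_8_10: "sc_mult (ym {3} x) (ym {1, 3} y) = (0::'k::comm_ring_1 sc)"
  by (subst ym_mult) auto

lemma ymm_8_11: "sc_mult (ym {3} x) (ym {0, 1, 3} y) = (0::'k::comm_ring_1 sc)"
  by (subst ym_mult) auto

lemma ymm_8_12: "sc_mult (ym {3} x) (ym {2, 3} y) = (0::'k::comm_ring_1 sc)"
  by (subst ym_mult) auto

lemma ymm_8_13: "sc_mult (ym {3} x) (ym {0, 2, 3} y) = (0::'k::comm_ring_1 sc)"
  by (subst ym_mult) auto

lemma ymm_8_14: "sc_mult (ym {3} x) (ym {1, 2, 3} y) = (0::'k::comm_ring_1 sc)"
  by (subst ym_mult) auto

lemma ymm_8_15: "sc_mult (ym {3} x) (ym {0, 1, 2, 3} y) = (0::'k::comm_ring_1 sc)"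
  by (subst ym_mult) auto

lemma ymm_9_0: "sc_mult (ym {0, 3} x) (ym {} y) = (ym {0, 3} (x * y) :: 'k::comm_ring_1 sc)"
proof -
  have u: "{0, 3} \<union> {} = ({0, 3}::nat set)" "{0, 3} \<inter> {} = ({}::nat set)" by auto
  have s: "ysign {0, 3} {} = (1 :: 'k xpoly)" using ysign_list[of "[0,3]" "[]", where 'k='k] by simp
  show ?thesis by (subst ym_mult) (simp_all only: u s refl if_True finite.emptyI finite_insert mult_1_left mult_minus1 mult_minus_left)
qed

lemma ymm_9_1: "sc_mult (ym {0, 3} x) (ym {0} y) = (0::'k::comm_ring_1 sc)"
  by (subst ym_mult) auto

lemma ymm_9_2: "sc_mult (ym {0, 3} x) (ym {1} y) = (ym {0, 1, 3} (- (x * y)) :: 'k::comm_ring_1 sc)"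
proof -
  have u: "{0, 3} \<union> {1} = ({0, 1, 3}::nat set)" "{0, 3} \<inter> {1} = ({}::nat set)" by auto
  have s: "ysign {0, 3} {1} = (-1 :: 'k xpoly)" using ysign_list[of "[0,3]" "[1]", where 'k='k] by simp
  show ?thesis by (subst ym_mult) (simp_all only: u s refl if_True finite.emptyI finite_insert mult_1_left mult_minus1 mult_minus_left)
qed

lemma ymm_9_3: "sc_mult (ym {0, 3} x) (ym {0, 1} y) = (0::'k::comm_ring_1 sc)"
  by (subst ym_mult) auto

lemma ymm_9_4: "sc_mult (ym {0, 3} x) (ym {2} y) = (ym {0, 2, 3} (- (x * y)) :: 'k::comm_ring_1 sc)"
proof -
  have u: "{0, 3} \<union> {2} = ({0, 2, 3}::nat set)" "{0, 3} \<inter> {2} = ({}::nat set)" by auto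
  have s: "ysign {0, 3} {2} = (-1 :: 'k xpoly)" using ysign_list[of "[0,3]" "[2]", where 'k='k] by simp
  show ?thesis by (subst ym_mult) (simp_all only: u s refl if_True finite.emptyI finite_insert mult_1_left mult_minus1 mult_minus_left)
qed

lemma ymm_9_5: "sc_mult (ym {0, 3} x) (ym {0, 2} y) = (0::'k::comm_ring_1 sc)"
  by (subst ym_mult) auto

lemma ymm_9_6: "sc_mult (ym {0, 3} x) (ym {1, 2} y) = (ym {0, 1, 2, 3} (x * y) :: 'k::comm_ring_1 sc)"
proof -
  have u: "{0, 3} \<union> {1, 2} = ({0, 1, 2, 3}::nat set)" "{0, 3} \<inter> {1, 2} = ({}::nat set)" by auto
  have s: "ysign {0, 3} {1, 2} = (1 :: 'k xpoly)" using ysign_list[of "[0,3]" "[1,2]", where 'k='k] by simp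
  show ?thesis by (subst ym_mult) (simp_all only: u s refl if_True finite.emptyI finite_insert mult_1_left mult_minus1 mult_minus_left)
qed

lemma ymm_9_7: "sc_mult (ym {0, 3} x) (ym {0, 1, 2} y) = (0::'k::comm_ring_1 sc)"
  by (subst ym_mult) auto

lemma ymm_9_8: "sc_mult (ym {0, 3} x) (ym {3} y) = (0::'k::comm_ring_1 sc)"
  by (subst ym_mult) auto

lemma ymm_9_9: "sc_mult (ym {0, 3} x) (ym {0, 3} y) = (0::'k::comm_ring_1 sc)"
  by (subst ym_mult) auto

lemma ymm_9_10: "sc_mult (ym {0, 3} x) (ym {1, 3} y) = (0::'k::comm_ring_1 sc)"
  by (subst ym_mult) auto

lemma ymm_9_11: "sc_mult (ym {0, 3} x) (ym {0, 1, 3} y) = (0::'k::comm_ring_1 sc)"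
  by (subst ym_mult) auto

lemma ymm_9_12: "sc_mult (ym {0, 3} x) (ym {2, 3} y) = (0::'k::comm_ring_1 sc)"
  by (subst ym_mult) auto

lemma ymm_9_13: "sc_mult (ym {0, 3} x) (ym {0, 2, 3} y) = (0::'k::comm_ring_1 sc)"
  by (subst ym_mult) auto

lemma ymm_9_14: "sc_mult (ym {0, 3} x) (ym {1, 2, 3} y) = (0::'k::comm_ring_1 sc)"
  by (subst ym_mult) auto

lemma ymm_9_15: "sc_mult (ym {0, 3} x) (ym {0, 1, 2, 3} y) = (0::'k::comm_ring_1 sc)"
  by (subst ym_mult) auto

lemma ymm_10_0: "sc_mult (ym {1, 3} x) (ym {} y) = (ym {1, 3} (x * y) :: 'k::comm_ring_1 sc)"
proof -
  have u: "{1, 3} \<union> {} = ({1, 3}::nat set)" "{1, 3} \<inter> {} = ({}::nat set)" by auto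
  have s: "ysign {1, 3} {} = (1 :: 'k xpoly)" using ysign_list[of "[1,3]" "[]", where 'k='k] by simp
  show ?thesis by (subst ym_mult) (simp_all only: u s refl if_True finite.emptyI finite_insert mult_1_left mult_minus1 mult_minus_left)
qed

lemma ymm_10_1: "sc_mult (ym {1, 3} x) (ym {0} y) = (ym {0, 1, 3} (x * y) :: 'k::comm_ring_1 sc)"
proof -
  have u: "{1, 3} \<union> {0} = ({0, 1, 3}::nat set)" "{1, 3} \<inter> {0} = ({}::nat set)" by auto
  have s: "ysign {1, 3} {0} = (1 :: 'k xpoly)" using ysign_list[of "[1,3]" "[0]", where 'k='k] by simp
  show ?thesis by (subst ym_mult) (simp_all only: u s refl if_True finite.emptyI finite_insert mult_1_left mult_minus1 mult_minus_left)
qed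

lemma ymm_10_2: "sc_mult (ym {1, 3} x) (ym {1} y) = (0::'k::comm_ring_1 sc)"
  by (subst ym_mult) auto

lemma ymm_10_3: "sc_mult (ym {1, 3} x) (ym {0, 1} y) = (0::'k::comm_ring_1 sc)"
  by (subst ym_mult) auto

lemma ymm_10_4: "sc_mult (ym {1, 3} x) (ym {2} y) = (ym {1, 2, 3} (- (x * y)) :: 'k::comm_ring_1 sc)"
proof -
  have u: "{1, 3} \<union> {2} = ({1, 2, 3}::nat set)" "{1, 3} \<inter> {2} = ({}::nat set)" by auto
  have s: "ysign {1, 3} {2} = (-1 :: 'k xpoly)" using ysign_list[of "[1,3]" "[2]", where 'k='k] by simp
  show ?thesis by (subst ym_mult) (simp_all only: u s refl if_True finite.emptyI finite_insert mult_1_left mult_minus1 mult_minus_left)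
qed

lemma ymm_10_5: "sc_mult (ym {1, 3} x) (ym {0, 2} y) = (ym {0, 1, 2, 3} (- (x * y)) :: 'k::comm_ring_1 sc)"
proof -
  have u: "{1, 3} \<union> {0, 2} = ({0, 1, 2, 3}::nat set)" "{1, 3} \<inter> {0, 2} = ({}::nat set)" by auto
  have s: "ysign {1, 3} {0, 2} = (-1 :: 'k xpoly)" using ysign_list[of "[1,3]" "[0,2]", where 'k='k] by simp
  show ?thesis by (subst ym_mult) (simp_all only: u s refl if_True finite.emptyI finite_insert mult_1_left mult_minus1 mult_minus_left)
qed

lemma ymm_10_6: "sc_mult (ym {1, 3} x) (ym {1, 2} y) = (0::'k::comm_ring_1 sc)"
  by (subst ym_mult) auto

lemma ymm_10_7: "sc_mult (ym {1, 3} x) (ym {0, 1, 2} y) = (0::'k::comm_ring_1 sc)"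
  by (subst ym_mult) auto

lemma ymm_10_8: "sc_mult (ym {1, 3} x) (ym {3} y) = (0::'k::comm_ring_1 sc)"
  by (subst ym_mult) auto

lemma ymm_10_9: "sc_mult (ym {1, 3} x) (ym {0, 3} y) = (0::'k::comm_ring_1 sc)"
  by (subst ym_mult) auto

lemma ymm_10_10: "sc_mult (ym {1, 3} x) (ym {1, 3} y) = (0::'k::comm_ring_1 sc)"
  by (subst ym_mult) auto

lemma ymm_10_11: "sc_mult (ym {1, 3} x) (ym {0, 1, 3} y) = (0::'k::comm_ring_1 sc)"
  by (subst ym_mult) auto

lemma ymm_10_12: "sc_mult (ym {1, 3} x) (ym {2, 3} y) = (0::'k::comm_ring_1 sc)"
  by (subst ym_mult) auto

lemma ymm_10_13: "sc_mult (ym {1, 3} x) (ym {0, 2, 3} y) = (0::'k::comm_ring_1 sc)"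
  by (subst ym_mult) auto

lemma ymm_10_14: "sc_mult (ym {1, 3} x) (ym {1, 2, 3} y) = (0::'k::comm_ring_1 sc)"
  by (subst ym_mult) auto

lemma ymm_10_15: "sc_mult (ym {1, 3} x) (ym {0, 1, 2, 3} y) = (0::'k::comm_ring_1 sc)"
  by (subst ym_mult) auto

lemma ymm_11_0: "sc_mult (ym {0, 1, 3} x) (ym {} y) = (ym {0, 1, 3} (x * y) :: 'k::comm_ring_1 sc)"
proof -
  have u: "{0, 1, 3} \<union> {} = ({0, 1, 3}::nat set)" "{0, 1, 3} \<inter> {} = ({}::nat set)" by auto
  have s: "ysign {0, 1, 3} {} = (1 :: 'k xpoly)" using ysign_list[of "[0,1,3]" "[]", where 'k='k] by simp
  show ?thesis by (subst ym_mult) (simp_all only: u s refl if_True finite.emptyI finite_insert mult_1_left mult_minus1 mult_minus_left)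
qed

lemma ymm_11_1: "sc_mult (ym {0, 1, 3} x) (ym {0} y) = (0::'k::comm_ring_1 sc)"
  by (subst ym_mult) auto

lemma ymm_11_2: "sc_mult (ym {0, 1, 3} x) (ym {1} y) = (0::'k::comm_ring_1 sc)"
  by (subst ym_mult) auto

lemma ymm_11_3: "sc_mult (ym {0, 1, 3} x) (ym {0, 1} y) = (0::'k::comm_ring_1 sc)"
  by (subst ym_mult) auto

lemma ymm_11_4: "sc_mult (ym {0, 1, 3} x) (ym {2} y) = (ym {0, 1, 2, 3} (- (x * y)) :: 'k::comm_ring_1 sc)"
proof -
  have u: "{0, 1, 3} \<union> {2} = ({0, 1, 2, 3}::nat set)" "{0, 1, 3} \<inter> {2} = ({}::nat set)" by auto
  have s: "ysign {0, 1, 3} {2} = (-1 :: 'k xpoly)" using ysign_list[of "[0,1,3]" "[2]", where 'k='k] by simp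
  show ?thesis by (subst ym_mult) (simp_all only: u s refl if_True finite.emptyI finite_insert mult_1_left mult_minus1 mult_minus_left)
qed

lemma ymm_11_5: "sc_mult (ym {0, 1, 3} x) (ym {0, 2} y) = (0::'k::comm_ring_1 sc)"
  by (subst ym_mult) auto

lemma ymm_11_6: "sc_mult (ym {0, 1, 3} x) (ym {1, 2} y) = (0::'k::comm_ring_1 sc)"
  by (subst ym_mult) auto

lemma ymm_11_7: "sc_mult (ym {0, 1, 3} x) (ym {0, 1, 2} y) = (0::'k::comm_ring_1 sc)"
  by (subst ym_mult) auto

lemma ymm_11_8: "sc_mult (ym {0, 1, 3} x) (ym {3} y) = (0::'k::comm_ring_1 sc)"
  by (subst ym_mult) auto

lemma ymm_11_9: "sc_mult (ym {0, 1, 3} x) (ym {0, 3} y) = (0::'k::comm_ring_1 sc)"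
  by (subst ym_mult) auto

lemma ymm_11_10: "sc_mult (ym {0, 1, 3} x) (ym {1, 3} y) = (0::'k::comm_ring_1 sc)"
  by (subst ym_mult) auto

lemma ymm_11_11: "sc_mult (ym {0, 1, 3} x) (ym {0, 1, 3} y) = (0::'k::comm_ring_1 sc)"
  by (subst ym_mult) auto

lemma ymm_11_12: "sc_mult (ym {0, 1, 3} x) (ym {2, 3} y) = (0::'k::comm_ring_1 sc)"
  by (subst ym_mult) auto

lemma ymm_11_13: "sc_mult (ym {0, 1, 3} x) (ym {0, 2, 3} y) = (0::'k::comm_ring_1 sc)"
  by (subst ym_mult) auto

lemma ymm_11_14: "sc_mult (ym {0, 1, 3} x) (ym {1, 2, 3} y) = (0::'k::comm_ring_1 sc)"
  by (subst ym_mult) auto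

lemma ymm_11_15: "sc_mult (ym {0, 1, 3} x) (ym {0, 1, 2, 3} y) = (0::'k::comm_ring_1 sc)"
  by (subst ym_mult) auto

lemma ymm_12_0: "sc_mult (ym {2, 3} x) (ym {} y) = (ym {2, 3} (x * y) :: 'k::comm_ring_1 sc)"
proof -
  have u: "{2, 3} \<union> {} = ({2, 3}::nat set)" "{2, 3} \<inter> {} = ({}::nat set)" by auto
  have s: "ysign {2, 3} {} = (1 :: 'k xpoly)" using ysign_list[of "[2,3]" "[]", where 'k='k] by simp
  show ?thesis by (subst ym_mult) (simp_all only: u s refl if_True finite.emptyI finite_insert mult_1_left mult_minus1 mult_minus_left)
qed

lemma ymm_12_1: "sc_mult (ym {2, 3} x) (ym {0} y) = (ym {0, 2, 3} (x * y) :: 'k::comm_ring_1 sc)"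
proof -
  have u: "{2, 3} \<union> {0} = ({0, 2, 3}::nat set)" "{2, 3} \<inter> {0} = ({}::nat set)" by auto
  have s: "ysign {2, 3} {0} = (1 :: 'k xpoly)" using ysign_list[of "[2,3]" "[0]", where 'k='k] by simp
  show ?thesis by (subst ym_mult) (simp_all only: u s refl if_True finite.emptyI finite_insert mult_1_left mult_minus1 mult_minus_left)
qed

lemma ymm_12_2: "sc_mult (ym {2, 3} x) (ym {1} y) = (ym {1, 2, 3} (x * y) :: 'k::comm_ring_1 sc)"
proof -
  have u: "{2, 3} \<union> {1} = ({1, 2, 3}::nat set)" "{2, 3} \<inter> {1} = ({}::nat set)" by auto
  have s: "ysign {2, 3} {1} = (1 :: 'k xpoly)" using ysign_list[of "[2,3]" "[1]", where 'k='k] by simp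
  show ?thesis by (subst ym_mult) (simp_all only: u s refl if_True finite.emptyI finite_insert mult_1_left mult_minus1 mult_minus_left)
qed

lemma ymm_12_3: "sc_mult (ym {2, 3} x) (ym {0, 1} y) = (ym {0, 1, 2, 3} (x * y) :: 'k::comm_ring_1 sc)"
proof -
  have u: "{2, 3} \<union> {0, 1} = ({0, 1, 2, 3}::nat set)" "{2, 3} \<inter> {0, 1} = ({}::nat set)" by auto
  have s: "ysign {2, 3} {0, 1} = (1 :: 'k xpoly)" using ysign_list[of "[2,3]" "[0,1]", where 'k='k] by simp
  show ?thesis by (subst ym_mult) (simp_all only: u s refl if_True finite.emptyI finite_insert mult_1_left mult_minus1 mult_minus_left)
qed

lemma ymm_12_4: "sc_mult (ym {2, 3} x) (ym {2} y) = (0::'k::comm_ring_1 sc)"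
  by (subst ym_mult) auto

lemma ymm_12_5: "sc_mult (ym {2, 3} x) (ym {0, 2} y) = (0::'k::comm_ring_1 sc)"
  by (subst ym_mult) auto

lemma ymm_12_6: "sc_mult (ym {2, 3} x) (ym {1, 2} y) = (0::'k::comm_ring_1 sc)"
  by (subst ym_mult) auto

lemma ymm_12_7: "sc_mult (ym {2, 3} x) (ym {0, 1, 2} y) = (0::'k::comm_ring_1 sc)"
  by (subst ym_mult) auto

lemma ymm_12_8: "sc_mult (ym {2, 3} x) (ym {3} y) = (0::'k::comm_ring_1 sc)"
  by (subst ym_mult) auto

lemma ymm_12_9: "sc_mult (ym {2, 3} x) (ym {0, 3} y) = (0::'k::comm_ring_1 sc)"
  by (subst ym_mult) auto

lemma ymm_12_10: "sc_mult (ym {2, 3} x) (ym {1, 3} y) = (0::'k::comm_ring_1 sc)"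
  by (subst ym_mult) auto

lemma ymm_12_11: "sc_mult (ym {2, 3} x) (ym {0, 1, 3} y) = (0::'k::comm_ring_1 sc)"
  by (subst ym_mult) auto

lemma ymm_12_12: "sc_mult (ym {2, 3} x) (ym {2, 3} y) = (0::'k::comm_ring_1 sc)"
  by (subst ym_mult) auto

lemma ymm_12_13: "sc_mult (ym {2, 3} x) (ym {0, 2, 3} y) = (0::'k::comm_ring_1 sc)"
  by (subst ym_mult) auto

lemma ymm_12_14: "sc_mult (ym {2, 3} x) (ym {1, 2, 3} y) = (0::'k::comm_ring_1 sc)"
  by (subst ym_mult) auto

lemma ymm_12_15: "sc_mult (ym {2, 3} x) (ym {0, 1, 2, 3} y) = (0::'k::comm_ring_1 sc)"
  by (subst ym_mult) auto

lemma ymm_13_0: "sc_mult (ym {0, 2, 3} x) (ym {} y) = (ym {0, 2, 3} (x * y) :: 'k::comm_ring_1 sc)"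
proof -
  have u: "{0, 2, 3} \<union> {} = ({0, 2, 3}::nat set)" "{0, 2, 3} \<inter> {} = ({}::nat set)" by auto
  have s: "ysign {0, 2, 3} {} = (1 :: 'k xpoly)" using ysign_list[of "[0,2,3]" "[]", where 'k='k] by simp
  show ?thesis by (subst ym_mult) (simp_all only: u s refl if_True finite.emptyI finite_insert mult_1_left mult_minus1 mult_minus_left)
qed

lemma ymm_13_1: "sc_mult (ym {0, 2, 3} x) (ym {0} y) = (0::'k::comm_ring_1 sc)"
  by (subst ym_mult) auto

lemma ymm_13_2: "sc_mult (ym {0, 2, 3} x) (ym {1} y) = (ym {0, 1, 2, 3} (x * y) :: 'k::comm_ring_1 sc)"
proof -
  have u: "{0, 2, 3} \<union> {1} = ({0, 1, 2, 3}::nat set)" "{0, 2, 3} \<inter> {1} = ({}::nat set)" by auto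
  have s: "ysign {0, 2, 3} {1} = (1 :: 'k xpoly)" using ysign_list[of "[0,2,3]" "[1]", where 'k='k] by simp
  show ?thesis by (subst ym_mult) (simp_all only: u s refl if_True finite.emptyI finite_insert mult_1_left mult_minus1 mult_minus_left)
qed

lemma ymm_13_3: "sc_mult (ym {0, 2, 3} x) (ym {0, 1} y) = (0::'k::comm_ring_1 sc)"
  by (subst ym_mult) auto

lemma ymm_13_4: "sc_mult (ym {0, 2, 3} x) (ym {2} y) = (0::'k::comm_ring_1 sc)"
  by (subst ym_mult) auto

lemma ymm_13_5: "sc_mult (ym {0, 2, 3} x) (ym {0, 2} y) = (0::'k::comm_ring_1 sc)"
  by (subst ym_mult) auto

lemma ymm_13_6: "sc_mult (ym {0, 2, 3} x) (ym {1, 2} y) = (0::'k::comm_ring_1 sc)"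
  by (subst ym_mult) auto

lemma ymm_13_7: "sc_mult (ym {0, 2, 3} x) (ym {0, 1, 2} y) = (0::'k::comm_ring_1 sc)"
  by (subst ym_mult) auto

lemma ymm_13_8: "sc_mult (ym {0, 2, 3} x) (ym {3} y) = (0::'k::comm_ring_1 sc)"
  by (subst ym_mult) auto

lemma ymm_13_9: "sc_mult (ym {0, 2, 3} x) (ym {0, 3} y) = (0::'k::comm_ring_1 sc)"
  by (subst ym_mult) auto

lemma ymm_13_10: "sc_mult (ym {0, 2, 3} x) (ym {1, 3} y) = (0::'k::comm_ring_1 sc)"
  by (subst ym_mult) auto

lemma ymm_13_11: "sc_mult (ym {0, 2, 3} x) (ym {0, 1, 3} y) = (0::'k::comm_ring_1 sc)"
  by (subst ym_mult) auto

lemma ymm_13_12: "sc_mult (ym {0, 2, 3} x) (ym {2, 3} y) = (0::'k::comm_ring_1 sc)"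
  by (subst ym_mult) auto

lemma ymm_13_13: "sc_mult (ym {0, 2, 3} x) (ym {0, 2, 3} y) = (0::'k::comm_ring_1 sc)"
  by (subst ym_mult) auto

lemma ymm_13_14: "sc_mult (ym {0, 2, 3} x) (ym {1, 2, 3} y) = (0::'k::comm_ring_1 sc)"
  by (subst ym_mult) auto

lemma ymm_13_15: "sc_mult (ym {0, 2, 3} x) (ym {0, 1, 2, 3} y) = (0::'k::comm_ring_1 sc)"
  by (subst ym_mult) auto

lemma ymm_14_0: "sc_mult (ym {1, 2, 3} x) (ym {} y) = (ym {1, 2, 3} (x * y) :: 'k::comm_ring_1 sc)"
proof -
  have u: "{1, 2, 3} \<union> {} = ({1, 2, 3}::nat set)" "{1, 2, 3} \<inter> {} = ({}::nat set)" by auto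
  have s: "ysign {1, 2, 3} {} = (1 :: 'k xpoly)" using ysign_list[of "[1,2,3]" "[]", where 'k='k] by simp
  show ?thesis by (subst ym_mult) (simp_all only: u s refl if_True finite.emptyI finite_insert mult_1_left mult_minus1 mult_minus_left)
qed

lemma ymm_14_1: "sc_mult (ym {1, 2, 3} x) (ym {0} y) = (ym {0, 1, 2, 3} (- (x * y)) :: 'k::comm_ring_1 sc)"
proof -
  have u: "{1, 2, 3} \<union> {0} = ({0, 1, 2, 3}::nat set)" "{1, 2, 3} \<inter> {0} = ({}::nat set)" by auto
  have s: "ysign {1, 2, 3} {0} = (-1 :: 'k xpoly)" using ysign_list[of "[1,2,3]" "[0]", where 'k='k] by simp
  show ?thesis by (subst ym_mult) (simp_all only: u s refl if_True finite.emptyI finite_insert mult_1_left mult_minus1 mult_minus_left)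
qed

lemma ymm_14_2: "sc_mult (ym {1, 2, 3} x) (ym {1} y) = (0::'k::comm_ring_1 sc)"
  by (subst ym_mult) auto

lemma ymm_14_3: "sc_mult (ym {1, 2, 3} x) (ym {0, 1} y) = (0::'k::comm_ring_1 sc)"
  by (subst ym_mult) auto

lemma ymm_14_4: "sc_mult (ym {1, 2, 3} x) (ym {2} y) = (0::'k::comm_ring_1 sc)"
  by (subst ym_mult) auto

lemma ymm_14_5: "sc_mult (ym {1, 2, 3} x) (ym {0, 2} y) = (0::'k::comm_ring_1 sc)"
  by (subst ym_mult) auto

lemma ymm_14_6: "sc_mult (ym {1, 2, 3} x) (ym {1, 2} y) = (0::'k::comm_ring_1 sc)"
  by (subst ym_mult) auto

lemma ymm_14_7: "sc_mult (ym {1, 2, 3} x) (ym {0, 1, 2} y) = (0::'k::comm_ring_1 sc)"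
  by (subst ym_mult) auto

lemma ymm_14_8: "sc_mult (ym {1, 2, 3} x) (ym {3} y) = (0::'k::comm_ring_1 sc)"
  by (subst ym_mult) auto

lemma ymm_14_9: "sc_mult (ym {1, 2, 3} x) (ym {0, 3} y) = (0::'k::comm_ring_1 sc)"
  by (subst ym_mult) auto

lemma ymm_14_10: "sc_mult (ym {1, 2, 3} x) (ym {1, 3} y) = (0::'k::comm_ring_1 sc)"
  by (subst ym_mult) auto

lemma ymm_14_11: "sc_mult (ym {1, 2, 3} x) (ym {0, 1, 3} y) = (0::'k::comm_ring_1 sc)"
  by (subst ym_mult) auto

lemma ymm_14_12: "sc_mult (ym {1, 2, 3} x) (ym {2, 3} y) = (0::'k::comm_ring_1 sc)"
  by (subst ym_mult) auto

lemma ymm_14_13: "sc_mult (ym {1, 2, 3} x) (ym {0, 2, 3} y) = (0::'k::comm_ring_1 sc)"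
  by (subst ym_mult) auto

lemma ymm_14_14: "sc_mult (ym {1, 2, 3} x) (ym {1, 2, 3} y) = (0::'k::comm_ring_1 sc)"
  by (subst ym_mult) auto

lemma ymm_14_15: "sc_mult (ym {1, 2, 3} x) (ym {0, 1, 2, 3} y) = (0::'k::comm_ring_1 sc)"
  by (subst ym_mult) auto

lemma ymm_15_0: "sc_mult (ym {0, 1, 2, 3} x) (ym {} y) = (ym {0, 1, 2, 3} (x * y) :: 'k::comm_ring_1 sc)"
proof -
  have u: "{0, 1, 2, 3} \<union> {} = ({0, 1, 2, 3}::nat set)" "{0, 1, 2, 3} \<inter> {} = ({}::nat set)" by auto
  have s: "ysign {0, 1, 2, 3} {} = (1 :: 'k xpoly)" using ysign_list[of "[0,1,2,3]" "[]", where 'k='k] by simp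
  show ?thesis by (subst ym_mult) (simp_all only: u s refl if_True finite.emptyI finite_insert mult_1_left mult_minus1 mult_minus_left)
qed

lemma ymm_15_1: "sc_mult (ym {0, 1, 2, 3} x) (ym {0} y) = (0::'k::comm_ring_1 sc)"
  by (subst ym_mult) auto

lemma ymm_15_2: "sc_mult (ym {0, 1, 2, 3} x) (ym {1} y) = (0::'k::comm_ring_1 sc)"
  by (subst ym_mult) auto

lemma ymm_15_3: "sc_mult (ym {0, 1, 2, 3} x) (ym {0, 1} y) = (0::'k::comm_ring_1 sc)"
  by (subst ym_mult) auto

lemma ymm_15_4: "sc_mult (ym {0, 1, 2, 3} x) (ym {2} y) = (0::'k::comm_ring_1 sc)"
  by (subst ym_mult) auto

lemma ymm_15_5: "sc_mult (ym {0, 1, 2, 3} x) (ym {0, 2} y) = (0::'k::comm_ring_1 sc)"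
  by (subst ym_mult) auto

lemma ymm_15_6: "sc_mult (ym {0, 1, 2, 3} x) (ym {1, 2} y) = (0::'k::comm_ring_1 sc)"
  by (subst ym_mult) auto

lemma ymm_15_7: "sc_mult (ym {0, 1, 2, 3} x) (ym {0, 1, 2} y) = (0::'k::comm_ring_1 sc)"
  by (subst ym_mult) auto

lemma ymm_15_8: "sc_mult (ym {0, 1, 2, 3} x) (ym {3} y) = (0::'k::comm_ring_1 sc)"
  by (subst ym_mult) auto

lemma ymm_15_9: "sc_mult (ym {0, 1, 2, 3} x) (ym {0, 3} y) = (0::'k::comm_ring_1 sc)"
  by (subst ym_mult) auto

lemma ymm_15_10: "sc_mult (ym {0, 1, 2, 3} x) (ym {1, 3} y) = (0::'k::comm_ring_1 sc)"
  by (subst ym_mult) auto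

lemma ymm_15_11: "sc_mult (ym {0, 1, 2, 3} x) (ym {0, 1, 3} y) = (0::'k::comm_ring_1 sc)"
  by (subst ym_mult) auto

lemma ymm_15_12: "sc_mult (ym {0, 1, 2, 3} x) (ym {2, 3} y) = (0::'k::comm_ring_1 sc)"
  by (subst ym_mult) auto

lemma ymm_15_13: "sc_mult (ym {0, 1, 2, 3} x) (ym {0, 2, 3} y) = (0::'k::comm_ring_1 sc)"
  by (subst ym_mult) auto

lemma ymm_15_14: "sc_mult (ym {0, 1, 2, 3} x) (ym {1, 2, 3} y) = (0::'k::comm_ring_1 sc)"
  by (subst ym_mult) auto

lemma ymm_15_15: "sc_mult (ym {0, 1, 2, 3} x) (ym {0, 1, 2, 3} y) = (0::'k::comm_ring_1 sc)"
  by (subst ym_mult) auto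

lemmas ymm = ymm_0_0 ymm_0_1 ymm_0_2 ymm_0_3 ymm_0_4 ymm_0_5 ymm_0_6 ymm_0_7 ymm_0_8 ymm_0_9 ymm_0_10 ymm_0_11 ymm_0_12 ymm_0_13 ymm_0_14 ymm_0_15 ymm_1_0 ymm_1_1 ymm_1_2 ymm_1_3 ymm_1_4 ymm_1_5 ymm_1_6 ymm_1_7 ymm_1_8 ymm_1_9 ymm_1_10 ymm_1_11 ymm_1_12 ymm_1_13 ymm_1_14 ymm_1_15 ymm_2_0 ymm_2_1 ymm_2_2 ymm_2_3 ymm_2_4 ymm_2_5 ymm_2_6 ymm_2_7 ymm_2_8 ymm_2_9 ymm_2_10 ymm_2_11 ymm_2_12 ymm_2_13 ymm_2_14 ymm_2_15 ymm_3_0 ymm_3_1 ymm_3_2 ymm_3_3 ymm_3_4 ymm_3_5 ymm_3_6 ymm_3_7 ymm_3_8 ymm_3_9 ymm_3_10 ymm_3_11 ymm_3_12 ymm_3_13 ymm_3_14 ymm_3_15 ymm_4_0 ymm_4_1 ymm_4_2 ymm_4_3 ymm_4_4 ymm_4_5 ymm_4_6 ymm_4_7 ymm_4_8 ymm_4_9 ymm_4_10 ymm_4_11 ymm_4_12 ymm_4_13 ymm_4_14 ymm_4_15 ymm_5_0 ymm_5_1 ymm_5_2 ymm_5_3 ymm_5_4 ymm_5_5 ymm_5_6 ymm_5_7 ymm_5_8 ymm_5_9 ymm_5_10 ymm_5_11 ymm_5_12 ymm_5_13 ymm_5_14 ymm_5_15 ymm_6_0 ymm_6_1 ymm_6_2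 ymm_6_3 ymm_6_4 ymm_6_5 ymm_6_6 ymm_6_7 ymm_6_8 ymm_6_9 ymm_6_10 ymm_6_11 ymm_6_12 ymm_6_13 ymm_6_14 ymm_6_15 ymm_7_0 ymm_7_1 ymm_7_2 ymm_7_3 ymm_7_4 ymm_7_5 ymm_7_6 ymm_7_7 ymm_7_8 ymm_7_9 ymm_7_10 ymm_7_11 ymm_7_12 ymm_7_13 ymm_7_14 ymm_7_15 ymm_8_0 ymm_8_1 ymm_8_2 ymm_8_3 ymm_8_4 ymm_8_5 ymm_8_6 ymm_8_7 ymm_8_8 ymm_8_9 ymm_8_10 ymm_8_11 ymm_8_12 ymm_8_13 ymm_8_14 ymm_8_15 ymm_9_0 ymm_9_1 ymm_9_2 ymm_9_3 ymm_9_4 ymm_9_5 ymm_9_6 ymm_9_7 ymm_9_8 ymm_9_9 ymm_9_10 ymm_9_11 ymm_9_12 ymm_9_13 ymm_9_14 ymm_9_15 ymm_10_0 ymm_10_1 ymm_10_2 ymm_10_3 ymm_10_4 ymm_10_5 ymm_10_6 ymm_10_7 ymm_10_8 ymm_10_9 ymm_10_10 ymm_10_11 ymm_10_12 ymm_10_13 ymm_10_14 ymm_10_15 ymm_11_0 ymm_11_1 ymm_11_2 ymm_11_3 ymm_11_4 ymm_11_5 ymm_11_6 ymm_11_7 ymm_11_8 ymm_11_9 ymm_11_10 ymm_11_11 ymm_11_12 ymm_11_13 ymm_11_14 ymm_11_15 ymm_12_0 ymm_12_1 ymm_12_2 ymm_12_3 ymm_12_4 ymm_12_5 ymm_12_6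 ymm_12_7 ymm_12_8 ymm_12_9 ymm_12_10 ymm_12_11 ymm_12_12 ymm_12_13 ymm_12_14 ymm_12_15 ymm_13_0 ymm_13_1 ymm_13_2 ymm_13_3 ymm_13_4 ymm_13_5 ymm_13_6 ymm_13_7 ymm_13_8 ymm_13_9 ymm_13_10 ymm_13_11 ymm_13_12 ymm_13_13 ymm_13_14 ymm_13_15 ymm_14_0 ymm_14_1 ymm_14_2 ymm_14_3 ymm_14_4 ymm_14_5 ymm_14_6 ymm_14_7 ymm_14_8 ymm_14_9 ymm_14_10 ymm_14_11 ymm_14_12 ymm_14_13 ymm_14_14 ymm_14_15 ymm_15_0 ymm_15_1 ymm_15_2 ymm_15_3 ymm_15_4 ymm_15_5 ymm_15_6 ymm_15_7 ymm_15_8 ymm_15_9 ymm_15_10 ymm_15_11 ymm_15_12 ymm_15_13 ymm_15_14 ymm_15_15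

datatype 'a t16 = T16 'a 'a 'a 'a 'a 'a 'a 'a 'a 'a 'a 'a 'a 'a 'a 'a

fun toSC :: "'k::comm_ring_1 xpoly t16 \<Rightarrow> 'k sc" where
  "toSC (T16 a0 a1 a2 a3 a4 a5 a6 a7 a8 a9 a10 a11 a12 a13 a14 a15) = ym {} a0 + ym {0} a1 + ym {1} a2 + ym {0, 1} a3 + ym {2} a4 + ym {0, 2} a5 + ym {1, 2} a6 + ym {0, 1, 2} a7 + ym {3} a8 + ym {0, 3} a9 + ym {1, 3} a10 + ym {0, 1, 3} a11 + ym {2, 3} a12 + ym {0, 2, 3} a13 + ym {1, 2, 3} a14 + ym {0, 1, 2, 3} a15"

fun tmul :: "'a::comm_ring_1 t16 \<Rightarrow> 'a t16 \<Rightarrow> 'a t16" where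
  "tmul (T16 a0 a1 a2 a3 a4 a5 a6 a7 a8 a9 a10 a11 a12 a13 a14 a15) (T16 b0 b1 b2 b3 b4 b5 b6 b7 b8 b9 b10 b11 b12 b13 b14 b15) = T16 (a0 * b0) (a0 * b1 + a1 * b0) (a0 * b2 + a2 * b0) (a0 * b3 + a1 * b2 - a2 * b1 + a3 * b0) (a0 * b4 + a4 * b0) (a0 * b5 + a1 * b4 - a4 * b1 + a5 * b0) (a0 * b6 + a2 * b4 - a4 * b2 + a6 * b0) (a0 * b7 + a1 * b6 - a2 * b5 + a3 * b4 + a4 * b3 - a5 * b2 + a6 * b1 + a7 * b0) (a0 * b8 + a8 * b0) (a0 * b9 + a1 * b8 - a8 * b1 + a9 * b0) (a0 * b10 + a2 * b8 - a8 * b2 + a10 * b0) (a0 * b11 + a1 * b10 - a2 * b9 + a3 * b8 + a8 * b3 - a9 * b2 + a10 * b1 + a11 * b0) (a0 * b12 + a4 * b8 - a8 * b4 + a12 * b0) (a0 * b13 + a1 * b12 - a4 * b9 + a5 * b8 + a8 * b5 - a9 * b4 + a12 * b1 + a13 * b0) (a0 * b14 + a2 * b12 - a4 * b10 + a6 * b8 + a8 * b6 - a10 * b4 + a12 * b2 + a14 * b0) (a0 * b15 + a1 * b14 - a2 * b13 + a3 * b12 + a4 * b11 - a5 * b10 + a6 * b9 + a7 * b8 - a8 * b7 + a9 * b6 - a10 * b5 - a11 * b4 + a12 * b3 + a13 * b2 - a14 * b1 + a15 * b0)"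

fun tadd :: "'a::ab_group_add t16 \<Rightarrow> 'a t16 \<Rightarrow> 'a t16" where
  "tadd (T16 a0 a1 a2 a3 a4 a5 a6 a7 a8 a9 a10 a11 a12 a13 a14 a15) (T16 b0 b1 b2 b3 b4 b5 b6 b7 b8 b9 b10 b11 b12 b13 b14 b15) = T16 (a0 + b0) (a1 + b1) (a2 + b2) (a3 + b3) (a4 + b4) (a5 + b5) (a6 + b6) (a7 + b7) (a8 + b8) (a9 + b9) (a10 + b10) (a11 + b11) (a12 + b12) (a13 + b13) (a14 + b14) (a15 + b15)"
fun tsub :: "'a::ab_group_add t16 \<Rightarrow> 'a t16 \<Rightarrow> 'a t16" where
  "tsub (T16 a0 a1 a2 a3 a4 a5 a6 a7 a8 a9 a10 a11 a12 a13 a14 a15) (T16 b0 b1 b2 b3 b4 b5 b6 b7 b8 b9 b10 b11 b12 b13 b14 b15) = T16 (a0 - b0) (a1 - b1) (a2 - b2) (a3 - b3) (a4 - b4) (a5 - b5) (a6 - b6) (a7 - b7) (a8 - b8) (a9 - b9) (a10 - b10) (a11 - b11) (a12 - b12) (a13 - b13) (a14 - b14) (a15 - b15)"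
fun tneg :: "'a::ab_group_add t16 \<Rightarrow> 'a t16" where
  "tneg (T16 a0 a1 a2 a3 a4 a5 a6 a7 a8 a9 a10 a11 a12 a13 a14 a15) = T16 (- a0) (- a1) (- a2) (- a3) (- a4) (- a5) (- a6) (- a7) (- a8) (- a9) (- a10) (- a11) (- a12) (- a13) (- a14) (- a15)"
definition tz :: "'a::zero t16" where "tz = T16 0 0 0 0 0 0 0 0 0 0 0 0 0 0 0 0"
definition tsc :: "'a::zero \<Rightarrow> 'a t16" where "tsc e = T16 e 0 0 0 0 0 0 0 0 0 0 0 0 0 0 0"
definition ty :: "nat \<Rightarrow> 'a::{zero,one} t16" where
  "ty i = (if i = 0 then T16 0 1 0 0 0 0 0 0 0 0 0 0 0 0 0 0 else if i = 1 then T16 0 0 1 0 0 0 0 0 0 0 0 0 0 0 0 0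
     else if i = 2 then T16 0 0 0 0 1 0 0 0 0 0 0 0 0 0 0 0 else T16 0 0 0 0 0 0 0 0 1 0 0 0 0 0 0 0)"

lemma toSC_add: "toSC t + toSC u = toSC (tadd t u)"
  by (cases t; cases u) (simp add: ym_add add_ac)
lemma toSC_diff: "toSC t - toSC u = toSC (tsub t u)"
  by (cases t; cases u) (simp add: ym_diff algebra_simps)
lemma toSC_uminus: "- toSC t = toSC (tneg t)"
  by (cases t) (simp add: ym_uminus algebra_simps)
lemma toSC_tz: "toSC tz = 0"
  by (simp add: tz_def)
lemma toSC_tsc: "toSC (tsc e) = xs e"
  by (simp add: tsc_def) (rule scc_eqI, simp add: coeffs_ym coeffs_xs)
lemma ym_sc_y: "ym {i} 1 = sc_y i" by (simp add: ym_def sc_y_def)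
lemma toSC_ty: "i < 4 \<Longrightarrow> toSC (ty i) = sc_y i"
proof -
  assume "i < 4"
  then have "i = 0 \<or> i = 1 \<or> i = 2 \<or> i = 3" by auto
  then show ?thesis by (elim disjE) (simp_all add: ty_def ym_sc_y)
qed

lemma toSC_mult: "sc_mult (toSC t) (toSC u) = toSC (tmul t u)"
  by (cases t; cases u) (simp only: toSC.simps tmul.simps sc_mult_add_left sc_mult_add_right ymm ym_add ym_diff ym_uminus add_0_left add_0_right, simp add: algebra_simps)


fun mapM :: "('a \<Rightarrow> 'b) \<Rightarrow> 'a m2 \<Rightarrow> 'b m2" where
  "mapM f (M2 a b c d) = M2 (f a) (f b) (f c) (f d)"

fun tmm :: "'a::comm_ring_1 t16 m2 \<Rightarrow> 'a t16 m2 \<Rightarrow> 'a t16 m2" where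
  "tmm (M2 a b c d) (M2 a' b' c' d') =
     M2 (tadd (tmul a a') (tmul b c')) (tadd (tmul a b') (tmul b d'))
        (tadd (tmul c a') (tmul d c')) (tadd (tmul c b') (tmul d d'))"

fun tmsub :: "'a::ab_group_add t16 m2 \<Rightarrow> 'a t16 m2 \<Rightarrow> 'a t16 m2" where
  "tmsub (M2 a b c d) (M2 a' b' c' d') = M2 (tsub a a') (tsub b b') (tsub c c') (tsub d d')"

definition tcomm :: "'a::comm_ring_1 t16 m2 \<Rightarrow> 'a t16 m2 \<Rightarrow> 'a t16 m2" where
  "tcomm A B = tmsub (tmm A B) (tmm B A)"

definition tzM :: "'a::zero t16 m2" where "tzM = M2 tz tz tz tz"

definition tscal :: "'a::zero \<Rightarrow> 'a t16 m2" where "tscal e = M2 (tsc e) tz tz (tsc e)"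

definition tC1 :: "'a::{zero,one} \<Rightarrow> 'a \<Rightarrow> 'a t16 m2" where
  "tC1 x0 x1 = M2 (tsc x0) (ty 0) (ty 1) (tsc x1)"
definition tC2 :: "'a::{zero,one} \<Rightarrow> 'a \<Rightarrow> 'a t16 m2" where
  "tC2 x2 x3 = M2 (tsc x2) (ty 2) (ty 3) (tsc x3)"

lemma mmult_mapM: "mmult (mapM toSC A) (mapM toSC B) = mapM toSC (tmm A B)"
  by (cases A; cases B) (simp add: toSC_mult toSC_add)
lemma diff_mapM: "mapM toSC A - mapM toSC B = mapM toSC (tmsub A B)"
  by (cases A; cases B) (simp add: toSC_diff)
lemma mcomm_mapM: "mcomm (mapM toSC A) (mapM toSC B) = mapM toSC (tcomm A B)"
  by (simp add: mcomm_def tcomm_def mmult_mapM diff_mapM)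
lemma tzM_mapM: "mapM toSC tzM = 0"
  by (simp add: tzM_def toSC_tz m2_zero)
lemma scal_mapM: "scal e = mapM toSC (tscal e)"
  by (simp add: scal_def tscal_def toSC_tsc toSC_tz)
lemma C1_mapM: "C1 = mapM toSC (tC1 (xvar 0) (xvar 1))"
  by (simp add: C1_def tC1_def toSC_tsc toSC_ty sc_x_xs)
lemma C2_mapM: "C2 = mapM toSC (tC2 (xvar 2) (xvar 3))"
  by (simp add: C2_def tC2_def toSC_tsc toSC_ty sc_x_xs)

lemmas tcalc = tmm.simps tmsub.simps tcomm_def tzM_def tscal_def tC1_def tC2_def tmul.simps tadd.simps tsub.simps tz_def tsc_def ty_def


definition tc0 :: "'a::comm_ring_1 \<Rightarrow> 'a \<Rightarrow> 'a \<Rightarrow> 'a \<Rightarrow> 'a t16 m2" where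
  "tc0 x0 x1 x2 x3 = (M2 (T16 0 0 0 0 0 0 (1) 0 0 (1) 0 0 0 0 0 0) (T16 0 (x3 - x2) 0 0 (- x1 + x0) 0 0 0 0 0 0 0 0 0 0 0) (T16 0 0 (- x3 + x2) 0 0 0 0 0 (x1 - x0) 0 0 0 0 0 0 0) (T16 0 0 0 0 0 0 (1) 0 0 (1) 0 0 0 0 0 0))"

definition tcc1 :: "'a::comm_ring_1 \<Rightarrow> 'a \<Rightarrow> 'a \<Rightarrow> 'a \<Rightarrow> 'a t16 m2" where
  "tcc1 x0 x1 x2 x3 = (M2 (T16 0 0 0 (2 * x3 - 2 * x2) 0 0 (x1 - x0) 0 0 (- x1 + x0) 0 0 0 0 0 0) (T16 0 (x1 * x3 - x1 * x2 - x0 * x3 + x0 * x2) 0 0 (- x1 * x1 + 2 * x0 * x1 - x0 * x0) 0 0 0 0 0 0 0 0 0 0 0) (T16 0 0 (x1 * x3 - x1 * x2 - x0 * x3 + x0 * x2) 0 0 0 0 0 (- x1 * x1 + 2 * x0 * x1 - x0 * x0) 0 0 0 0 0 0 0) (T16 0 0 0 (2 * x3 - 2 * x2) 0 0 (x1 - x0) 0 0 (- x1 + x0) 0 0 0 0 0 0))"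

definition tcc2 :: "'a::comm_ring_1 \<Rightarrow> 'a \<Rightarrow> 'a \<Rightarrow> 'a \<Rightarrow> 'a t16 m2" where
  "tcc2 x0 x1 x2 x3 = (M2 (T16 0 0 0 0 0 0 (- x3 + x2) 0 0 (x3 - x2) 0 0 (- 2 * x1 + 2 * x0) 0 0 0) (T16 0 (x3 * x3 - 2 * x2 * x3 + x2 * x2) 0 0 (- x1 * x3 + x1 * x2 + x0 * x3 - x0 * x2) 0 0 0 0 0 0 0 0 0 0 0) (T16 0 0 (x3 * x3 - 2 * x2 * x3 + x2 * x2) 0 0 0 0 0 (- x1 * x3 + x1 * x2 + x0 * x3 - x0 * x2) 0 0 0 0 0 0 0) (T16 0 0 0 0 0 0 (- x3 + x2) 0 0 (x3 - x2) 0 0 (- 2 * x1 + 2 * x0) 0 0 0))"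

lemma tc0_eq: "tcomm (tC1 x0 x1) (tC2 x2 x3) = (tc0 x0 x1 x2 x3)"
  by (simp add: tcalc tc0_def tcc1_def tcc2_def, (simp_all add: algebra_simps)?)

lemma tcc1_eq: "tcomm (tc0 x0 x1 x2 x3) (tC1 x0 x1) = (tcc1 x0 x1 x2 x3)"
  by (simp add: tcalc tc0_def tcc1_def tcc2_def, (simp_all add: algebra_simps)?)

lemma tcc2_eq: "tcomm (tc0 x0 x1 x2 x3) (tC2 x2 x3) = (tcc2 x0 x1 x2 x3)"
  by (simp add: tcalc tc0_def tcc1_def tcc2_def, (simp_all add: algebra_simps)?)

lemma F3_1_1: "tcomm (tcc1 x0 x1 x2 x3) (tC1 x0 x1) = tmm (tscal ((x0 - x1) * (x0 - x1))) (tc0 x0 x1 x2 x3)"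
  by (simp add: tcalc tc0_def tcc1_def tcc2_def, (simp_all add: algebra_simps)?)

lemma F3_1_2: "tcomm (tcc1 x0 x1 x2 x3) (tC2 x2 x3) = tmm (tscal ((x0 - x1) * (x2 - x3))) (tc0 x0 x1 x2 x3)"
  by (simp add: tcalc tc0_def tcc1_def tcc2_def, (simp_all add: algebra_simps)?)

lemma F3_2_1: "tcomm (tcc2 x0 x1 x2 x3) (tC1 x0 x1) = tmm (tscal ((x2 - x3) * (x0 - x1))) (tc0 x0 x1 x2 x3)"
  by (simp add: tcalc tc0_def tcc1_def tcc2_def, (simp_all add: algebra_simps)?)

lemma F3_2_2: "tcomm (tcc2 x0 x1 x2 x3) (tC2 x2 x3) = tmm (tscal ((x2 - x3) * (x2 - x3))) (tc0 x0 x1 x2 x3)"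
  by (simp add: tcalc tc0_def tcc1_def tcc2_def, (simp_all add: algebra_simps)?)

lemma P1_0_0: "tmm (tmm (tc0 x0 x1 x2 x3) (tc0 x0 x1 x2 x3)) (tc0 x0 x1 x2 x3) = tzM"
  by (simp add: tcalc tc0_def tcc1_def tcc2_def, (simp_all add: algebra_simps)?)

lemma P2_0_0_1: "tcomm (tmm (tc0 x0 x1 x2 x3) (tc0 x0 x1 x2 x3)) (tC1 x0 x1) = tzM"
  by (simp add: tcalc tc0_def tcc1_def tcc2_def, (simp_all add: algebra_simps)?)

lemma P2_0_0_2: "tcomm (tmm (tc0 x0 x1 x2 x3) (tc0 x0 x1 x2 x3)) (tC2 x2 x3) = tzM"
  by (simp add: tcalc tc0_def tcc1_def tcc2_def, (simp_all add: algebra_simps)?)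

lemma P1_0_1: "tmm (tmm (tc0 x0 x1 x2 x3) (tcc1 x0 x1 x2 x3)) (tc0 x0 x1 x2 x3) = tzM"
  by (simp add: tcalc tc0_def tcc1_def tcc2_def, (simp_all add: algebra_simps)?)

lemma P2_0_1_1: "tcomm (tmm (tc0 x0 x1 x2 x3) (tcc1 x0 x1 x2 x3)) (tC1 x0 x1) = tzM"
  by (simp add: tcalc tc0_def tcc1_def tcc2_def, (simp_all add: algebra_simps)?)

lemma P2_0_1_2: "tcomm (tmm (tc0 x0 x1 x2 x3) (tcc1 x0 x1 x2 x3)) (tC2 x2 x3) = tzM"
  by (simp add: tcalc tc0_def tcc1_def tcc2_def, (simp_all add: algebra_simps)?)

lemma P1_0_2: "tmm (tmm (tc0 x0 x1 x2 x3) (tcc2 x0 x1 x2 x3)) (tc0 x0 x1 x2 x3) = tzM"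
  by (simp add: tcalc tc0_def tcc1_def tcc2_def, (simp_all add: algebra_simps)?)

lemma P2_0_2_1: "tcomm (tmm (tc0 x0 x1 x2 x3) (tcc2 x0 x1 x2 x3)) (tC1 x0 x1) = tzM"
  by (simp add: tcalc tc0_def tcc1_def tcc2_def, (simp_all add: algebra_simps)?)

lemma P2_0_2_2: "tcomm (tmm (tc0 x0 x1 x2 x3) (tcc2 x0 x1 x2 x3)) (tC2 x2 x3) = tzM"
  by (simp add: tcalc tc0_def tcc1_def tcc2_def, (simp_all add: algebra_simps)?)

lemma P1_1_0: "tmm (tmm (tcc1 x0 x1 x2 x3) (tc0 x0 x1 x2 x3)) (tc0 x0 x1 x2 x3) = tzM"
  by (simp add: tcalc tc0_def tcc1_def tcc2_def, (simp_all add: algebra_simps)?)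

lemma P2_1_0_1: "tcomm (tmm (tcc1 x0 x1 x2 x3) (tc0 x0 x1 x2 x3)) (tC1 x0 x1) = tzM"
  by (simp add: tcalc tc0_def tcc1_def tcc2_def, (simp_all add: algebra_simps)?)

lemma P2_1_0_2: "tcomm (tmm (tcc1 x0 x1 x2 x3) (tc0 x0 x1 x2 x3)) (tC2 x2 x3) = tzM"
  by (simp add: tcalc tc0_def tcc1_def tcc2_def, (simp_all add: algebra_simps)?)

lemma P1_1_1: "tmm (tmm (tcc1 x0 x1 x2 x3) (tcc1 x0 x1 x2 x3)) (tc0 x0 x1 x2 x3) = tzM"
  by (simp add: tcalc tc0_def tcc1_def tcc2_def, (simp_all add: algebra_simps)?)

lemma P2_1_1_1: "tcomm (tmm (tcc1 x0 x1 x2 x3) (tcc1 x0 x1 x2 x3)) (tC1 x0 x1) = tzM"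
  by (simp add: tcalc tc0_def tcc1_def tcc2_def, (simp_all add: algebra_simps)?)

lemma P2_1_1_2: "tcomm (tmm (tcc1 x0 x1 x2 x3) (tcc1 x0 x1 x2 x3)) (tC2 x2 x3) = tzM"
  by (simp add: tcalc tc0_def tcc1_def tcc2_def, (simp_all add: algebra_simps)?)

lemma P1_1_2: "tmm (tmm (tcc1 x0 x1 x2 x3) (tcc2 x0 x1 x2 x3)) (tc0 x0 x1 x2 x3) = tzM"
  by (simp add: tcalc tc0_def tcc1_def tcc2_def, (simp_all add: algebra_simps)?)

lemma P2_1_2_1: "tcomm (tmm (tcc1 x0 x1 x2 x3) (tcc2 x0 x1 x2 x3)) (tC1 x0 x1) = tzM"
  by (simp add: tcalc tc0_def tcc1_def tcc2_def, (simp_all add: algebra_simps)?)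

lemma P2_1_2_2: "tcomm (tmm (tcc1 x0 x1 x2 x3) (tcc2 x0 x1 x2 x3)) (tC2 x2 x3) = tzM"
  by (simp add: tcalc tc0_def tcc1_def tcc2_def, (simp_all add: algebra_simps)?)

lemma P1_2_0: "tmm (tmm (tcc2 x0 x1 x2 x3) (tc0 x0 x1 x2 x3)) (tc0 x0 x1 x2 x3) = tzM"
  by (simp add: tcalc tc0_def tcc1_def tcc2_def, (simp_all add: algebra_simps)?)

lemma P2_2_0_1: "tcomm (tmm (tcc2 x0 x1 x2 x3) (tc0 x0 x1 x2 x3)) (tC1 x0 x1) = tzM"
  by (simp add: tcalc tc0_def tcc1_def tcc2_def, (simp_all add: algebra_simps)?)

lemma P2_2_0_2: "tcomm (tmm (tcc2 x0 x1 x2 x3) (tc0 x0 x1 x2 x3)) (tC2 x2 x3) = tzM"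
  by (simp add: tcalc tc0_def tcc1_def tcc2_def, (simp_all add: algebra_simps)?)

lemma P1_2_1: "tmm (tmm (tcc2 x0 x1 x2 x3) (tcc1 x0 x1 x2 x3)) (tc0 x0 x1 x2 x3) = tzM"
  by (simp add: tcalc tc0_def tcc1_def tcc2_def, (simp_all add: algebra_simps)?)

lemma P2_2_1_1: "tcomm (tmm (tcc2 x0 x1 x2 x3) (tcc1 x0 x1 x2 x3)) (tC1 x0 x1) = tzM"
  by (simp add: tcalc tc0_def tcc1_def tcc2_def, (simp_all add: algebra_simps)?)

lemma P2_2_1_2: "tcomm (tmm (tcc2 x0 x1 x2 x3) (tcc1 x0 x1 x2 x3)) (tC2 x2 x3) = tzM"
  by (simp add: tcalc tc0_def tcc1_def tcc2_def, (simp_all add: algebra_simps)?)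

lemma P1_2_2: "tmm (tmm (tcc2 x0 x1 x2 x3) (tcc2 x0 x1 x2 x3)) (tc0 x0 x1 x2 x3) = tzM"
  by (simp add: tcalc tc0_def tcc1_def tcc2_def, (simp_all add: algebra_simps)?)

lemma P2_2_2_1: "tcomm (tmm (tcc2 x0 x1 x2 x3) (tcc2 x0 x1 x2 x3)) (tC1 x0 x1) = tzM"
  by (simp add: tcalc tc0_def tcc1_def tcc2_def, (simp_all add: algebra_simps)?)

lemma P2_2_2_2: "tcomm (tmm (tcc2 x0 x1 x2 x3) (tcc2 x0 x1 x2 x3)) (tC2 x2 x3) = tzM"
  by (simp add: tcalc tc0_def tcc1_def tcc2_def, (simp_all add: algebra_simps)?)

lemma P5: "tmm (tmsub (tmm (tscal (x2 - x3)) (tcc1 x0 x1 x2 x3)) (tmm (tscal (x0 - x1)) (tcc2 x0 x1 x2 x3))) (tc0 x0 x1 x2 x3) = tzM"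
  by (simp add: tcalc tc0_def tcc1_def tcc2_def, (simp_all add: algebra_simps)?)


abbreviation X0 :: "'k::comm_ring_1 xpoly" where "X0 \<equiv> xvar 0"
abbreviation X1 :: "'k::comm_ring_1 xpoly" where "X1 \<equiv> xvar 1"
abbreviation X2 :: "'k::comm_ring_1 xpoly" where "X2 \<equiv> xvar 2"
abbreviation X3 :: "'k::comm_ring_1 xpoly" where "X3 \<equiv> xvar 3"

definition c0 :: "'k::comm_ring_1 sc m2" where "c0 = mcomm C1 C2"
definition cc :: "nat \<Rightarrow> 'k::comm_ring_1 sc m2" where "cc b = mcomm c0 (genC b)"
definition dl :: "nat \<Rightarrow> 'k::comm_ring_1 xpoly" where
  "dl b = (if b = 1 then X0 - X1 else X2 - X3)"

lemma c0_mapM: "c0 = mapM toSC (tc0 X0 X1 X2 X3)"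
  by (simp add: c0_def C1_mapM C2_mapM mcomm_mapM tc0_eq)
lemma cc1_mapM: "cc 1 = mapM toSC (tcc1 X0 X1 X2 X3)"
  by (simp add: cc_def genC_def c0_mapM C1_mapM mcomm_mapM tcc1_eq)
lemma cc2_mapM: "b \<noteq> 1 \<Longrightarrow> cc b = mapM toSC (tcc2 X0 X1 X2 X3)"
  by (simp add: cc_def genC_def c0_mapM C2_mapM mcomm_mapM tcc2_eq)

lemma genC_mapM: "genC b = (if b = 1 then mapM toSC (tC1 X0 X1) else mapM toSC (tC2 X2 X3))"
  by (simp add: genC_def C1_mapM C2_mapM)

lemma cc_mapM: "cc b = (if b = 1 then mapM toSC (tcc1 X0 X1 X2 X3) else mapM toSC (tcc2 X0 X1 X2 X3))"
  using cc1_mapM cc2_mapM by auto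

lemma F3: "mcomm (cc i) (genC k) = mmult (scal (dl i * dl k)) c0"
  by (simp only: cc_mapM genC_mapM dl_def scal_mapM c0_mapM; cases "i = 1"; cases "k = 1";
      simp only: if_True if_False simp_thms mcomm_mapM mmult_mapM F3_1_1 F3_1_2 F3_2_1 F3_2_2)

definition isC :: "'k::comm_ring_1 sc m2 \<Rightarrow> bool" where
  "isC X \<longleftrightarrow> X = c0 \<or> X = cc 1 \<or> X = cc 2"

lemma isC_c0: "isC c0" by (simp add: isC_def)
lemma isC_cc: "isC (cc b)"
  by (cases "b = 1") (auto simp: isC_def cc2_mapM)


lemma P1: "isC X \<Longrightarrow> isC Y \<Longrightarrow> mmult (mmult X Y) c0 = 0"
  unfolding isC_def
  by (elim disjE; simp only: cc1_mapM cc2_mapM[of 2] c0_mapM mmult_mapM, simp only: P1_0_0 P1_0_1 P1_0_2 P1_1_0 P1_1_1 P1_1_2 P1_2_0 P1_2_1 P1_2_2 tzM_mapM)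

lemma P2: "isC X \<Longrightarrow> isC Y \<Longrightarrow> mcomm (mmult X Y) (genC k) = 0"
  unfolding isC_def genC_mapM
  by (cases "k = 1"; elim disjE; simp only: cc1_mapM cc2_mapM[of 2] c0_mapM mmult_mapM mcomm_mapM if_True if_False simp_thms,
      simp only: P2_0_0_1 P2_0_1_1 P2_0_2_1 P2_1_0_1 P2_1_1_1 P2_1_2_1 P2_2_0_1 P2_2_1_1 P2_2_2_1
        P2_0_0_2 P2_0_1_2 P2_0_2_2 P2_1_0_2 P2_1_1_2 P2_1_2_2 P2_2_0_2 P2_2_1_2 P2_2_2_2 tzM_mapM)

definition Delta :: "'k::comm_ring_1 sc m2" where
  "Delta = mmult (scal (X2 - X3)) (cc 1) - mmult (scal (X0 - X1)) (cc 2)"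

lemma P5M: "mmult Delta c0 = 0"
  unfolding Delta_def
  by (simp only: cc1_mapM cc2_mapM[of 2] c0_mapM scal_mapM mmult_mapM diff_mapM, simp only: P5 tzM_mapM)


lemma genC1[simp]: "genC 1 = C1" by (simp add: genC_def)
lemma genC1'[simp]: "genC (Suc 0) = C1" by (simp add: genC_def)
lemma genC2[simp]: "genC 2 = C2" by (simp add: genC_def)
lemma goodM_genC[simp]: "goodM (genC b)" by (simp add: genC_def)
lemma goodM_mcomm[simp]: "goodM (mcomm A B)" by (simp add: mcomm_def)
lemma goodM_c0[simp]: "goodM c0" by (simp add: c0_def)
lemma goodM_cc[simp]: "goodM (cc b)" by (simp add: cc_def)
lemma goodM_isC: "isC X \<Longrightarrow> goodM X" by (auto simp: isC_def)

lemma mmult_scal_right_assoc: "mmult X (mmult (scal e) Y) = mmult (scal e) (mmult X Y)"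
  by (metis mmult_assoc scal_comm)

lemma mcomm_add_left: "mcomm (A + B) C = mcomm A C + mcomm B C"
  by (simp add: mcomm_def mmult_add_left mmult_add_right algebra_simps)
lemma mcomm_diff_left: "mcomm (A - B) C = mcomm A C - mcomm B C"
  by (simp add: mcomm_def mmult_diff_left mmult_diff_right algebra_simps)
lemma mcomm_antisym: "mcomm A B = - mcomm B A"
  by (simp add: mcomm_def)
lemma mcomm_self[simp]: "mcomm A A = 0"
  by (simp add: mcomm_def)
lemma mcomm_mult_left: "mcomm (mmult A B) C = mmult A (mcomm B C) + mmult (mcomm A C) B"
  by (simp add: mcomm_def mmult_diff_left mmult_diff_right mmult_assoc)
lemma mcomm_zero_iff: "mcomm A B = 0 \<longleftrightarrow> mmult A B = mmult B A"
  by (simp add: mcomm_def)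

lemma scal_uminus: "mmult (scal (- e)) A = - mmult (scal e) A"
  by (cases A) (simp add: scal_def xs_uminus sc_mult_uminus_left)

section \<open>Structure of the commutators\<close>

definition pd :: "nat list \<Rightarrow> 'k::comm_ring_1 xpoly" where
  "pd ws = prod_list (map dl ws)"

lemma pd_simps[simp]: "pd [] = 1" "pd (ws @ [b]) = pd ws * dl b" "pd (b # ws) = dl b * pd ws"
  by (simp_all add: pd_def)

lemma foldl_struct:
  "foldl (\<lambda>acc b. mcomm acc (genC b)) (mmult (scal D) c0) ws =
     (if even (length ws) then mmult (scal (D * pd ws)) c0
      else mmult (scal (D * pd (butlast ws))) (cc (last ws)))"
proof (induction ws rule: rev_induct)
  case Nil
  then show ?case by simp
next
  case (snoc b ws)
  show ?case
  proof (cases "even (length ws)")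
    case True
    then show ?thesis using snoc
      by (simp add: mcomm_scal_left cc_def)
  next
    case False
    then have ne: "ws \<noteq> []" by auto
    have h: "pd ws = pd (butlast ws) * dl (last ws)"
      using ne by (metis append_butlast_last_id pd_simps(2))
    have e: "D * pd (butlast ws) * (dl (last ws) * dl b) = D * pd (ws @ [b])"
      unfolding pd_simps(2) h by (simp only: mult_ac)
    have "foldl (\<lambda>acc b. mcomm acc (genC b)) (mmult (scal D) c0) (ws @ [b]) =
        mcomm (mmult (scal (D * pd (butlast ws))) (cc (last ws))) (genC b)"
      using snoc False by simp
    also have "\<dots> = mmult (scal (D * pd (ws @ [b]))) c0"
      by (simp add: mcomm_scal_left F3 scal_mult_assoc e)
    finally show ?thesis using False by simp
  qed
qed

lemma ucomm_c0: "ucomm ws = foldl (\<lambda>acc b. mcomm acc (genC b)) c0 ws"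
  by (simp add: ucomm_def c0_def)

lemma ucomm_struct:
  "ucomm ws = (if even (length ws) then mmult (scal (pd ws)) c0
      else mmult (scal (pd (butlast ws))) (cc (last ws)))"
proof -
  have s1: "mmult (scal 1) c0 = c0" by (simp add: scal_one)
  show ?thesis unfolding ucomm_c0 using foldl_struct[of 1 ws] unfolding mult_1_left s1 .
qed

lemma ucomm_form: "\<exists>E X. isC X \<and> ucomm ws = mmult (scal E) X"
  using ucomm_struct[of ws] isC_c0 isC_cc by (metis (full_types))

lemma algF_zero: "0 \<in> algF"
proof -
  have "msmult 0 mone \<in> algF" by (rule algF.smult[OF algF.one])
  then show ?thesis by (simp add: msmult_scal)
qed

lemma algF_scal_const: "a \<in> algF \<Longrightarrow> mmult (scal (xconst k)) a \<in> algF"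
  using algF.smult[of a k] by (simp add: msmult_scal)

lemma algF_uminus: "a \<in> algF \<Longrightarrow> - a \<in> algF"
proof -
  assume a: "a \<in> algF"
  have "xconst (-1 :: 'a) = - 1"
    by (simp add: xconst_def single_uminus)
  then have "msmult (-1) a = - a"
    using goodM_algF[OF a] by (simp add: msmult_scal scal_uminus scal_one)
  then show ?thesis using algF.smult[OF a, of "-1"] by simp
qed

lemma algF_diff: "a \<in> algF \<Longrightarrow> b \<in> algF \<Longrightarrow> a - b \<in> algF"
  using algF.add[OF _ algF_uminus] by (metis diff_conv_add_uminus)

lemma algF_mcomm: "a \<in> algF \<Longrightarrow> b \<in> algF \<Longrightarrow> mcomm a b \<in> algF"
  by (simp add: mcomm_def algF_diff algF.mult)

lemma algF_sum: "(\<And>x. x \<in> S \<Longrightarrow> f x \<in> algF) \<Longrightarrow> sum f S \<in> algF"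
  by (induction S rule: infinite_finite_induct) (auto simp: algF_zero algF.add)

lemma algF_genC: "genC b \<in> algF"
  by (simp add: genC_def algF.gen1 algF.gen2)

lemma algF_mpow: "A \<in> algF \<Longrightarrow> mpow A n \<in> algF"
  by (induction n) (auto simp: algF.one algF.mult)

lemma algF_foldl: "acc \<in> algF \<Longrightarrow> foldl (\<lambda>acc b. mcomm acc (genC b)) acc ws \<in> algF"
  by (induction ws arbitrary: acc) (auto simp: algF_mcomm algF_genC)

lemma algF_c0: "c0 \<in> algF"
  by (simp add: c0_def algF_mcomm algF.gen1 algF.gen2)

lemma algF_ucomm: "ucomm ws \<in> algF"
  by (simp add: ucomm_c0 algF_foldl algF_c0)

lemma algF_mprod_list: "(\<And>x. x \<in> set ms \<Longrightarrow> x \<in> algF) \<Longrightarrow> mprod_list ms \<in> algF"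
  by (induction ms) (auto simp: mprod_list_def algF.one algF.mult)

section \<open>Centrality\<close>

definition comm_all :: "'k::comm_ring_1 sc m2 \<Rightarrow> bool" where
  "comm_all X \<longleftrightarrow> (\<forall>b\<in>algF. mmult X b = mmult b X)"

lemma CG:
  assumes g: "goodM X" and h1: "mcomm X C1 = 0" and h2: "mcomm X C2 = 0"
  shows "comm_all X"
  unfolding comm_all_def
proof
  fix b :: "'a sc m2" assume "b \<in> algF"
  then show "mmult X b = mmult b X"
  proof (induction rule: algF.induct)
    case one
    then show ?case using g by (simp add: mone_left mone_right)
  next
    case gen1
    then show ?case using h1 by (simp add: mcomm_zero_iff)
  next
    case gen2
    then show ?case using h2 by (simp add: mcomm_zero_iff)
  next
    case (smult a k)
    then show ?case
      by (simp add: msmult_scal mmult_scal_right_assoc mmult_assoc)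
  next
    case (add a b)
    then show ?case by (simp add: mmult_add_left mmult_add_right)
  next
    case (mult a b)
    then show ?case by (metis mmult_assoc)
  qed
qed

definition StrC :: "'k::comm_ring_1 sc m2 \<Rightarrow> bool" where
  "StrC X \<longleftrightarrow> goodM X \<and> (\<forall>b\<in>algF. mcomm (mmult X b) C1 = 0 \<and> mcomm (mmult X b) C2 = 0)"

lemma StrC_comm_all: "StrC X \<Longrightarrow> comm_all X"
  unfolding StrC_def using algF.one by (metis CG mone_right)

lemma StrC_crit:
  assumes g: "goodM X" and h1: "mcomm X C1 = 0" and h2: "mcomm X C2 = 0" and h0: "mmult X c0 = 0"
  shows "StrC X"
proof -
  have ca: "comm_all X" using CG[OF g h1 h2] .
  have key: "mmult X (mcomm b C1) = 0 \<and> mmult X (mcomm b C2) = 0" if "b \<in> algF" for b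
    using that
  proof (induction rule: algF.induct)
    case one
    then show ?case by (simp add: mcomm_def mone_left mone_right)
  next
    case gen1
    then show ?case using h0 by (simp add: c0_def)
  next
    case gen2
    then show ?case using h0 by (simp add: c0_def mcomm_antisym[of C2 C1] mmult_uminus_right)
  next
    case (smult a k)
    then show ?case by (simp add: msmult_scal mcomm_scal_left mmult_scal_right_assoc)
  next
    case (add a b)
    then show ?case by (simp add: mcomm_add_left mmult_add_right)
  next
    case (mult a b)
    have xa: "mmult X a = mmult a X" using ca mult(1) by (simp add: comm_all_def)
    have t: "mmult X (mcomm (mmult a b) C) = mmult a (mmult X (mcomm b C)) + mmult (mmult X (mcomm a C)) b" for C
      unfolding mcomm_mult_left mmult_add_right
      by (simp add: mmult_assoc[symmetric] xa)
    show ?case using mult by (simp add: t)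
  qed
  have "mcomm (mmult X b) C = mmult X (mcomm b C)" if "C = C1 \<or> C = C2" for b C
  proof -
    have "mmult C X = mmult X C" using that h1 h2 by (auto simp: mcomm_zero_iff)
    then show ?thesis
      by (simp add: mcomm_def mmult_diff_right mmult_assoc) (metis mmult_assoc)
  qed
  then show ?thesis using key g by (simp add: StrC_def)
qed

lemma StrC_mult_right: "StrC X \<Longrightarrow> b \<in> algF \<Longrightarrow> StrC (mmult X b)"
  unfolding StrC_def by (simp add: mmult_assoc algF.mult)

lemma StrC_mult_left: "StrC X \<Longrightarrow> P \<in> algF \<Longrightarrow> StrC (mmult P X)"
proof -
  assume s: "StrC X" and p: "P \<in> algF"
  then have "mmult P X = mmult X P" using StrC_comm_all[OF s] by (simp add: comm_all_def)
  then show ?thesis using StrC_mult_right[OF s p] by simp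
qed

lemma StrC_zero: "StrC 0"
  by (simp add: StrC_def mcomm_def)

lemma StrC_add: "StrC X \<Longrightarrow> StrC Y \<Longrightarrow> StrC (X + Y)"
  by (simp add: StrC_def mmult_add_left mcomm_add_left)

lemma StrC_scal: "StrC X \<Longrightarrow> StrC (mmult (scal e) X)"
  by (simp add: StrC_def mmult_assoc mcomm_scal_left)

lemma StrC_msmult: "StrC X \<Longrightarrow> StrC (msmult k X)"
  by (simp add: msmult_scal StrC_scal)

lemma StrC_uminus: "StrC X \<Longrightarrow> StrC (- X)"
  by (simp add: StrC_def mmult_uminus_left mcomm_def mmult_uminus_right mmult_diff_left)

lemma StrC_diff: "StrC X \<Longrightarrow> StrC Y \<Longrightarrow> StrC (X - Y)"
  using StrC_add StrC_uminus by (metis diff_conv_add_uminus)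

lemma StrC_sum: "(\<And>x. x \<in> S \<Longrightarrow> StrC (f x)) \<Longrightarrow> StrC (sum f S)"
  by (induction S rule: infinite_finite_induct) (auto simp: StrC_zero StrC_add)

lemma StrC_isC2: "isC X \<Longrightarrow> isC Y \<Longrightarrow> StrC (mmult X Y)"
  by (rule StrC_crit) (auto simp: P1 P2[of X Y 1, simplified] P2[of X Y 2, simplified])

lemma StrC_Delta: "StrC Delta"
proof (rule StrC_crit)
  show "goodM Delta" by (simp add: Delta_def)
  have "mcomm Delta (genC k) = 0" for k
    by (simp add: Delta_def mcomm_diff_left mcomm_scal_left F3 scal_mult_assoc dl_def mult_ac)
  then show "mcomm Delta C1 = 0" "mcomm Delta C2 = 0"
    using genC1 genC2 by metis+
  show "mmult Delta c0 = 0" by (rule P5M)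
qed


section \<open>Differences and products of commutators\<close>

lemma pd_count:
  "set ws \<subseteq> {1, 2} \<Longrightarrow> pd ws = dl 1 ^ count_list ws 1 * dl 2 ^ count_list ws 2"
proof (induction ws)
  case Nil
  then show ?case by simp
next
  case (Cons b ws)
  then have b: "b = 1 \<or> b = 2" and ws: "set ws \<subseteq> {1, 2}" by auto
  show ?case using b Cons.IH[OF ws] by (auto simp: mult_ac)
qed

lemma length_count:
  "set (ws::nat list) \<subseteq> {1, 2} \<Longrightarrow> length ws = count_list ws 1 + count_list ws 2"
  by (induction ws) auto

lemma ucomm_diff_aux:
  assumes w: "w = bw @ [1]" and w': "w' = bw' @ [2]"
    and c1: "count_list w 1 = count_list w' 1" and c2: "count_list w 2 = count_list w' 2"
    and s: "set w \<subseteq> {1, 2}" "set w' \<subseteq> {1, 2}"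
    and o: "odd (length w)" "odd (length w')"
  shows "StrC (ucomm w - ucomm w' :: 'k::comm_ring_1 sc m2)"
proof -
  have sb: "set bw \<subseteq> {1, 2}" "set bw' \<subseteq> {1, 2}" using s w w' by auto
  define p where "p = count_list bw 1"
  define q where "q = count_list bw' 2"
  have e1: "count_list bw' 1 = Suc p" using c1 w w' by (simp add: p_def)
  have e2: "count_list bw 2 = Suc q" using c2 w w' by (simp add: q_def)
  have us: "(ucomm w :: 'k sc m2) = mmult (scal (pd bw)) (cc 1)"
    using ucomm_struct[where ws=w] o w by simp
  have us': "(ucomm w' :: 'k sc m2) = mmult (scal (pd bw')) (cc 2)"
    using ucomm_struct[where ws=w'] o w' by simp
  have pb: "(pd bw :: 'k xpoly) = dl 1 ^ p * dl 2 ^ Suc q"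
    unfolding pd_count[OF sb(1)] p_def e2 ..
  have pb': "(pd bw' :: 'k xpoly) = dl 1 ^ Suc p * dl 2 ^ q"
    unfolding pd_count[OF sb(2)] q_def e1 ..
  have "(ucomm w - ucomm w' :: 'k sc m2) = mmult (scal (dl 1 ^ p * dl 2 ^ q)) Delta"
    unfolding us us' pb pb' Delta_def mmult_diff_right scal_mult_assoc
    by (simp add: dl_def mult_ac)
  then show ?thesis using StrC_scal[OF StrC_Delta] by simp
qed

lemma ucomm_diff_StrC:
  assumes s: "set w \<subseteq> {1, 2}" "set w' \<subseteq> {1, 2}"
    and c1: "count_list w 1 = count_list w' 1" and c2: "count_list w 2 = count_list w' 2"
  shows "StrC (ucomm w - ucomm w' :: 'k::comm_ring_1 sc m2)"
proof -
  have len: "length w = length w'" using length_count[OF s(1)] length_count[OF s(2)] c1 c2 by simp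
  have us: "(ucomm w :: 'k sc m2) = (if even (length w) then mmult (scal (pd w)) c0
      else mmult (scal (pd (butlast w))) (cc (last w)))" by (rule ucomm_struct)
  have us': "(ucomm w' :: 'k sc m2) = (if even (length w') then mmult (scal (pd w')) c0
      else mmult (scal (pd (butlast w'))) (cc (last w')))" by (rule ucomm_struct)
  show ?thesis
  proof (cases "even (length w)")
    case True
    have "(pd w :: 'k xpoly) = pd w'"
      unfolding pd_count[OF s(1)] pd_count[OF s(2)] c1 c2 ..
    then have "(ucomm w :: 'k sc m2) = ucomm w'"
      using us us' len True by simp
    then show ?thesis by (simp add: StrC_zero)
  next
    case False
    then have ne: "w \<noteq> []" "w' \<noteq> []" using len by auto
    define bw where "bw = butlast w"
    define bw' where "bw' = butlast w'"
    have w: "w = bw @ [last w]" and w': "w' = bw' @ [last w']"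
      using ne by (simp_all add: bw_def bw'_def)
    have l: "last w = 1 \<or> last w = 2" "last w' = 1 \<or> last w' = 2"
      using s ne last_in_set by blast+
    have sb: "set bw \<subseteq> {1, 2}" "set bw' \<subseteq> {1, 2}"
      using s w w' by (metis Un_subset_iff set_append)+
    show ?thesis
    proof (cases "last w = last w'")
      case True
      have "count_list (bw @ [last w]) 1 = count_list (bw' @ [last w]) 1"
        "count_list (bw @ [last w]) 2 = count_list (bw' @ [last w]) 2"
        using c1 c2 w w' True by simp_all
      then have "count_list bw 1 = count_list bw' 1" "count_list bw 2 = count_list bw' 2"
        by simp_all
      then have "(pd bw :: 'k xpoly) = pd bw'"
        unfolding pd_count[OF sb(1)] pd_count[OF sb(2)] by simp
      then have "(ucomm w :: 'k sc m2) = ucomm w'"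
        using us us' False len True by (simp add: bw_def bw'_def)
      then show ?thesis by (simp add: StrC_zero)
    next
      case neq: False
      show ?thesis
      proof (cases "last w = 1")
        case True
        then have "last w' = 2" using neq l by auto
        then show ?thesis
          using ucomm_diff_aux[of w bw w' bw'] w w' True c1 c2 s False len by simp
      next
        case F: False
        then have "last w = 2" "last w' = 1" using neq l by auto
        then have "StrC (ucomm w' - ucomm w :: 'k sc m2)"
          using ucomm_diff_aux[of w' bw' w bw] w w' c1 c2 s False len by simp
        then have "StrC (- (ucomm w' - ucomm w :: 'k sc m2))" by (rule StrC_uminus)
        then show ?thesis by simp
      qed
    qed
  qed
qed

lemma StrC_prod:
  assumes "2 \<le> length ws"
  shows "StrC (mprod_list (map ucomm ws) :: 'k::comm_ring_1 sc m2)"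
proof -
  obtain w1 w2 r where ws: "ws = w1 # w2 # r" using assms
    by (cases ws; cases "tl ws") auto
  obtain E1 :: "'k xpoly" and Y1 where 1: "isC Y1" "ucomm w1 = mmult (scal E1) Y1" using ucomm_form by blast
  obtain E2 :: "'k xpoly" and Y2 where 2: "isC Y2" "ucomm w2 = mmult (scal E2) Y2" using ucomm_form by blast
  have p: "mmult (ucomm w1) (ucomm w2) = (mmult (scal (E1 * E2)) (mmult Y1 Y2) :: 'k sc m2)"
  proof -
    have "mmult (ucomm w1) (ucomm w2) = mmult (scal E1) (mmult Y1 (mmult (scal E2) Y2))"
      unfolding 1 2 by (rule mmult_assoc)
    also have "\<dots> = mmult (scal E1) (mmult (scal E2) (mmult Y1 Y2))"
      by (rule arg_cong[where f="mmult (scal E1)"], rule mmult_scal_right_assoc)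
    also have "\<dots> = mmult (scal (E1 * E2)) (mmult Y1 Y2)"
      by (rule scal_mult_assoc)
    finally show ?thesis .
  qed
  have eq: "(mprod_list (map ucomm ws) :: 'k sc m2) =
      mmult (mmult (scal (E1 * E2)) (mmult Y1 Y2)) (mprod_list (map ucomm r))"
    unfolding ws p[symmetric] by (simp add: mprod_list_def mmult_assoc)
  have "(mprod_list (map ucomm r) :: 'k sc m2) \<in> algF" by (rule algF_mprod_list) (auto simp: algF_ucomm)
  then show ?thesis unfolding eq
    by (intro StrC_mult_right StrC_scal StrC_isC2 1 2)
qed


section \<open>Evaluation of polynomials\<close>

definition xmon :: "(nat \<Rightarrow> 'k::comm_ring_1) \<Rightarrow> (nat \<Rightarrow>\<^sub>0 nat) \<Rightarrow> 'k" where
  "xmon v m = (\<Prod>i\<in>Poly_Mapping.keys m. v i ^ Poly_Mapping.lookup m i)"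

definition xev :: "(nat \<Rightarrow> 'k::comm_ring_1) \<Rightarrow> 'k xpoly \<Rightarrow> 'k" where
  "xev v p = (\<Sum>m\<in>Poly_Mapping.keys p. Poly_Mapping.lookup p m * xmon v m)"

lemma xmon_superset:
  assumes "finite K" "Poly_Mapping.keys m \<subseteq> K"
  shows "xmon v m = (\<Prod>i\<in>K. v i ^ Poly_Mapping.lookup m i)"
  unfolding xmon_def
  by (rule prod.mono_neutral_left) (use assms in \<open>auto simp: in_keys_iff\<close>)

lemma xmon_add: "xmon v (m1 + m2) = xmon v m1 * xmon v m2"
proof -
  let ?K = "Poly_Mapping.keys m1 \<union> Poly_Mapping.keys m2"
  have k: "Poly_Mapping.keys (m1 + m2) \<subseteq> ?K" by (rule Poly_Mapping.keys_add)
  show ?thesis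
    using xmon_superset[of ?K "m1 + m2" v] xmon_superset[of ?K m1 v] xmon_superset[of ?K m2 v] k
    by (simp add: lookup_add power_add prod.distrib)
qed

lemma xmon_zero[simp]: "xmon v 0 = 1"
  by (simp add: xmon_def)

lemma xev_superset:
  assumes "finite A" "Poly_Mapping.keys p \<subseteq> A"
  shows "xev v p = (\<Sum>m\<in>A. Poly_Mapping.lookup p m * xmon v m)"
  unfolding xev_def
  by (rule sum.mono_neutral_left) (use assms in \<open>auto simp: in_keys_iff\<close>)

lemma xev_add: "xev v (p + q) = xev v p + xev v q"
proof -
  let ?K = "Poly_Mapping.keys p \<union> Poly_Mapping.keys q"
  have k: "Poly_Mapping.keys (p + q) \<subseteq> ?K" by (rule keys_add)
  show ?thesis
    using xev_superset[of ?K "p + q" v] xev_superset[of ?K p v] xev_superset[of ?K q v] k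
    by (simp add: lookup_add algebra_simps sum.distrib)
qed

lemma xev_zero[simp]: "xev v 0 = 0" by (simp add: xev_def)

lemma xev_uminus: "xev v (- p) = - xev v p"
proof -
  have "xev v (- p) + xev v p = 0" by (simp add: xev_add[symmetric])
  then show ?thesis by (simp add: eq_neg_iff_add_eq_0)
qed

lemma xev_diff: "xev v (p - q) = xev v p - xev v q"
  using xev_add[of v p "- q"] xev_uminus[of v q] by simp

lemma xev_sum: "xev v (sum f A) = (\<Sum>x\<in>A. xev v (f x))"
  by (induction A rule: infinite_finite_induct) (auto simp: xev_add)

lemma xev_single: "xev v (Poly_Mapping.single m c) = c * xmon v m"
  using xev_superset[of "{m}" "Poly_Mapping.single m c" v] by simp

lemma poly_expand: "p = (\<Sum>m\<in>Poly_Mapping.keys p. Poly_Mapping.single m (Poly_Mapping.lookup p m))"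
proof (rule poly_mapping_eqI)
  fix k
  have "Poly_Mapping.lookup (\<Sum>m\<in>Poly_Mapping.keys p. Poly_Mapping.single m (Poly_Mapping.lookup p m)) k =
      (\<Sum>m\<in>Poly_Mapping.keys p. if m = k then Poly_Mapping.lookup p m else 0)"
    by (simp add: lookup_sum lookup_single when_def)
  also have "\<dots> = Poly_Mapping.lookup p k"
    by (simp add: sum.delta' in_keys_iff)
  finally show "Poly_Mapping.lookup p k =
      Poly_Mapping.lookup (\<Sum>m\<in>Poly_Mapping.keys p. Poly_Mapping.single m (Poly_Mapping.lookup p m)) k" by simp
qed

lemma xev_mult: "xev v (p * q) = xev v p * xev v q"
proof -
  have "p * q = (\<Sum>m\<in>Poly_Mapping.keys p. Poly_Mapping.single m (Poly_Mapping.lookup p m)) *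
      (\<Sum>m'\<in>Poly_Mapping.keys q. Poly_Mapping.single m' (Poly_Mapping.lookup q m'))"
    using poly_expand[of p] poly_expand[of q] by metis
  also have "\<dots> = (\<Sum>m\<in>Poly_Mapping.keys p. \<Sum>m'\<in>Poly_Mapping.keys q.
      Poly_Mapping.single m (Poly_Mapping.lookup p m) * Poly_Mapping.single m' (Poly_Mapping.lookup q m'))"
    by (rule sum_product)
  finally have e: "p * q = \<dots>" .
  have "xev v (p * q) = (\<Sum>m\<in>Poly_Mapping.keys p. \<Sum>m'\<in>Poly_Mapping.keys q.
      (Poly_Mapping.lookup p m * xmon v m) * (Poly_Mapping.lookup q m' * xmon v m'))"
    unfolding e by (simp add: xev_sum mult_single xev_single xmon_add mult_ac)
  also have "\<dots> = xev v p * xev v q"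
    by (simp add: xev_def sum_product)
  finally show ?thesis .
qed

lemma xev_xvar[simp]: "xev v (xvar i) = v i"
  by (simp add: xvar_def xev_single xmon_def)

lemma xev_xconst[simp]: "xev v (xconst c) = c"
  by (simp add: xconst_def xev_single)

lemma xev_one[simp]: "xev v 1 = 1"
  using xev_xconst[of v 1] by simp

lemma xev_power: "xev v (p ^ n) = xev v p ^ n"
  by (induction n) (auto simp: xev_mult)

section \<open>Vanishing polynomials\<close>

lemma one_var:
  fixes c :: "'t \<Rightarrow> 'k::field"
  assumes T: "finite T" and S: "infinite S" and h: "\<forall>x\<in>S. (\<Sum>t\<in>T. c t * x ^ e t) = 0"
  shows "(\<Sum>t\<in>{t\<in>T. e t = k}. c t) = 0"
proof -
  define P where "P = (\<Sum>t\<in>T. monom (c t) (e t))"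
  have pv: "poly P x = (\<Sum>t\<in>T. c t * x ^ e t)" for x
    by (simp add: P_def poly_sum poly_monom)
  have "P = 0"
  proof (rule ccontr)
    assume "P \<noteq> 0"
    then have "finite {x. poly P x = 0}" by (rule poly_roots_finite)
    moreover have "S \<subseteq> {x. poly P x = 0}" using h pv by auto
    ultimately show False using S finite_subset by blast
  qed
  then have "coeff P k = 0" by simp
  moreover have "coeff P k = (\<Sum>t\<in>T. if e t = k then c t else 0)"
    by (simp add: P_def coeff_sum coeff_monom)
  moreover have "(\<Sum>t\<in>T. if e t = k then c t else 0) = (\<Sum>t\<in>{t\<in>T. e t = k}. c t)"
    using T by (simp add: sum.inter_filter)
  ultimately show ?thesis by simp
qed

lemma peel:
  fixes f :: "'t \<Rightarrow> 'y \<Rightarrow> 'k::field"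
  assumes T: "finite T" and U: "infinite (UNIV :: 'k set)"
    and h: "\<And>x y. (\<Sum>t\<in>T. f t y * x ^ e t) = 0"
  shows "(\<Sum>t\<in>{t\<in>T. e t = k}. f t y) = 0"
  using one_var[of T UNIV "\<lambda>t. f t y" e k] T U h by simp

lemma four_var:
  fixes g :: "'t \<Rightarrow> 'k::field"
  assumes T: "finite T" and U: "infinite (UNIV :: 'k set)"
    and h: "\<And>a b c d. (\<Sum>t\<in>T. g t * a ^ ea t * b ^ eb t * c ^ ec t * d ^ ed t) = 0"
  shows "(\<Sum>t\<in>{t\<in>T. ea t = ka \<and> eb t = kb \<and> ec t = kc \<and> ed t = kd}. g t) = 0"
proof -
  have s1: "(\<Sum>t\<in>{t\<in>T. ea t = ka}. g t * b ^ eb t * c ^ ec t * d ^ ed t) = 0" for b c d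
  proof -
    have "\<forall>x\<in>UNIV. (\<Sum>t\<in>T. (g t * b ^ eb t * c ^ ec t * d ^ ed t) * x ^ ea t) = 0"
      using h by (simp add: mult_ac)
    from one_var[OF T U this] show ?thesis .
  qed
  define T1 where "T1 = {t\<in>T. ea t = ka}"
  have T1: "finite T1" using T by (simp add: T1_def)
  have s2: "(\<Sum>t\<in>{t\<in>T1. eb t = kb}. g t * c ^ ec t * d ^ ed t) = 0" for c d
  proof -
    have "\<forall>x\<in>UNIV. (\<Sum>t\<in>T1. (g t * c ^ ec t * d ^ ed t) * x ^ eb t) = 0"
      using s1 by (simp add: mult_ac T1_def)
    from one_var[OF T1 U this] show ?thesis .
  qed
  define T2 where "T2 = {t\<in>T1. eb t = kb}"
  have T2: "finite T2" using T1 by (simp add: T2_def)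
  have s3: "(\<Sum>t\<in>{t\<in>T2. ec t = kc}. g t * d ^ ed t) = 0" for d
  proof -
    have "\<forall>x\<in>UNIV. (\<Sum>t\<in>T2. (g t * d ^ ed t) * x ^ ec t) = 0"
      using s2 by (simp add: mult_ac T2_def)
    from one_var[OF T2 U this] show ?thesis .
  qed
  define T3 where "T3 = {t\<in>T2. ec t = kc}"
  have T3: "finite T3" using T2 by (simp add: T3_def)
  have s4: "(\<Sum>t\<in>{t\<in>T3. ed t = kd}. g t) = 0"
  proof -
    have "\<forall>x\<in>UNIV. (\<Sum>t\<in>T3. g t * x ^ ed t) = 0"
      using s3 by (simp add: mult_ac T3_def)
    from one_var[OF T3 U this] show ?thesis .
  qed
  have "{t\<in>T3. ed t = kd} = {t\<in>T. ea t = ka \<and> eb t = kb \<and> ec t = kc \<and> ed t = kd}"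
    by (auto simp: T3_def T2_def T1_def)
  then show ?thesis using s4 by simp
qed



section \<open>Low components\<close>

fun m11 :: "'a m2 \<Rightarrow> 'a" where "m11 (M2 a b c d) = a"
fun m12 :: "'a m2 \<Rightarrow> 'a" where "m12 (M2 a b c d) = b"
fun m21 :: "'a m2 \<Rightarrow> 'a" where "m21 (M2 a b c d) = c"
fun m22 :: "'a m2 \<Rightarrow> 'a" where "m22 (M2 a b c d) = d"

lemma m_add: "m11 (A + B) = m11 A + m11 B" "m12 (A + B) = m12 A + m12 B"
    "m21 (A + B) = m21 A + m21 B" "m22 (A + B) = m22 A + m22 B"
  by (cases A; cases B; simp)+

lemma m_zero: "m11 0 = 0" "m12 0 = 0" "m21 0 = 0" "m22 0 = 0"
  by (simp_all add: zero_m2_def)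

lemma m_sum: "m11 (sum f S) = (\<Sum>x\<in>S. m11 (f x))" "m12 (sum f S) = (\<Sum>x\<in>S. m12 (f x))"
    "m21 (sum f S) = (\<Sum>x\<in>S. m21 (f x))" "m22 (sum f S) = (\<Sum>x\<in>S. m22 (f x))"
  by (induction S rule: infinite_finite_induct) (auto simp: m_add m_zero)

lemma m_mult:
  "m11 (mmult A B) = sc_mult (m11 A) (m11 B) + sc_mult (m12 A) (m21 B)"
  "m12 (mmult A B) = sc_mult (m11 A) (m12 B) + sc_mult (m12 A) (m22 B)"
  "m21 (mmult A B) = sc_mult (m21 A) (m11 B) + sc_mult (m22 A) (m21 B)"
  "m22 (mmult A B) = sc_mult (m21 A) (m12 B) + sc_mult (m22 A) (m22 B)"
  by (cases A; cases B; simp)+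

lemma goodM_m: "goodM A \<Longrightarrow> good (m11 A) \<and> good (m12 A) \<and> good (m21 A) \<and> good (m22 A)"
  by (cases A) simp

fun empz :: "'k::comm_ring_1 sc m2 \<Rightarrow> bool" where
  "empz (M2 a b c d) \<longleftrightarrow> coeffs a {} = 0 \<and> coeffs b {} = 0 \<and> coeffs c {} = 0 \<and> coeffs d {} = 0"

fun nolow :: "'k::comm_ring_1 sc m2 \<Rightarrow> bool" where
  "nolow (M2 a b c d) \<longleftrightarrow> (\<forall>x\<in>{a, b, c, d}. coeffs x {} = 0 \<and> (\<forall>i. coeffs x {i} = 0))"

lemma nolow_iff: "nolow A \<longleftrightarrow> (\<forall>x\<in>{m11 A, m12 A, m21 A, m22 A}. coeffs x {} = 0 \<and> (\<forall>i. coeffs x {i} = 0))"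
  by (cases A) simp

lemma nolowD:
  assumes "nolow A"
  shows "coeffs (m11 A) {} = 0" "coeffs (m12 A) {} = 0" "coeffs (m21 A) {} = 0" "coeffs (m22 A) {} = 0"
    "coeffs (m11 A) {i} = 0" "coeffs (m12 A) {i} = 0" "coeffs (m21 A) {i} = 0" "coeffs (m22 A) {i} = 0"
  using assms by (simp_all add: nolow_iff)

lemma empz_iff: "empz A \<longleftrightarrow> coeffs (m11 A) {} = 0 \<and> coeffs (m12 A) {} = 0 \<and> coeffs (m21 A) {} = 0 \<and> coeffs (m22 A) {} = 0"
  by (cases A) simp

lemma empz_mult_left: "empz A \<Longrightarrow> empz (mmult A B)"
  by (simp add: empz_iff m_mult coeffs_mult_empty)
lemma empz_mult_right: "empz B \<Longrightarrow> empz (mmult A B)"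
  by (simp add: empz_iff m_mult coeffs_mult_empty)
lemma empz_add: "empz A \<Longrightarrow> empz B \<Longrightarrow> empz (A + B)"
  by (simp add: empz_iff m_add)
lemma empz_zero: "empz 0"
  by (simp add: empz_iff m_zero)
lemma empz_sum: "(\<And>x. x \<in> S \<Longrightarrow> empz (f x)) \<Longrightarrow> empz (sum f S)"
  by (induction S rule: infinite_finite_induct) (auto simp: empz_zero empz_add)
lemma empz_msmult: "empz A \<Longrightarrow> empz (msmult k A)"
  by (simp add: msmult_scal empz_mult_right)
lemma empz_diff: "empz A \<Longrightarrow> empz B \<Longrightarrow> empz (A - B)"
  by (cases A; cases B) simp

lemma nolow_mult: "empz A \<Longrightarrow> empz B \<Longrightarrow> nolow (mmult A B)"
  by (simp add: nolow_iff empz_iff m_mult coeffs_mult_empty coeffs_mult_single)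
lemma nolow_mult_left: "nolow A \<Longrightarrow> nolow (mmult A B)"
  by (simp add: nolow_iff m_mult coeffs_mult_empty coeffs_mult_single)
lemma nolow_mult_right: "nolow B \<Longrightarrow> nolow (mmult A B)"
  by (simp add: nolow_iff m_mult coeffs_mult_empty coeffs_mult_single)
lemma nolow_add: "nolow A \<Longrightarrow> nolow B \<Longrightarrow> nolow (A + B)"
  by (simp add: nolow_iff m_add)
lemma nolow_zero: "nolow 0"
  by (simp add: nolow_iff m_zero)
lemma nolow_sum: "(\<And>x. x \<in> S \<Longrightarrow> nolow (f x)) \<Longrightarrow> nolow (sum f S)"
  by (induction S rule: infinite_finite_induct) (auto simp: nolow_zero nolow_add)
lemma nolow_msmult: "nolow A \<Longrightarrow> nolow (msmult k A)"
  by (simp add: msmult_scal nolow_mult_right)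
lemma nolow_empz: "nolow A \<Longrightarrow> empz A"
  by (simp add: nolow_iff empz_iff)

lemma coeffs_toSC_low:
  "coeffs (toSC (T16 a0 a1 a2 a3 a4 a5 a6 a7 a8 a9 a10 a11 a12 a13 a14 a15)) {} = a0"
  "coeffs (toSC (T16 a0 a1 a2 a3 a4 a5 a6 a7 a8 a9 a10 a11 a12 a13 a14 a15)) {2} = a4"
  by (simp_all add: coeffs_ym)

lemma empz_c0: "empz c0"
  by (simp add: c0_mapM tc0_def coeffs_toSC_low coeffs_ym)
lemma empz_cc: "empz (cc b)"
  by (simp add: cc_mapM tcc1_def tcc2_def coeffs_toSC_low coeffs_ym)
lemma empz_isC: "isC X \<Longrightarrow> empz X"
  by (auto simp: isC_def empz_c0 empz_cc)

lemma empz_ucomm: "empz (ucomm w)"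
  using ucomm_form[of w] empz_isC empz_mult_right by metis

lemma nolow_prod:
  assumes "2 \<le> length ws"
  shows "nolow (mprod_list (map ucomm ws) :: 'k::comm_ring_1 sc m2)"
proof -
  obtain w1 w2 r where ws: "ws = w1 # w2 # r" using assms
    by (cases ws; cases "tl ws") auto
  have "(mprod_list (map ucomm ws) :: 'k sc m2) = mmult (ucomm w1) (mmult (ucomm w2) (mprod_list (map ucomm r)))"
    by (simp add: ws mprod_list_def)
  then show ?thesis by (simp add: nolow_mult empz_ucomm empz_mult_left)
qed

lemma coeffs_scal_mult: "goodM X \<Longrightarrow> coeffs (m12 (mmult (scal E) X)) {2} = E * coeffs (m12 X) {2}"
  by (cases X) (simp add: scal_def xs_mult_good)

lemma c0_12: "coeffs (m12 (c0 :: 'k::comm_ring_1 sc m2)) {2} = X0 - X1"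
  by (simp add: c0_mapM tc0_def coeffs_toSC_low coeffs_ym)

lemma cc_12: "coeffs (m12 (cc b :: 'k::comm_ring_1 sc m2)) {2} = - (dl b * (X0 - X1))"
  by (simp add: cc_mapM tcc1_def tcc2_def coeffs_toSC_low coeffs_ym dl_def algebra_simps)

lemma ucomm_12:
  "coeffs (m12 (ucomm w :: 'k::comm_ring_1 sc m2)) {2} = (-1) ^ length w * pd w * (X0 - X1)"
proof (cases "even (length w)")
  case True
  then show ?thesis by (simp add: ucomm_struct coeffs_scal_mult c0_12)
next
  case False
  then have ne: "w \<noteq> []" by auto
  have "pd w = (pd (butlast w) * dl (last w) :: 'k xpoly)"
    using ne by (metis append_butlast_last_id pd_simps(2))
  then show ?thesis using False by (simp add: ucomm_struct coeffs_scal_mult cc_12 algebra_simps)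
qed

lemma mpow_low:
  "coeffs (m11 (mpow C1 n)) {} = X0 ^ n \<and> coeffs (m12 (mpow C1 n)) {} = 0 \<and>
   coeffs (m21 (mpow C1 n)) {} = 0 \<and> coeffs (m22 (mpow C1 n)) {} = X1 ^ n"
  "coeffs (m11 (mpow C2 n)) {} = X2 ^ n \<and> coeffs (m12 (mpow C2 n)) {} = 0 \<and>
   coeffs (m21 (mpow C2 n)) {} = 0 \<and> coeffs (m22 (mpow C2 n)) {} = X3 ^ n"
  by (induction n) (simp_all add: mone_def sc_const_xs coeffs_xs m_mult coeffs_mult_empty
      C1_def C2_def sc_x_xs sc_y_def)

lemma P_low:
  "coeffs (m11 (mmult (mpow C1 n) (mpow C2 m))) {} = X0 ^ n * X2 ^ m"
  "coeffs (m12 (mmult (mpow C1 n) (mpow C2 m))) {} = 0"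
  "coeffs (m22 (mmult (mpow C1 n) (mpow C2 m))) {} = X1 ^ n * X3 ^ m"
  by (simp_all add: m_mult coeffs_mult_empty mpow_low)



lemma msmult_zero_scalar: "msmult 0 A = 0"
  by (simp add: msmult_scal)

lemma msmult_add_scalar: "msmult (a + b) A = msmult a A + msmult b A"
  by (simp add: msmult_scal xconst_add scal_add)

lemma msmult_sum_scalar: "(\<Sum>x\<in>S. msmult (c x) A) = msmult (\<Sum>x\<in>S. c x) A"
  by (induction S rule: infinite_finite_induct) (auto simp: msmult_zero_scalar msmult_add_scalar)

lemma msmult_diff: "msmult k (A - B) = msmult k A - msmult k B"
  by (simp add: msmult_scal mmult_diff_right)

lemma msmult_mone: "msmult k mone = scal (xconst k)"
  by (simp add: msmult_scal mone_right)

lemma mcomm_scal: "mcomm (scal e) C = 0"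
  by (simp add: mcomm_def scal_comm)

lemma count_list_replicate: "count_list (replicate n x) y = (if x = y then n else 0)"
  by (induction n) auto

lemma deg1_count: "deg1 w = Suc (count_list w 1)"
  by (simp add: deg1_def)
lemma deg2_count: "deg2 w = Suc (count_list w 2)"
  by (simp add: deg2_def)

definition canon :: "nat \<times> nat \<Rightarrow> nat list" where
  "canon p = replicate (fst p) 1 @ replicate (snd p) 2"

lemma canon_props: "set (canon p) \<subseteq> {1, 2}" "count_list (canon p) 1 = fst p" "count_list (canon p) 2 = snd p"
  by (auto simp: canon_def count_list_replicate)

lemma J_StrC:
  fixes w :: "nat \<Rightarrow> nat list" and \<beta> :: "nat \<Rightarrow> 'k::field"
  assumes I: "finite I" and lt: "\<And>i. i \<in> I \<Longrightarrow> set (w i) \<subseteq> {1, 2}"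
    and cls: "\<And>i. i \<in> I \<Longrightarrow> (\<Sum>p\<in>{p\<in>I. deg1 (w p) = deg1 (w i) \<and> deg2 (w p) = deg2 (w i)}. \<beta> p) = 0"
  shows "StrC (\<Sum>i\<in>I. msmult (\<beta> i) (ucomm (w i)) :: 'k sc m2)"
proof -
  define key where "key = (\<lambda>i. (count_list (w i) 1, count_list (w i) 2))"
  have split: "(\<Sum>i\<in>I. msmult (\<beta> i) (ucomm (w i)) :: 'k sc m2) =
      (\<Sum>i\<in>I. msmult (\<beta> i) (ucomm (w i) - ucomm (canon (key i)))) +
      (\<Sum>i\<in>I. msmult (\<beta> i) (ucomm (canon (key i))))"
    by (simp add: msmult_diff sum.distrib[symmetric])
  have s1: "StrC (\<Sum>i\<in>I. msmult (\<beta> i) (ucomm (w i) - ucomm (canon (key i))) :: 'k sc m2)"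
  proof (rule StrC_sum, rule StrC_msmult)
    fix i assume i: "i \<in> I"
    show "StrC (ucomm (w i) - ucomm (canon (key i)) :: 'k sc m2)"
      by (rule ucomm_diff_StrC) (use lt[OF i] canon_props in \<open>auto simp: key_def\<close>)
  qed
  have s2: "(\<Sum>i\<in>I. msmult (\<beta> i) (ucomm (canon (key i))) :: 'k sc m2) = 0"
  proof -
    have "(\<Sum>i\<in>I. msmult (\<beta> i) (ucomm (canon (key i))) :: 'k sc m2) =
        (\<Sum>y\<in>key ` I. \<Sum>i\<in>{x. x \<in> I \<and> key x = y}. msmult (\<beta> i) (ucomm (canon (key i))))"
      by (rule sum.image_gen[OF I])
    also have "\<dots> = (\<Sum>y\<in>key ` I. msmult (\<Sum>i\<in>{x. x \<in> I \<and> key x = y}. \<beta> i) (ucomm (canon y)))"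
      by (rule sum.cong[OF refl], subst msmult_sum_scalar[symmetric]) (auto intro!: sum.cong)
    also have "\<dots> = (\<Sum>y\<in>key ` I. (0 :: 'k sc m2))"
    proof (rule sum.cong[OF refl])
      fix y assume "y \<in> key ` I"
      then obtain i where i: "i \<in> I" "y = key i" by auto
      have "{x. x \<in> I \<and> key x = y} = {p\<in>I. deg1 (w p) = deg1 (w i) \<and> deg2 (w p) = deg2 (w i)}"
        using i by (auto simp: key_def deg1_count deg2_count)
      then show "msmult (\<Sum>i\<in>{x. x \<in> I \<and> key x = y}. \<beta> i) (ucomm (canon y)) = (0 :: 'k sc m2)"
        using cls[OF i(1)] by (simp add: msmult_zero_scalar)
    qed
    finally show ?thesis by simp
  qed
  show ?thesis unfolding split s2 using s1 by simp
qed

lemma xvar_neq: "i \<noteq> j \<Longrightarrow> (xvar i :: 'k::comm_ring_1 xpoly) \<noteq> xvar j"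
proof
  assume ij: "i \<noteq> j" and e: "(xvar i :: 'k xpoly) = xvar j"
  have "xev (\<lambda>k. if k = i then 1 else 0) (xvar i :: 'k xpoly) = xev (\<lambda>k. if k = i then 1 else 0) (xvar j)"
    using e by simp
  then show False using ij by simp
qed

lemma coeffs_sc_x: "coeffs (sc_x i) S = (if S = {} then xvar i else 0)"
  by (simp add: sc_x_def)
lemma coeffs_sc_y: "coeffs (sc_y i) S = (if S = {i} then 1 else 0)"
  by (simp add: sc_y_def)
lemma coeffs_sc_const: "coeffs (sc_const c) S = (if S = {} then xconst c else 0)"
  by (simp add: sc_const_def)

lemma xconst_eq0: "xconst c = (0 :: 'k::comm_ring_1 xpoly) \<Longrightarrow> c = 0"
  using xev_xconst[of "\<lambda>_. 0" c] by simp

lemma msmult_m: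
  "m11 (msmult k A) = sc_mult (sc_const k) (m11 A)" "m12 (msmult k A) = sc_mult (sc_const k) (m12 A)"
  "m21 (msmult k A) = sc_mult (sc_const k) (m21 A)" "m22 (msmult k A) = sc_mult (sc_const k) (m22 A)"
  by (cases A; simp)+

lemma coeffs_msmult_empty: "coeffs (m11 (msmult k A)) {} = xconst k * coeffs (m11 A) {}"
  "coeffs (m22 (msmult k A)) {} = xconst k * coeffs (m22 A) {}"
  by (simp_all add: msmult_m coeffs_mult_empty coeffs_sc_const)

lemma coeffs_msmult_12: "coeffs (m12 (msmult k A)) {2} = xconst k * coeffs (m12 A) {2}"
  by (simp add: msmult_m coeffs_mult_single coeffs_sc_const)



lemma sum_Sigma_nested:
  assumes "finite A" "\<And>x. x \<in> A \<Longrightarrow> finite (B x)"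
  shows "(\<Sum>t\<in>Sigma A B. F t) = (\<Sum>x\<in>A. \<Sum>y\<in>B x. F (x, y))"
  using sum.Sigma[of A B "\<lambda>x y. F (x, y)"] assms by simp

theorem theorem1:
  fixes \<alpha> :: "nat \<Rightarrow> nat \<Rightarrow> 'k::field"
    and N :: nat
    and J :: "nat set" and nj mj :: "nat \<Rightarrow> nat"
    and Idx :: "nat \<Rightarrow> nat set" and \<beta> :: "nat \<Rightarrow> nat \<Rightarrow> 'k" and u :: "nat \<Rightarrow> nat \<Rightarrow> nat list"
    and G :: "nat set" and \<gamma> :: "nat \<Rightarrow> 'k" and ga gb :: "nat \<Rightarrow> nat"
    and gu :: "nat \<Rightarrow> nat list list"
    and f :: "'k sc m2"
  assumes K_infinite: "infinite (UNIV :: 'k set)"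
    and K_char: "(2::'k) \<noteq> 0"
    and \<alpha>_supp: "\<And>n m. N < n \<or> N < m \<Longrightarrow> \<alpha> n m = 0"
    and J_fin: "finite J"
    and J_distinct: "inj_on (\<lambda>j. (nj j, mj j)) J"
    and Idx_fin: "\<And>j. j \<in> J \<Longrightarrow> finite (Idx j)"
    and u_letters: "\<And>i j. j \<in> J \<Longrightarrow> i \<in> Idx j \<Longrightarrow> set (u i j) \<subseteq> {1, 2}"
    and G_fin: "finite G"
    and gu_len: "\<And>k. k \<in> G \<Longrightarrow> 2 \<le> length (gu k)"
    and gu_letters: "\<And>k w. k \<in> G \<Longrightarrow> w \<in> set (gu k) \<Longrightarrow> set w \<subseteq> {1, 2}"
    and f_def: "f = (\<Sum>(n, m)\<in>{..N} \<times> {..N}. msmult (\<alpha> n m) (mmult (mpow C1 n) (mpow C2 m)))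
        + (\<Sum>j\<in>J. mmult (mmult (mpow C1 (nj j)) (mpow C2 (mj j)))
                          (\<Sum>i\<in>Idx j. msmult (\<beta> i j) (ucomm (u i j))))
        + (\<Sum>k\<in>G. msmult (\<gamma> k) (mmult (mmult (mpow C1 (ga k)) (mpow C2 (gb k)))
                                        (mprod_list (map ucomm (gu k)))))"
  shows "(central_F f \<longleftrightarrow>
            (\<forall>n m. 1 \<le> n + m \<longrightarrow> \<alpha> n m = 0) \<and>
            (\<forall>j\<in>J. \<forall>i\<in>Idx j.
               (\<Sum>p\<in>{p\<in>Idx j. deg1 (u p j) = deg1 (u i j) \<and> deg2 (u p j) = deg2 (u i j)}.
                  \<beta> p j) = 0))
       \<and> (strongly_central_F f \<longleftrightarrow> central_F f \<and> \<alpha> 0 0 = 0)"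
  proof -
  define A\<alpha> where "A\<alpha> = (\<Sum>(n, m)\<in>{..N} \<times> {..N}. msmult (\<alpha> n m) (mmult (mpow C1 n) (mpow C2 m)))"
  define P where "P = (\<lambda>j. mmult (mpow C1 (nj j)) (mpow C2 (mj j)) :: 'k sc m2)"
  define Sj where "Sj = (\<lambda>j. \<Sum>i\<in>Idx j. msmult (\<beta> i j) (ucomm (u i j)) :: 'k sc m2)"
  define Jp where "Jp = (\<Sum>j\<in>J. mmult (P j) (Sj j))"
  define Gp where "Gp = (\<Sum>k\<in>G. msmult (\<gamma> k) (mmult (mmult (mpow C1 (ga k)) (mpow C2 (gb k)))
                                        (mprod_list (map ucomm (gu k)))))"
  have f: "f = A\<alpha> + Jp + Gp"
    unfolding f_def A\<alpha>_def Jp_def Gp_def P_def Sj_def ..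
  define cond1 where "cond1 \<longleftrightarrow> (\<forall>n m. 1 \<le> n + m \<longrightarrow> \<alpha> n m = 0)"
  define cond2 where "cond2 \<longleftrightarrow> (\<forall>j\<in>J. \<forall>i\<in>Idx j.
               (\<Sum>p\<in>{p\<in>Idx j. deg1 (u p j) = deg1 (u i j) \<and> deg2 (u p j) = deg2 (u i j)}.
                  \<beta> p j) = 0)"
  have P_alg: "P j \<in> algF" for j
    by (simp add: P_def algF.mult algF_mpow algF.gen1 algF.gen2)
  have Sj_alg: "Sj j \<in> algF" for j
    by (simp add: Sj_def algF_sum algF.smult algF_ucomm)
  have A_alg: "A\<alpha> \<in> algF"
    unfolding A\<alpha>_def by (rule algF_sum) (auto intro!: algF.smult algF.mult algF_mpow algF.gen1 algF.gen2)
  have J_alg: "Jp \<in> algF"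
    unfolding Jp_def by (rule algF_sum) (simp add: algF.mult P_alg Sj_alg)
  have G_alg: "Gp \<in> algF"
    unfolding Gp_def by (rule algF_sum)
      (auto intro!: algF.smult algF.mult algF_mpow algF.gen1 algF.gen2 algF_mprod_list simp: algF_ucomm)
  have f_alg: "f \<in> algF" unfolding f using A_alg J_alg G_alg by (simp add: algF.add)
  have f_good: "goodM f" using goodM_algF[OF f_alg] .
  have G_str: "StrC Gp"
    unfolding Gp_def
  proof (rule StrC_sum, rule StrC_msmult, rule StrC_mult_left)
    fix k assume k: "k \<in> G"
    show "StrC (mprod_list (map ucomm (gu k)) :: 'k sc m2)" by (rule StrC_prod[OF gu_len[OF k]])
    show "mmult (mpow C1 (ga k)) (mpow C2 (gb k)) \<in> algF"
      by (simp add: algF.mult algF_mpow algF.gen1 algF.gen2)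
  qed
  have A00: "A\<alpha> = msmult (\<alpha> 0 0) mone" if c1: cond1
  proof -
    have z: "(0, 0) \<in> {..N} \<times> {..N}" by simp
    have h1: "A\<alpha> = msmult (\<alpha> 0 0) (mmult (mpow C1 0) (mpow C2 0)) +
        (\<Sum>t\<in>{..N} \<times> {..N} - {(0, 0)}. (case t of (n, m) \<Rightarrow> msmult (\<alpha> n m) (mmult (mpow C1 n) (mpow C2 m))))"
      unfolding A\<alpha>_def by (subst sum.remove[OF _ z]) auto
    have h2: "(\<Sum>t\<in>{..N} \<times> {..N} - {(0, 0)}. (case t of (n, m) \<Rightarrow> msmult (\<alpha> n m) (mmult (mpow C1 n) (mpow C2 m)))) = 0"
    proof (rule sum.neutral, rule ballI)
      fix t assume t: "t \<in> {..N} \<times> {..N} - {(0::nat, 0::nat)}"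
      obtain n m where tnm: "t = (n, m)" by (cases t)
      then have "1 \<le> n + m" using t by auto
      then show "(case t of (n, m) \<Rightarrow> msmult (\<alpha> n m) (mmult (mpow C1 n) (mpow C2 m))) = 0"
        using c1 tnm by (simp add: cond1_def msmult_zero_scalar)
    qed
    show ?thesis unfolding h1 h2 by (simp add: mone_left)
  qed
  have J_str: "StrC Jp" if c2: cond2
    unfolding Jp_def
  proof (rule StrC_sum, rule StrC_mult_left[OF _ P_alg])
    fix j assume j: "j \<in> J"
    show "StrC (Sj j)" unfolding Sj_def
      by (rule J_StrC) (use j Idx_fin u_letters c2 in \<open>auto simp: cond2_def\<close>)
  qed
  have cent_if: "central_F f" if c1: cond1 and c2: cond2
  proof -
    have Z: "StrC (Jp + Gp)" using J_str[OF c2] G_str by (rule StrC_add)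
    have fe: "f = scal (xconst (\<alpha> 0 0)) + (Jp + Gp)"
      unfolding f A00[OF c1] msmult_mone by (simp add: add.assoc)
    have gz: "goodM (Jp + Gp)" using Z by (simp add: StrC_def)
    have "mcomm (Jp + Gp) C = 0" if "C = C1 \<or> C = C2" for C
      using Z algF.one that mone_right[OF gz] unfolding StrC_def by metis
    then have "mcomm f C1 = 0" "mcomm f C2 = 0"
      by (simp_all add: fe mcomm_add_left mcomm_scal)
    then have "comm_all f" using CG[OF f_good] by blast
    then show ?thesis using f_alg by (simp add: central_F_def comm_all_def)
  qed
  have J_empz: "empz Jp"
    unfolding Jp_def Sj_def
    by (intro empz_sum empz_mult_right empz_msmult empz_ucomm)
  have G_nolow: "nolow Gp"
    unfolding Gp_def
    by (intro nolow_sum nolow_msmult nolow_mult_right nolow_prod gu_len)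
  have Sj_empz: "empz (Sj j)" for j
    unfolding Sj_def by (intro empz_sum empz_msmult empz_ucomm)
  have cond_if: "cond1 \<and> cond2" if cf: "central_F f"
  proof -
    have e1: "mmult f C1 = mmult C1 f" and e2: "mmult f C2 = mmult C2 f"
      using cf algF.gen1 algF.gen2 by (auto simp: central_F_def)
    obtain f11 f12 f21 f22 where fM: "f = M2 f11 f12 f21 f22" by (cases f)
    have E1: "sc_mult f11 (sc_y 0) + sc_mult f12 (sc_x 1) = sc_mult (sc_x 0) f12 + sc_mult (sc_y 0) f22"
      using e1 by (simp add: fM C1_def)
    have E2: "sc_mult f11 (sc_y 2) + sc_mult f12 (sc_x 3) = sc_mult (sc_x 2) f12 + sc_mult (sc_y 2) f22"
      using e2 by (simp add: fM C2_def)
    have q0: "coeffs f11 {} + coeffs f12 {0} * X1 = X0 * coeffs f12 {0} + coeffs f22 {}"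
      using arg_cong[OF E1, of "\<lambda>x. coeffs x {0}"]
      by (simp add: coeffs_mult_single coeffs_sc_x coeffs_sc_y)
    have q2: "coeffs f12 {2} * X1 = X0 * coeffs f12 {2}"
      using arg_cong[OF E1, of "\<lambda>x. coeffs x {2}"]
      by (simp add: coeffs_mult_single coeffs_sc_x coeffs_sc_y)
    have q0': "coeffs f12 {0} * X3 = X2 * coeffs f12 {0}"
      using arg_cong[OF E2, of "\<lambda>x. coeffs x {0}"]
      by (simp add: coeffs_mult_single coeffs_sc_x coeffs_sc_y)
    have nz01: "(X0 - X1 :: 'k xpoly) \<noteq> 0" using xvar_neq[of 0 1] by simp
    have nz23: "(X2 - X3 :: 'k xpoly) \<noteq> 0" using xvar_neq[of 2 3] by simp
    have f120: "coeffs f12 {0} = 0" using q0' xvar_neq[of 2 3] xvar_neq[of 3 2] by (auto simp: algebra_simps)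
    have f122: "coeffs f12 {2} = 0" using q2 xvar_neq[of 0 1] xvar_neq[of 1 0] by (auto simp: algebra_simps)
    have F1122: "coeffs f11 {} = coeffs f22 {}" using q0 f120 by simp
    have F11: "coeffs f11 {} = (\<Sum>(n, m)\<in>{..N} \<times> {..N}. xconst (\<alpha> n m) * (X0 ^ n * X2 ^ m))"
    proof -
      have "coeffs f11 {} = coeffs (m11 A\<alpha>) {} + coeffs (m11 Jp) {} + coeffs (m11 Gp) {}"
        using fM f by (metis coeffs_add m11.simps m_add(1))
      also have "coeffs (m11 Jp) {} = 0" using J_empz by (simp add: empz_iff)
      also have "coeffs (m11 Gp) {} = 0" using G_nolow by (simp add: nolowD)
      also have "coeffs (m11 A\<alpha>) {} = (\<Sum>(n, m)\<in>{..N} \<times> {..N}. xconst (\<alpha> n m) * (X0 ^ n * X2 ^ m))"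
        unfolding A\<alpha>_def m_sum coeffs_sum
        by (rule sum.cong) (auto simp: coeffs_msmult_empty P_low)
      finally show ?thesis by simp
    qed
    have F22: "coeffs f22 {} = (\<Sum>(n, m)\<in>{..N} \<times> {..N}. xconst (\<alpha> n m) * (X1 ^ n * X3 ^ m))"
    proof -
      have "coeffs f22 {} = coeffs (m22 A\<alpha>) {} + coeffs (m22 Jp) {} + coeffs (m22 Gp) {}"
        using fM f by (metis coeffs_add m22.simps m_add(4))
      also have "coeffs (m22 Jp) {} = 0" using J_empz by (simp add: empz_iff)
      also have "coeffs (m22 Gp) {} = 0" using G_nolow by (simp add: nolowD)
      also have "coeffs (m22 A\<alpha>) {} = (\<Sum>(n, m)\<in>{..N} \<times> {..N}. xconst (\<alpha> n m) * (X1 ^ n * X3 ^ m))"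
        unfolding A\<alpha>_def m_sum coeffs_sum
        by (rule sum.cong) (auto simp: coeffs_msmult_empty P_low)
      finally show ?thesis by simp
    qed
    define g where "g = (\<lambda>t::nat \<times> nat. \<alpha> (fst t) (snd t) - (if t = (0, 0) then \<alpha> 0 0 else 0))"
    have Tfin: "finite ({..N} \<times> {..N})" by simp
    have geq: "(\<Sum>t\<in>{..N} \<times> {..N}. g t * a ^ fst t * b ^ snd t * c ^ (0::nat) * d ^ (0::nat)) = 0" for a b c d :: 'k
    proof -
      define v where "v = (\<lambda>i::nat. if i = 0 then a else if i = 2 then b else 0)"
      have "xev v (coeffs f11 {}) = xev v (coeffs f22 {})" using F1122 by simp
      then have h: "(\<Sum>t\<in>{..N} \<times> {..N}. \<alpha> (fst t) (snd t) * (a ^ fst t * b ^ snd t)) =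
          (\<Sum>t\<in>{..N} \<times> {..N}. \<alpha> (fst t) (snd t) * (0 ^ fst t * 0 ^ snd t))"
        unfolding F11 F22 by (simp add: xev_sum xev_mult xev_power v_def split_def)
      have z: "(0::nat, 0::nat) \<in> {..N} \<times> {..N}" by simp
      have "(\<Sum>t\<in>{..N} \<times> {..N}. \<alpha> (fst t) (snd t) * (0 ^ fst t * 0 ^ snd t)) =
          (\<Sum>t\<in>{..N} \<times> {..N}. if t = (0, 0) then \<alpha> 0 0 else (0::'k))"
        by (rule sum.cong) (auto simp: zero_power)
      also have "\<dots> = \<alpha> 0 0" using z by (simp add: sum.delta)
      finally have h0: "(\<Sum>t\<in>{..N} \<times> {..N}. \<alpha> (fst t) (snd t) * (0 ^ fst t * 0 ^ snd t)) = \<alpha> 0 0" .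
      have "(\<Sum>t\<in>{..N} \<times> {..N}. g t * a ^ fst t * b ^ snd t * c ^ (0::nat) * d ^ (0::nat)) =
          (\<Sum>t\<in>{..N} \<times> {..N}. \<alpha> (fst t) (snd t) * (a ^ fst t * b ^ snd t)) -
          (\<Sum>t\<in>{..N} \<times> {..N}. if t = (0, 0) then \<alpha> 0 0 else (0::'k))"
        unfolding sum_subtractf[symmetric] by (rule sum.cong) (auto simp: g_def algebra_simps)
      also have "\<dots> = 0" using h h0 z by (simp add: sum.delta)
      finally show ?thesis .
    qed
    have c1: cond1
      unfolding cond1_def
    proof (intro allI impI)
      fix n m :: nat assume nm: "1 \<le> n + m"
      show "\<alpha> n m = 0"
      proof (cases "n \<le> N \<and> m \<le> N")
        case True
        have "(\<Sum>t\<in>{t \<in> {..N} \<times> {..N}. fst t = n \<and> snd t = m \<and> (\<lambda>_. 0::nat) t = 0 \<and> (\<lambda>_. 0::nat) t = 0}. g t) = 0"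
          using four_var[where g=g and T="{..N} \<times> {..N}" and ea=fst and eb=snd and ec="\<lambda>_. 0" and ed="\<lambda>_. 0"
              and ka=n and kb=m and kc=0 and kd=0, OF Tfin K_infinite] geq by simp
        moreover have "{t \<in> {..N} \<times> {..N}. fst t = n \<and> snd t = m \<and> (\<lambda>_. 0::nat) t = 0 \<and> (\<lambda>_. 0::nat) t = 0} = {(n, m)}"
          using True by auto
        ultimately have "g (n, m) = 0" by simp
        then show ?thesis using nm by (auto simp: g_def)
      next
        case False
        then show ?thesis using \<alpha>_supp by auto
      qed
    qed
    have Aeq: "A\<alpha> = msmult (\<alpha> 0 0) mone" by (rule A00[OF c1])
    have PS: "coeffs (m12 (mmult (P j) (Sj j))) {2} = X0 ^ nj j * X2 ^ mj j * coeffs (m12 (Sj j)) {2}" for j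
    proof -
      have a: "coeffs (m11 (P j)) {} = X0 ^ nj j * X2 ^ mj j" "coeffs (m12 (P j)) {} = 0"
        by (simp_all only: P_def P_low)
      have b: "coeffs (m12 (Sj j)) {} = 0" "coeffs (m22 (Sj j)) {} = 0"
        using Sj_empz[of j] by (simp_all add: empz_iff)
      show ?thesis by (simp add: m_mult(2) coeffs_mult_single a b)
    qed
    have S12: "coeffs (m12 (Sj j)) {2} =
        (\<Sum>i\<in>Idx j. xconst (\<beta> i j) * ((-1) ^ length (u i j) * pd (u i j) * (X0 - X1)))" for j
      unfolding Sj_def m_sum coeffs_sum by (simp add: coeffs_msmult_12 ucomm_12)
    have F12: "coeffs f12 {2} = (\<Sum>j\<in>J. X0 ^ nj j * X2 ^ mj j *
        (\<Sum>i\<in>Idx j. xconst (\<beta> i j) * ((-1) ^ length (u i j) * pd (u i j) * (X0 - X1))))"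
    proof -
      have "coeffs f12 {2} = coeffs (m12 A\<alpha>) {2} + coeffs (m12 Jp) {2} + coeffs (m12 Gp) {2}"
        using fM f by (metis coeffs_add m12.simps m_add(2))
      also have "coeffs (m12 Gp) {2} = 0" using G_nolow by (simp add: nolowD)
      also have "coeffs (m12 A\<alpha>) {2} = 0"
        by (simp add: Aeq msmult_m mone_def)
      also have "coeffs (m12 Jp) {2} = (\<Sum>j\<in>J. X0 ^ nj j * X2 ^ mj j *
        (\<Sum>i\<in>Idx j. xconst (\<beta> i j) * ((-1) ^ length (u i j) * pd (u i j) * (X0 - X1))))"
        unfolding Jp_def m_sum coeffs_sum by (simp add: PS S12)
      finally show ?thesis by simp
    qed
    define T where "T = Sigma J Idx"
    have Tf: "finite T" unfolding T_def using J_fin Idx_fin by auto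
    define h where "h = (\<lambda>t. \<beta> (snd t) (fst t) * (-1) ^ length (u (snd t) (fst t)))"
    define cnt1 where "cnt1 = (\<lambda>t. Suc (count_list (u (snd t) (fst t)) 1))"
    define cnt2 where "cnt2 = (\<lambda>t. count_list (u (snd t) (fst t)) 2)"
    have heq: "(\<Sum>t\<in>T. h t * a ^ nj (fst t) * b ^ mj (fst t) * c ^ cnt1 t * d ^ cnt2 t) = 0" for a b c d :: 'k
    proof -
      define v where "v = (\<lambda>i::nat. if i = 0 then a else if i = 1 then a - c else if i = 2 then b else b - d)"
      have pdv: "xev v (pd (u i j)) = c ^ count_list (u i j) 1 * d ^ count_list (u i j) 2"
        if "j \<in> J" "i \<in> Idx j" for i j
      proof -
        have "(pd (u i j) :: 'k xpoly) = dl 1 ^ count_list (u i j) 1 * dl 2 ^ count_list (u i j) 2"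
          by (rule pd_count[OF u_letters[OF that]])
        then show ?thesis by (simp add: xev_mult xev_power xev_diff dl_def v_def)
      qed
      have xv: "v 0 = a" "v 1 = a - c" "v (Suc 0) = a - c" "v 2 = b" by (simp_all add: v_def)
      have "xev v (coeffs f12 {2}) = 0" using f122 by simp
      then have "(\<Sum>j\<in>J. a ^ nj j * b ^ mj j * (\<Sum>i\<in>Idx j. \<beta> i j *
          ((-1) ^ length (u i j) * (c ^ count_list (u i j) 1 * d ^ count_list (u i j) 2) * c))) = 0"
        unfolding F12 by (simp add: xev_sum xev_mult xev_power xv xev_uminus xev_diff pdv cong: sum.cong)
      moreover have "(\<Sum>j\<in>J. a ^ nj j * b ^ mj j * (\<Sum>i\<in>Idx j. \<beta> i j *
          ((-1) ^ length (u i j) * (c ^ count_list (u i j) 1 * d ^ count_list (u i j) 2) * c))) =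
          (\<Sum>t\<in>T. h t * a ^ nj (fst t) * b ^ mj (fst t) * c ^ cnt1 t * d ^ cnt2 t)"
        unfolding T_def
        by (subst sum_Sigma_nested[OF J_fin Idx_fin], assumption) (simp add: sum_distrib_left h_def cnt1_def cnt2_def mult_ac)
      ultimately show ?thesis by simp
    qed
    have c2: cond2
      unfolding cond2_def
    proof (intro ballI)
      fix j0 i0 assume j0: "j0 \<in> J" and i0: "i0 \<in> Idx j0"
      define cls where "cls = {p\<in>Idx j0. deg1 (u p j0) = deg1 (u i0 j0) \<and> deg2 (u p j0) = deg2 (u i0 j0)}"
      have fz: "(\<Sum>t\<in>{t \<in> T. nj (fst t) = nj j0 \<and> mj (fst t) = mj j0 \<and> cnt1 t = cnt1 (j0, i0) \<and> cnt2 t = cnt2 (j0, i0)}. h t) = 0"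
        using four_var[where g=h and T=T and ea="\<lambda>t. nj (fst t)" and eb="\<lambda>t. mj (fst t)" and ec=cnt1 and ed=cnt2
            and ka="nj j0" and kb="mj j0" and kc="cnt1 (j0, i0)" and kd="cnt2 (j0, i0)", OF Tf K_infinite] heq by simp
      have fib: "{t \<in> T. nj (fst t) = nj j0 \<and> mj (fst t) = mj j0 \<and> cnt1 t = cnt1 (j0, i0) \<and> cnt2 t = cnt2 (j0, i0)} =
          (\<lambda>p. (j0, p)) ` cls"
      proof
        show "{t \<in> T. nj (fst t) = nj j0 \<and> mj (fst t) = mj j0 \<and> cnt1 t = cnt1 (j0, i0) \<and> cnt2 t = cnt2 (j0, i0)} \<subseteq> (\<lambda>p. (j0, p)) ` cls"
        proof clarify
          fix j p assume jp: "(j, p) \<in> T" "nj (fst (j, p)) = nj j0" "mj (fst (j, p)) = mj j0"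
            "cnt1 (j, p) = cnt1 (j0, i0)" "cnt2 (j, p) = cnt2 (j0, i0)"
          have jJ: "j \<in> J" "p \<in> Idx j" using jp(1) by (auto simp: T_def)
          have "j = j0" using J_distinct jJ(1) j0 jp(2,3) by (auto simp: inj_on_def)
          then show "(j, p) \<in> (\<lambda>p. (j0, p)) ` cls"
            using jJ jp(4,5) by (auto simp: cls_def cnt1_def cnt2_def deg1_count deg2_count)
        qed
        show "(\<lambda>p. (j0, p)) ` cls \<subseteq> {t \<in> T. nj (fst t) = nj j0 \<and> mj (fst t) = mj j0 \<and> cnt1 t = cnt1 (j0, i0) \<and> cnt2 t = cnt2 (j0, i0)}"
          using j0 by (auto simp: cls_def T_def cnt1_def cnt2_def deg1_count deg2_count)
      qed
      have L: "length (u p j0) = length (u i0 j0)" if "p \<in> cls" for p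
      proof -
        have "p \<in> Idx j0" "count_list (u p j0) 1 = count_list (u i0 j0) 1" "count_list (u p j0) 2 = count_list (u i0 j0) 2"
          using that by (auto simp: cls_def deg1_count deg2_count)
        then show ?thesis using length_count[OF u_letters[OF j0]] i0 by metis
      qed
      have "(\<Sum>t\<in>(\<lambda>p. (j0, p)) ` cls. h t) = (\<Sum>p\<in>cls. h (j0, p))"
        using sum.reindex[of "Pair j0" cls h] by (simp add: inj_on_def o_def)
      also have "\<dots> = (\<Sum>p\<in>cls. (-1) ^ length (u i0 j0) * \<beta> p j0)"
        by (rule sum.cong) (auto simp: h_def L mult_ac)
      also have "\<dots> = (-1) ^ length (u i0 j0) * (\<Sum>p\<in>cls. \<beta> p j0)"
        by (simp add: sum_distrib_left)
      finally have "(-1) ^ length (u i0 j0) * (\<Sum>p\<in>cls. \<beta> p j0) = 0"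
        using fz fib by simp
      then show "(\<Sum>p\<in>{p \<in> Idx j0. deg1 (u p j0) = deg1 (u i0 j0) \<and> deg2 (u p j0) = deg2 (u i0 j0)}. \<beta> p j0) = 0"
        by (simp add: cls_def)
    qed
    show ?thesis using c1 c2 by simp
  qed
  have str: "strongly_central_F f \<longleftrightarrow> central_F f \<and> \<alpha> 0 0 = 0"
  proof
    assume sc: "strongly_central_F f"
    then have cf: "central_F f" by (simp add: strongly_central_F_def)
    from cond_if[OF cf] have c1: cond1 and c2: cond2 by auto
    have Z: "StrC (Jp + Gp)" using J_str[OF c2] G_str by (rule StrC_add)
    define e where "e = (xconst (\<alpha> 0 0) :: 'k xpoly)"
    have fe: "f = scal e + (Jp + Gp)"
      unfolding f A00[OF c1] msmult_mone e_def by (simp add: add.assoc)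
    have "central_F (mmult f C1)" using sc algF.gen1 unfolding strongly_central_F_def by blast
    then have h: "mmult (mmult f C1) C2 = mmult C2 (mmult f C1)"
      using algF.gen2 unfolding central_F_def by blast
    have zc: "mmult (mmult (Jp + Gp) C1) C2 = mmult C2 (mmult (Jp + Gp) C1)"
      using Z algF.gen1 unfolding StrC_def mcomm_zero_iff by blast
    have h2: "mmult (mmult (scal e) C1) C2 + mmult (mmult (Jp + Gp) C1) C2 =
        mmult C2 (mmult (scal e) C1) + mmult C2 (mmult (Jp + Gp) C1)"
      using h unfolding fe by (simp only: mmult_add_left mmult_add_right)
    have h3: "mmult (mmult (scal e) C1) C2 = mmult C2 (mmult (scal e) C1)"
      using h2 unfolding zc by simp
    have "mmult (scal e) (mmult C1 C2) = mmult (scal e) (mmult C2 C1)"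
    proof -
      have "mmult (scal e) (mmult C1 C2) = mmult (mmult (scal e) C1) C2" by (simp only: mmult_assoc)
      also have "\<dots> = mmult C2 (mmult (scal e) C1)" by (rule h3)
      also have "\<dots> = mmult (mmult C2 (scal e)) C1" by (simp only: mmult_assoc)
      also have "\<dots> = mmult (mmult (scal e) C2) C1" by (simp only: scal_comm)
      also have "\<dots> = mmult (scal e) (mmult C2 C1)" by (simp only: mmult_assoc)
      finally show ?thesis .
    qed
    then have "mmult (scal e) c0 = 0"
      by (simp add: c0_def mcomm_def mmult_diff_right)
    then have "coeffs (m12 (mmult (scal e) c0)) {2} = 0" by (simp add: m_zero)
    then have "e * (X0 - X1) = 0" by (simp add: coeffs_scal_mult c0_12)
    moreover have "(X0 - X1 :: 'k xpoly) \<noteq> 0" using xvar_neq[of 0 1] by simp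
    ultimately have "e = 0" by simp
    then show "central_F f \<and> \<alpha> 0 0 = 0" using cf xconst_eq0 by (auto simp: e_def)
  next
    assume "central_F f \<and> \<alpha> 0 0 = 0"
    then have cf: "central_F f" and a0: "\<alpha> 0 0 = 0" by auto
    from cond_if[OF cf] have c1: cond1 and c2: cond2 by auto
    have Z: "StrC (Jp + Gp)" using J_str[OF c2] G_str by (rule StrC_add)
    have fe: "f = Jp + Gp"
      unfolding f A00[OF c1] a0 by (simp add: msmult_zero_scalar)
    have "central_F (mmult f b)" if b: "b \<in> algF" for b
    proof -
      have "mcomm (mmult f b) C1 = 0" "mcomm (mmult f b) C2 = 0"
        using Z b unfolding fe StrC_def by auto
      then have "comm_all (mmult f b)" by (intro CG) simp_all
      then show ?thesis using algF.mult[OF f_alg b] by (simp add: central_F_def comm_all_def)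
    qed
    then show "strongly_central_F f" using cf by (simp add: strongly_central_F_def)
  qed
  show ?thesis using cent_if cond_if str unfolding cond1_def cond2_def by blast
qed


end
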